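(* Let $\beta\in(0,1)$, $0<\varepsilon\le\pi/39$, and let $G=(V,E)$ be an $\varepsilon$-regular graph with $\max_{\gamma\in\Gamma(G)}\theta_{\rm ex}(\gamma)<\frac{\pi}{10}-\frac75\varepsilon$. Let $s_1\in\mathcal{S}$ and $s_2\in\mathcal{S}^\perp(s_1)$. Then (i) $F_{{\rm bond},\beta}(G)\ge 2(1-\beta)\max\{l(s_1),l(s_2)\}+2\min\{l(s_1),l(s_2)\}$; (ii) if $\mathrm{span}(s_1)\subsetneq V$ and $\mathrm{span}(s_2)\subsetneq V$, then $F_{{\rm bond},\beta}(G)\ge 2(1-\beta)\max\{l(s_1),l(s_2)\}+2\min\{l(s_1),l(s_2)\}+(4-2\beta)$.
   Context: Substrate $\mathcal{L}^-=\mathbb{Z}^2\cap\{x_2\le0\}$; fix $r_0\in(1,\sqrt2)$. $\theta_{x,y,z}\in[0,2\pi)$ is the clockwise angle between $x-y$ and $z-y$. For a graph $G=(V,E)$ with $V\subset\{x_2>0\}$ finite: $\mathcal{N}(x,E)=\{y\in V:\{x,y\}\in E\}$, $\mathcal{N}_{\mathcal{L}^-}(x)=\{y\in\mathcal{L}^-:|x-y|\le r_0\}$; $F_{{\rm bond},\beta}(G)=\sum_{x\in V}(4-\#\mathcal{N}(x,E)-2\beta\#\mathcal{N}_{\mathcal{L}^-}(x))$. Bonds: edges of $E$, pairs $\{x,z\}$ with $x\in V$, $z\in\mathcal{N}_{\mathcal{L}^-}(x)$, pairs $\{z,z'\}\subset\mathcal{L}^-$ with $|z-z'|=1$; bond angle: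 $\theta_{x,y,z}$, $x,y,z$ pairwise distinct in $V\cup\mathcal{L}^-$, $\{x,y\},\{y,z\}$ bonds. $G$ is $\varepsilon$-regular if $|x-y|\ge1-\varepsilon$ for distinct $x,y\in V\cup\mathcal{L}^-$ and all bond angles lie in $[\pi/2-\varepsilon,\pi/2+\varepsilon]\cup[\pi-\varepsilon,\pi+\varepsilon]\cup[3\pi/2-\varepsilon,3\pi/2+\varepsilon]$. Straight paths: $\gamma=(x_1,\dots,x_n)$, $n\ge2$, $x_i\in V$, $\{x_i,x_{i+1}\}\in E$, $\theta_{x_{i+1},x_i,x_{i-1}}\in[\pi-\varepsilon,\pi+\varepsilon]$ for $2\le i\le n-1$, edges pairwise distinct; $\Gamma(G)$ their set; $\theta_{\rm ex}(\gamma)=\sum_{i=2}^{n-1}|\theta_{x_{i+1},x_i,x_{i-1}}-\pi|$. $\mathcal{S}_\Gamma$: straight paths maximal under inclusion as consecutive subpaths (paths identified with reversals). $V_i=\{x:\#\mathcal{N}(x,E)=i\}$, $V_2^\pi=\{x\in V_2:\theta_{x_1,x,x_2}\in[\pi-\varepsilon,\pi+\varepsilon],\ \mathcal{N}(x,E)=\{x_1,x_2\}\}$. Strata $\mathcal{S}$: multiset of elements of $\mathcal{S}_\Gamma$, two copies of $(x)$ per $x\in V_0$, one copy of $(x)$ per $x\in V_1\cup V_2^\pi$. $s=(x_1,\dots,x_n)\in\mathcal{S}_\Gamma$ is interacting if some $z_0\in\mathcal{N}_{\mathcal{L}^-}(x_1)$ has $\theta_{z_0,x_1,x_2}\in[\pi-\varepsilon,\pi+\varepsilon]$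 or some $z_{n+1}\in\mathcal{N}_{\mathcal{L}^-}(x_n)$ has $\theta_{x_{n-1},x_n,z_{n+1}}\in[\pi-\varepsilon,\pi+\varepsilon]$. $\mathcal{S}_{\rm int}$: interacting elements of $\mathcal{S}_\Gamma$, one copy of $(x)$ per $x\in V_0\cup V_2^\pi$ with $\mathcal{N}_{\mathcal{L}^-}(x)\ne\emptyset$, and $(x)$ per $x\in V_1$ with $\mathcal{N}_{\mathcal{L}^-}(x)\ne\emptyset$ not on any interacting element of $\mathcal{S}_\Gamma$; $\mathcal{S}_{\rm no}=\mathcal{S}\setminus\mathcal{S}_{\rm int}$. $l((x_1,\dots,x_n))=n$. $\mathcal{S}^\perp(s)$: elements of $\mathcal{S}$ other than $s$ sharing a point with $s$. $\mathrm{span}(s)=\bigcup_{s'\in\mathcal{S}^\perp(s)}\{$points of $s'\}\subset V$. *)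

theory Defs
  imports "HOL-Analysis.Analysis" "HOL-Library.Multiset" "HOL-Library.Sublist"
begin

text \<open>Points of the plane are complex numbers; x_2 is the imaginary part.\<close>

definition substrate :: "complex set" where
  "substrate = {z. Re z \<in> \<int> \<and> Im z \<in> \<int> \<and> Im z \<le> 0}"

text \<open>Clockwise angle between x - y and z - y, in [0, 2 pi).\<close>
definition ang :: "complex \<Rightarrow> complex \<Rightarrow> complex \<Rightarrow> real" where
  "ang x y z = (let a = Arg ((x - y) / (z - y)) in if a < 0 then a + 2 * pi else a)"

definition inwin :: "real \<Rightarrow> real \<Rightarrow> real \<Rightarrow> bool" where
  "inwin \<epsilon> c t \<longleftrightarrow> c - \<epsilon> \<le> t \<and> t \<le> c + \<epsilon>"

definition admissible_graph :: "complex set \<Rightarrow> complex set set \<Rightarrow> bool" where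
  "admissible_graph V E \<longleftrightarrow> finite V \<and> (\<forall>x\<in>V. Im x > 0) \<and>
     E \<subseteq> {{x, y} | x y. x \<in> V \<and> y \<in> V \<and> x \<noteq> y}"

definition nbr :: "complex set \<Rightarrow> complex set set \<Rightarrow> complex \<Rightarrow> complex set" where
  "nbr V E x = {y \<in> V. {x, y} \<in> E}"

definition nbrL :: "real \<Rightarrow> complex \<Rightarrow> complex set" where
  "nbrL r0 x = {y \<in> substrate. cmod (x - y) \<le> r0}"

definition F_bond :: "real \<Rightarrow> real \<Rightarrow> complex set \<Rightarrow> complex set set \<Rightarrow> real" where
  "F_bond r0 \<beta> V E = (\<Sum>x\<in>V. 4 - real (card (nbr V E x)) - 2 * \<beta> * real (card (nbrL r0 x)))"

definition bond :: "real \<Rightarrow> complex set \<Rightarrow> complex set set \<Rightarrow> complex \<Rightarrow> complex \<Rightarrow> bool" where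
  "bond r0 V E p q \<longleftrightarrow> {p, q} \<in> E
     \<or> (p \<in> V \<and> q \<in> nbrL r0 p) \<or> (q \<in> V \<and> p \<in> nbrL r0 q)
     \<or> (p \<in> substrate \<and> q \<in> substrate \<and> cmod (p - q) = 1)"

definition eps_regular :: "real \<Rightarrow> real \<Rightarrow> complex set \<Rightarrow> complex set set \<Rightarrow> bool" where
  "eps_regular r0 \<epsilon> V E \<longleftrightarrow>
     (\<forall>x \<in> V \<union> substrate. \<forall>y \<in> V \<union> substrate. x \<noteq> y \<longrightarrow> cmod (x - y) \<ge> 1 - \<epsilon>) \<and>
     (\<forall>x \<in> V \<union> substrate. \<forall>y \<in> V \<union> substrate. \<forall>z \<in> V \<union> substrate.
        x \<noteq> y \<and> y \<noteq> z \<and> x \<noteq> z \<and> bond r0 V E x y \<and> bond r0 V E y z \<longrightarrow>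
        inwin \<epsilon> (pi/2) (ang x y z) \<or> inwin \<epsilon> pi (ang x y z) \<or> inwin \<epsilon> (3*pi/2) (ang x y z))"

text \<open>Straight paths, as lists (0-based indices).\<close>
definition straight :: "real \<Rightarrow> complex set \<Rightarrow> complex set set \<Rightarrow> complex list \<Rightarrow> bool" where
  "straight \<epsilon> V E \<gamma> \<longleftrightarrow> length \<gamma> \<ge> 2 \<and> set \<gamma> \<subseteq> V \<and>
     (\<forall>i. Suc i < length \<gamma> \<longrightarrow> {\<gamma> ! i, \<gamma> ! Suc i} \<in> E) \<and>
     (\<forall>i. 0 < i \<and> Suc i < length \<gamma> \<longrightarrow> inwin \<epsilon> pi (ang (\<gamma> ! Suc i) (\<gamma> ! i) (\<gamma> ! (i - 1)))) \<and>
     distinct (map (\<lambda>i. {\<gamma> ! i, \<gamma> ! Suc i}) [0..<length \<gamma> - 1])"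

definition theta_ex :: "complex list \<Rightarrow> real" where
  "theta_ex \<gamma> = (\<Sum>i\<in>{1..<length \<gamma> - 1}. \<bar>ang (\<gamma> ! Suc i) (\<gamma> ! i) (\<gamma> ! (i - 1)) - pi\<bar>)"

text \<open>A path up to reversal is represented by its class {gamma, rev gamma}.\<close>
definition pclass :: "complex list \<Rightarrow> complex list set" where
  "pclass \<gamma> = {\<gamma>, rev \<gamma>}"

definition maximal_straight :: "real \<Rightarrow> complex set \<Rightarrow> complex set set \<Rightarrow> complex list \<Rightarrow> bool" where
  "maximal_straight \<epsilon> V E \<gamma> \<longleftrightarrow> straight \<epsilon> V E \<gamma> \<and>
     (\<forall>\<gamma>'. straight \<epsilon> V E \<gamma>' \<and> (sublist \<gamma> \<gamma>' \<or> sublist (rev \<gamma>) \<gamma>') \<longrightarrow> length \<gamma>' = length \<gamma>)"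

definition S_Gamma :: "real \<Rightarrow> complex set \<Rightarrow> complex set set \<Rightarrow> complex list set set" where
  "S_Gamma \<epsilon> V E = pclass ` {\<gamma>. maximal_straight \<epsilon> V E \<gamma>}"

definition Vdeg :: "complex set \<Rightarrow> complex set set \<Rightarrow> nat \<Rightarrow> complex set" where
  "Vdeg V E i = {x \<in> V. card (nbr V E x) = i}"

definition V2pi :: "real \<Rightarrow> complex set \<Rightarrow> complex set set \<Rightarrow> complex set" where
  "V2pi \<epsilon> V E = {x \<in> Vdeg V E 2. \<exists>x1 x2. nbr V E x = {x1, x2} \<and> inwin \<epsilon> pi (ang x1 x x2)}"

definition strata :: "real \<Rightarrow> complex set \<Rightarrow> complex set set \<Rightarrow> complex list set multiset" where
  "strata \<epsilon> V E = mset_set (S_Gamma \<epsilon> V E)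
     + image_mset (\<lambda>x. pclass [x])
         (mset_set (Vdeg V E 0) + mset_set (Vdeg V E 0) + mset_set (Vdeg V E 1 \<union> V2pi \<epsilon> V E))"

definition spoints :: "complex list set \<Rightarrow> complex set" where
  "spoints s = \<Union> (set ` s)"

definition slen :: "complex list set \<Rightarrow> nat" where
  "slen s = length (SOME \<gamma>. \<gamma> \<in> s)"

definition sperp :: "complex list set multiset \<Rightarrow> complex list set \<Rightarrow> complex list set multiset" where
  "sperp S s = filter_mset (\<lambda>s'. spoints s' \<inter> spoints s \<noteq> {}) (S - {#s#})"

definition sspan :: "complex list set multiset \<Rightarrow> complex list set \<Rightarrow> complex set" where
  "sspan S s = \<Union> (spoints ` set_mset (sperp S s))"

end

theory Submission
  imports Defs
begin


definition ad :: "complex \<Rightarrow> complex \<Rightarrow> real" where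
  "ad u v = \<bar>Arg (u / v)\<bar>"

definition pd :: "complex \<Rightarrow> complex \<Rightarrow> real" where
  "pd u v = min (ad u v) (pi - ad u v)"

lemma absArg_le: "\<bar>Arg z\<bar> \<le> pi"
  using mpi_less_Arg[of z] Arg_le_pi[of z] by auto

lemma absArg_mult: assumes "z \<noteq> 0" "w \<noteq> 0" shows "\<bar>Arg (z * w)\<bar> \<le> \<bar>Arg z\<bar> + \<bar>Arg w\<bar>"
proof -
  have b: "-pi < Arg z" "Arg z \<le> pi" "-pi < Arg w" "Arg w \<le> pi" "-pi < Arg (z*w)" "Arg (z*w) \<le> pi"
    using mpi_less_Arg Arg_le_pi by auto
  show ?thesis using Arg_times'[OF assms(1) assms(2)] b
    by (auto split: if_splits)
qed

lemma absArg_minus: assumes "z \<noteq> 0" shows "\<bar>Arg (- z)\<bar> = pi - \<bar>Arg z\<bar>"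
  using Arg_minus[OF assms] mpi_less_Arg[of z] Arg_le_pi[of z] by auto

lemma absArg_inverse: "\<bar>Arg (inverse z)\<bar> = \<bar>Arg z\<bar>"
  by (simp add: Arg_inverse)

lemma ad_nonneg: "0 \<le> ad u v" by (simp add: ad_def)
lemma ad_le_pi: "ad u v \<le> pi" by (simp add: ad_def absArg_le)

lemma ad_sym: "ad u v = ad v u"
proof -
  have "v / u = inverse (u / v)" by simp
  then show ?thesis unfolding ad_def by (metis absArg_inverse)
qed

lemma ad_tri: assumes "u \<noteq> 0" "v \<noteq> 0" "w \<noteq> 0" shows "ad u w \<le> ad u v + ad v w"
proof -
  have "u / w = (u / v) * (v / w)" using assms by (simp add: field_simps)
  then show ?thesis unfolding ad_def using absArg_mult[of "u/v" "v/w"] assms by simp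
qed

lemma ad_negl: assumes "u \<noteq> 0" "v \<noteq> 0" shows "ad (- u) v = pi - ad u v"
proof -
  have "(- u) / v = - (u / v)" by simp
  then show ?thesis unfolding ad_def using absArg_minus[of "u/v"] assms by simp
qed

lemma ad_negr: assumes "u \<noteq> 0" "v \<noteq> 0" shows "ad u (- v) = pi - ad u v"
  using ad_negl[OF assms(2,1)] ad_sym by metis

lemma ad_self: "ad u u = 0"
  by (cases "u = 0") (auto simp: ad_def Arg_zero)

lemma ad_rot: assumes "c \<noteq> 0" shows "ad (c * u) (c * v) = ad u v"
  using assms by (simp add: ad_def)

lemma ad_ii: assumes "u \<noteq> 0" shows "ad (\<i> * u) u = pi / 2"
  using assms by (simp add: ad_def)

lemma Re_cos_Arg: "Re z = cmod z * cos (Arg z)"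
proof (cases "z = 0")
  case False
  have "z = of_real (cmod z) * exp (\<i> * of_real (Arg z))" using Arg_eq[OF False] by simp
  then have "Re z = Re (of_real (cmod z) * exp (\<i> * of_real (Arg z)))" by simp
  also have "\<dots> = cmod z * cos (Arg z)" by (simp add: Re_exp)
  finally show ?thesis .
qed simp

lemma ad_le_iff: assumes "z \<noteq> 0" "0 \<le> t" "t \<le> pi"
  shows "\<bar>Arg z\<bar> \<le> t \<longleftrightarrow> cos t * cmod z \<le> Re z"
proof -
  have c: "cos (\<bar>Arg z\<bar>) = cos (Arg z)" by (simp add: abs_if)
  have r: "Re z = cmod z * cos \<bar>Arg z\<bar>" using Re_cos_Arg c by simp
  have p: "0 < cmod z" using assms by simp
  have "\<bar>Arg z\<bar> \<le> t \<longleftrightarrow> cos t \<le> cos \<bar>Arg z\<bar>"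
    using cos_mono_le_eq[of t "\<bar>Arg z\<bar>"] absArg_le[of z] assms by simp
  also have "\<dots> \<longleftrightarrow> cos t * cmod z \<le> cmod z * cos \<bar>Arg z\<bar>"
    using p by (simp add: mult.commute)
  finally show ?thesis using r by simp
qed

lemma cone_add:
  assumes "u \<noteq> 0" "v \<noteq> 0" "w \<noteq> 0" "0 \<le> t" "t < pi / 2" "ad u w \<le> t" "ad v w \<le> t"
  shows "u + v \<noteq> 0 \<and> ad (u + v) w \<le> t"
proof -
  have tp: "t \<le> pi" using assms by simp
  have ct: "0 < cos t" using assms by (intro cos_gt_zero_pi) auto
  have 1: "cos t * cmod (u / w) \<le> Re (u / w)" using ad_le_iff[of "u/w" t] assms tp by (simp add: ad_def)
  have 2: "cos t * cmod (v / w) \<le> Re (v / w)" using ad_le_iff[of "v/w" t] assms tp by (simp add: ad_def)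
  have "cmod ((u + v) / w) \<le> cmod (u / w) + cmod (v / w)"
    by (metis add_divide_distrib norm_triangle_ineq)
  then have "cos t * cmod ((u + v) / w) \<le> cos t * cmod (u / w) + cos t * cmod (v / w)"
    using ct by (metis distrib_left mult_left_mono order_less_imp_le)
  also have "\<dots> \<le> Re ((u + v) / w)" using 1 2 by (simp add: add_divide_distrib)
  finally have 3: "cos t * cmod ((u + v) / w) \<le> Re ((u + v) / w)" .
  have "0 < cos t * cmod (u / w)" using ct assms by simp
  moreover have "0 \<le> cos t * cmod (v / w)" using ct by simp
  ultimately have "0 < Re ((u + v) / w)" using 1 2 by (simp add: add_divide_distrib)
  then have nz: "u + v \<noteq> 0" by auto
  then show ?thesis using ad_le_iff[of "(u+v)/w" t] 3 assms tp by (simp add: ad_def)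
qed

lemma pd_nonneg: "0 \<le> pd u v" using ad_nonneg[of u v] ad_le_pi[of u v] by (simp add: pd_def)
lemma pd_le_half: "pd u v \<le> pi / 2" using ad_nonneg[of u v] ad_le_pi[of u v] by (auto simp: pd_def min_def)
lemma pd_le_ad: "pd u v \<le> ad u v" by (simp add: pd_def)
lemma pd_sym: "pd u v = pd v u" by (simp add: pd_def ad_sym[of u v])

lemma pd_negl: assumes "u \<noteq> 0" "v \<noteq> 0" shows "pd (- u) v = pd u v"
  using ad_negl[OF assms] by (simp add: pd_def)
lemma pd_negr: assumes "u \<noteq> 0" "v \<noteq> 0" shows "pd u (- v) = pd u v"
  using ad_negr[OF assms] by (simp add: pd_def)

lemma pd_alt: assumes "u \<noteq> 0" "v \<noteq> 0" shows "pd u v = min (ad u v) (ad (- u) v)"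
  using ad_negl[OF assms] by (simp add: pd_def)

lemma pd_le_ad_signs: assumes "u \<noteq> 0" "w \<noteq> 0" "s \<in> {1, -1}" "r \<in> {1, -1}"
  shows "pd u w \<le> ad (s * u) (r * w)"
proof -
  have "ad (s * u) (r * w) = ad u w \<or> ad (s * u) (r * w) = pi - ad u w"
    using assms ad_negl[of u w] ad_negr[of u w] ad_negl[of u "- w"] ad_negr[of "- u" w]
    by auto
  then show ?thesis by (auto simp: pd_def)
qed

lemma pd_tri: assumes "u \<noteq> 0" "v \<noteq> 0" "w \<noteq> 0" shows "pd u w \<le> pd u v + pd v w"
proof -
  obtain s where s: "s \<in> {1, -1::complex}" "pd u v = ad (s * u) v"
  proof (cases "ad u v \<le> ad (- u) v")
    case True then show ?thesis using that[of 1] pd_alt[OF assms(1,2)] by (simp add: min_def)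
  next
    case False then show ?thesis using that[of "-1"] pd_alt[OF assms(1,2)] by (simp add: min_def)
  qed
  obtain r where r: "r \<in> {1, -1::complex}" "pd v w = ad v (r * w)"
  proof (cases "ad v w \<le> ad v (- w)")
    case True then show ?thesis using that[of 1] ad_negr[OF assms(2,3)] by (simp add: min_def pd_def)
  next
    case False then show ?thesis using that[of "-1"] ad_negr[OF assms(2,3)] by (simp add: min_def pd_def)
  qed
  have "pd u w \<le> ad (s * u) (r * w)" using pd_le_ad_signs[OF assms(1,3) s(1) r(1)] .
  also have "\<dots> \<le> ad (s * u) v + ad v (r * w)" using ad_tri s(1) r(1) assms by auto
  finally show ?thesis using s r by simp
qed

lemma real_pd_ii:
  fixes a :: real assumes "- pi < a" "a \<le> pi"
  shows "min \<bar>(if - pi / 2 < a then a - pi / 2 else a + 3 * pi / 2)\<bar> (pi - \<bar>(if - pi / 2 < a then a - pi / 2 else a + 3 * pi / 2)\<bar>)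
       = pi / 2 - min \<bar>a\<bar> (pi - \<bar>a\<bar>)"
  using assms pi_gt_zero by (auto simp: min_def abs_if)

lemma Arg_times_mi: assumes "z \<noteq> 0"
  shows "Arg (z * (- \<i>)) = (if - pi / 2 < Arg z then Arg z - pi / 2 else Arg z + 3 * pi / 2)"
proof -
  have a: "Arg (- \<i>) = - pi / 2"
    using Arg_cnj[of "\<i>"] by (simp add: complex_is_Real_iff)
  show ?thesis using Arg_times'[OF assms, of "- \<i>"] a mpi_less_Arg[of z] Arg_le_pi[of z]
    by (auto simp: algebra_simps)
qed

lemma pd_ii: assumes "u \<noteq> 0" "v \<noteq> 0" shows "pd u (\<i> * v) = pi / 2 - pd u v"
proof -
  have "inverse \<i> = - \<i>" by simp
  then have "u / (\<i> * v) = (u / v) * (- \<i>)" by (simp add: divide_inverse mult_ac)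
  then have "ad u (\<i> * v) = \<bar>Arg ((u / v) * (- \<i>))\<bar>" by (simp add: ad_def)
  also have "\<dots> = \<bar>(if - pi / 2 < Arg (u/v) then Arg (u/v) - pi / 2 else Arg (u/v) + 3 * pi / 2)\<bar>"
    using Arg_times_mi[of "u/v"] assms by simp
  finally show ?thesis using real_pd_ii[of "Arg (u/v)"] mpi_less_Arg[of "u/v"] Arg_le_pi[of "u/v"]
    by (simp add: pd_def ad_def)
qed

lemma pd_rot: assumes "c \<noteq> 0" shows "pd (c * u) (c * v) = pd u v"
  using ad_rot[OF assms] by (simp add: pd_def)

lemma pd_self: "pd u u = 0" by (simp add: pd_def ad_self)

lemma pd_1_i: "pd 1 \<i> = pi / 2"
  using pd_ii[of 1 1] pd_self[of 1] by simp

definition regw :: "real \<Rightarrow> real \<Rightarrow> bool" where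
  "regw e a \<longleftrightarrow> \<bar>a - pi / 2\<bar> \<le> e \<or> pi - e \<le> a"

lemma ang_ad: "ad (x - y) (z - y) = \<bar>Arg ((x - y) / (z - y))\<bar>" by (simp add: ad_def)

lemma ang_pi_iff: assumes "0 \<le> e"
  shows "inwin e pi (ang x y z) \<longleftrightarrow> pi - e \<le> ad (x - y) (z - y)"
  using assms mpi_less_Arg[of "(x - y) / (z - y)"] Arg_le_pi[of "(x - y) / (z - y)"]
  by (auto simp: inwin_def ang_def ad_def Let_def)

lemma ang_reg: assumes "0 \<le> e" "e < pi / 4"
  and "inwin e (pi/2) (ang x y z) \<or> inwin e pi (ang x y z) \<or> inwin e (3*pi/2) (ang x y z)"
  shows "regw e (ad (x - y) (z - y))"
  using assms mpi_less_Arg[of "(x - y) / (z - y)"] Arg_le_pi[of "(x - y) / (z - y)"]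
  by (auto simp: inwin_def ang_def ad_def Let_def regw_def split: if_splits)

lemma ang_theta: "\<bar>ang x y z - pi\<bar> = pi - ad (x - y) (z - y)"
  using mpi_less_Arg[of "(x - y) / (z - y)"] Arg_le_pi[of "(x - y) / (z - y)"]
  by (auto simp: ang_def ad_def Let_def)

lemma pd_perp_step: assumes "a \<noteq> 0" "b \<noteq> 0" "pi / 2 - e \<le> pd a b" shows "pd b (\<i> * a) \<le> e"
  using pd_ii[of b a] assms pd_sym[of a b] by simp

lemma regw_pd: assumes "regw e a" "\<not> (pi - e \<le> a)" "0 \<le> a" "a \<le> pi"
  shows "\<bar>a - pi / 2\<bar> \<le> e" using assms by (auto simp: regw_def)

lemma ad_neg_both: assumes "u \<noteq> 0" "v \<noteq> 0" shows "ad (- u) (- v) = ad u v"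
  using ad_rot[of "-1" u v] by simp

lemma pd_of_perp: assumes "\<bar>ad u v - pi / 2\<bar> \<le> e" shows "pi / 2 - e \<le> pd u v"
  using assms by (auto simp: pd_def min_def abs_if split: if_splits)

lemma pd_of_opp: assumes "pi - e \<le> ad u v" shows "pd u v \<le> e"
  using assms by (auto simp: pd_def min_def)

lemma pd_rot_i: "pd (\<i> * u) (\<i> * v) = pd u v" using pd_rot[of "\<i>"] by simp



locale LS =
  fixes r0 \<epsilon> :: real and V :: "complex set" and E :: "complex set set"
  assumes r0_gt: "1 < r0" and r0_lt: "r0 < sqrt 2" and eps_pos: "0 < \<epsilon>" and eps_le: "\<epsilon> \<le> pi / 39"
    and adm: "admissible_graph V E" and regu: "eps_regular r0 \<epsilon> V E"
    and thex: "\<forall>\<gamma>. straight \<epsilon> V E \<gamma> \<longrightarrow> theta_ex \<gamma> < pi / 10 - 7 / 5 * \<epsilon>"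
begin

abbreviation "\<delta> \<equiv> pi / 10 - 7 / 5 * \<epsilon>"
abbreviation "nb x \<equiv> nbr V E x"
abbreviation "st \<gamma> \<equiv> straight \<epsilon> V E \<gamma>"
abbreviation "mx \<gamma> \<equiv> maximal_straight \<epsilon> V E \<gamma>"
abbreviation "opp x y z \<equiv> pi - \<epsilon> \<le> ad (y - x) (z - x)"

lemma eps_small: "\<epsilon> < pi / 24" "0 < \<delta>" "\<epsilon> < \<delta>" "4 * \<delta> + 7 * \<epsilon> < pi / 2" "5 * \<delta> + 5 * \<epsilon> < pi / 2"
  "3 * \<delta> + 3 * \<epsilon> < pi / 2" "2 * \<delta> + 5 * \<epsilon> < pi / 2" "\<delta> < pi / 10"
  using eps_pos eps_le pi_gt_zero by auto

lemma finV: "finite V" using adm by (simp add: admissible_graph_def)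
lemma ImV: "x \<in> V \<Longrightarrow> 0 < Im x" using adm by (simp add: admissible_graph_def)

lemma edgeD: assumes "{x, y} \<in> E" shows "x \<in> V" "y \<in> V" "x \<noteq> y"
proof -
  obtain a b where "{x, y} = {a, b}" "a \<in> V" "b \<in> V" "a \<noteq> b"
    using assms adm by (auto simp: admissible_graph_def)
  then show "x \<in> V" "y \<in> V" "x \<noteq> y" by (auto simp: doubleton_eq_iff)
qed

lemma finE: "finite E"
proof -
  have "E \<subseteq> Pow V" using adm by (auto simp: admissible_graph_def)
  then show ?thesis using finV by (meson finite_Pow_iff finite_subset)
qed

lemma nbD: assumes "y \<in> nb x" shows "y \<in> V" "x \<in> V" "x \<noteq> y" "{x, y} \<in> E"
  using assms edgeD[of x y] by (auto simp: nbr_def)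

lemma nb_iff: "y \<in> nb x \<longleftrightarrow> {x, y} \<in> E"
  using edgeD[of x y] by (auto simp: nbr_def)

lemma nb_sym: "y \<in> nb x \<Longrightarrow> x \<in> nb y"
  by (simp add: nb_iff insert_commute)

lemma fin_nb: "finite (nb x)" using finV by (simp add: nbr_def)

lemma subst_Im: "z \<in> substrate \<Longrightarrow> Im z \<le> 0" by (simp add: substrate_def)

lemma V_not_subst: "x \<in> V \<Longrightarrow> x \<notin> substrate" using ImV subst_Im by force

lemma nbL_subst: "z \<in> nbrL r0 x \<Longrightarrow> z \<in> substrate" by (simp add: nbrL_def)

lemma regular_triple:
  assumes "x \<in> V \<union> substrate" "y \<in> V \<union> substrate" "z \<in> V \<union> substrate"
    "x \<noteq> y" "y \<noteq> z" "x \<noteq> z" "bond r0 V E x y" "bond r0 V E y z"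
  shows "regw \<epsilon> (ad (x - y) (z - y))"
proof -
  have "inwin \<epsilon> (pi/2) (ang x y z) \<or> inwin \<epsilon> pi (ang x y z) \<or> inwin \<epsilon> (3*pi/2) (ang x y z)"
    using regu assms unfolding eps_regular_def by blast
  moreover have "0 \<le> \<epsilon>" "\<epsilon> < pi / 4" using eps_pos eps_small by auto
  ultimately show ?thesis using ang_reg by blast
qed

lemma reg_nb: assumes "y \<in> nb x" "z \<in> nb x" "y \<noteq> z" shows "regw \<epsilon> (ad (y - x) (z - x))"
proof -
  have "bond r0 V E y x" using nbD(4)[OF assms(1)] by (simp add: bond_def insert_commute)
  moreover have "bond r0 V E x z" using nbD(4)[OF assms(2)] by (simp add: bond_def)
  ultimately show ?thesis using regular_triple[of y x z] nbD[OF assms(1)] nbD[OF assms(2)] assms(3) by auto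
qed

lemma reg_nbL: assumes "y \<in> nb x" "z \<in> nbrL r0 x" shows "regw \<epsilon> (ad (y - x) (z - x))"
proof -
  have "bond r0 V E y x" using nbD(4)[OF assms(1)] by (simp add: bond_def insert_commute)
  moreover have "bond r0 V E x z" using assms nbD(2)[OF assms(1)] by (simp add: bond_def)
  moreover have "y \<noteq> z" "x \<noteq> z" using V_not_subst nbD[OF assms(1)] nbL_subst[OF assms(2)] by auto
  ultimately show ?thesis using regular_triple[of y x z] nbD[OF assms(1)] nbL_subst[OF assms(2)] by auto
qed

lemma vert_subst: assumes "x \<in> V" "z \<in> nbrL r0 x" shows "ad (x - z) \<i> \<le> \<epsilon>"
proof -
  have zs: "z \<in> substrate" using assms nbL_subst by auto
  have z1: "z + 1 \<in> substrate" "z - 1 \<in> substrate" using zs by (auto simp: substrate_def)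
  have xz: "x \<noteq> z" "x \<noteq> z + 1" "x \<noteq> z - 1" using assms zs z1 V_not_subst by auto
  have b1: "bond r0 V E x z" using assms by (simp add: bond_def)
  have b2: "bond r0 V E z (z + 1)" "bond r0 V E z (z - 1)" using zs z1 by (auto simp: bond_def)
  have r1: "regw \<epsilon> (ad (x - z) ((z + 1) - z))"
    using regular_triple[of x z "z+1"] assms zs z1 xz b1 b2 by auto
  have r2: "regw \<epsilon> (ad (x - z) ((z - 1) - z))"
    using regular_triple[of x z "z-1"] assms zs z1 xz b1 b2 by auto
  have nz: "x - z \<noteq> 0" using xz by simp
  have "ad (x - z) (-1) = pi - ad (x - z) 1" using ad_negr[OF nz, of 1] by simp
  then have h: "\<bar>ad (x - z) 1 - pi / 2\<bar> \<le> \<epsilon>"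
    using r1 r2 eps_small ad_nonneg[of "x - z" 1] ad_le_pi[of "x-z" 1] by (auto simp: regw_def)
  then have "pi / 2 - \<epsilon> \<le> pd (x - z) 1" by (rule pd_of_perp)
  then have p: "pd (x - z) \<i> \<le> \<epsilon>" using pd_ii[OF nz, of 1] by simp
  show ?thesis
  proof (rule ccontr)
    assume "\<not> ad (x - z) \<i> \<le> \<epsilon>"
    then have "pi - \<epsilon> \<le> ad (x - z) \<i>" using p by (auto simp: pd_def min_def split: if_splits)
    then have "ad (x - z) (- \<i>) \<le> \<epsilon>" using ad_negr[OF nz, of "\<i>"] by simp
    then have "cos \<epsilon> * cmod ((x - z) / (- \<i>)) \<le> Re ((x - z) / (- \<i>))"
      using ad_le_iff[of "(x - z) / (- \<i>)" \<epsilon>] nz eps_pos eps_small by (simp add: ad_def)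
    moreover have "0 < cos \<epsilon> * cmod ((x - z) / (- \<i>))"
      using nz eps_small eps_pos by (intro mult_pos_pos cos_gt_zero_pi) auto
    moreover have "Re ((x - z) / (- \<i>)) = - Im (x - z)" by (simp add: complex_eq_iff)
    moreover have "Im (x - z) > 0" using ImV[OF assms(1)] subst_Im[OF zs] by simp
    ultimately show False by linarith
  qed
qed

lemma nbL_le1: assumes "x \<in> V" shows "card (nbrL r0 x) \<le> 1"
proof -
  have "\<forall>a\<in>nbrL r0 x. \<forall>b\<in>nbrL r0 x. a = b"
  proof (intro ballI, rule ccontr)
    fix a b assume ab: "a \<in> nbrL r0 x" "b \<in> nbrL r0 x" "a \<noteq> b"
    have s: "a \<in> substrate" "b \<in> substrate" using ab nbL_subst by auto
    have ne: "a \<noteq> x" "b \<noteq> x" using s assms V_not_subst by auto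
    have "bond r0 V E a x" "bond r0 V E x b" using ab assms by (auto simp: bond_def)
    then have r: "regw \<epsilon> (ad (a - x) (b - x))" using regular_triple[of a x b] s assms ab ne by auto
    have "ad (a - x) (b - x) \<le> ad (a - x) (- \<i>) + ad (- \<i>) (b - x)"
      using ad_tri[of "a - x" "- \<i>" "b - x"] ne by simp
    also have "ad (a - x) (- \<i>) = ad (x - a) \<i>" using ad_neg_both[of "x - a" "\<i>"] ne by simp
    also have "ad (- \<i>) (b - x) = ad (x - b) \<i>"
    proof -
      have "ad (- \<i>) (b - x) = ad (b - x) (- \<i>)" by (rule ad_sym)
      also have "\<dots> = ad (x - b) \<i>" using ad_neg_both[of "x - b" "\<i>"] ne by simp
      finally show ?thesis .
    qed
    finally have "ad (a - x) (b - x) \<le> 2 * \<epsilon>" using vert_subst[OF assms ab(1)] vert_subst[OF assms ab(2)] by simp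
    then show False using r eps_small by (auto simp: regw_def)
  qed
  then show ?thesis
  proof (cases "finite (nbrL r0 x)")
    case True then show ?thesis using card_le_Suc0_iff_eq[OF True] \<open>\<forall>a\<in>nbrL r0 x. \<forall>b\<in>nbrL r0 x. a = b\<close> by simp
  qed simp
qed

end


context LS begin

definition ev :: "complex list \<Rightarrow> nat \<Rightarrow> complex" where
  "ev \<gamma> j = \<gamma> ! Suc j - \<gamma> ! j"

lemma distinct_map_upt_iff:
  "distinct (map f [0..<m]) \<longleftrightarrow> (\<forall>i j. i < j \<and> j < m \<longrightarrow> f i \<noteq> f j)"
proof -
  have "distinct (map f [0..<m]) \<longleftrightarrow> inj_on f {0..<m}" by (simp add: distinct_map)
  also have "\<dots> \<longleftrightarrow> (\<forall>i j. i < j \<and> j < m \<longrightarrow> f i \<noteq> f j)"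
    unfolding inj_on_def
  proof (intro iffI allI impI ballI)
    fix i j assume h: "\<forall>x\<in>{0..<m}. \<forall>y\<in>{0..<m}. f x = f y \<longrightarrow> x = y" and ij: "i < j \<and> j < m"
    have "i \<in> {0..<m}" "j \<in> {0..<m}" using ij by auto
    then show "f i \<noteq> f j" using h ij by fastforce
  next
    fix x y assume h: "\<forall>i j. i < j \<and> j < m \<longrightarrow> f i \<noteq> f j" and xy: "x \<in> {0..<m}" "y \<in> {0..<m}" "f x = f y"
    show "x = y"
    proof (rule ccontr)
      assume "x \<noteq> y"
      then have "x < y \<or> y < x" by arith
      then show False using h[rule_format, of x y] h[rule_format, of y x] xy by auto
    qed
  qed
  finally show ?thesis .
qed

lemma straight_iff:
  "st \<gamma> \<longleftrightarrow> 2 \<le> length \<gamma> \<and> set \<gamma> \<subseteq> V \<and> (\<forall>i. Suc i < length \<gamma> \<longrightarrow> {\<gamma>!i, \<gamma>!Suc i} \<in> E)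
     \<and> (\<forall>i. 0 < i \<and> Suc i < length \<gamma> \<longrightarrow> opp (\<gamma>!i) (\<gamma>!Suc i) (\<gamma>!(i-1)))
     \<and> (\<forall>i j. i < j \<and> Suc j < length \<gamma> \<longrightarrow> {\<gamma>!i, \<gamma>!Suc i} \<noteq> {\<gamma>!j, \<gamma>!Suc j})"
proof -
  have a: "(\<forall>i. 0 < i \<and> Suc i < length \<gamma> \<longrightarrow> inwin \<epsilon> pi (ang (\<gamma> ! Suc i) (\<gamma> ! i) (\<gamma> ! (i - 1))))
     \<longleftrightarrow> (\<forall>i. 0 < i \<and> Suc i < length \<gamma> \<longrightarrow> opp (\<gamma>!i) (\<gamma>!Suc i) (\<gamma>!(i-1)))"
    using ang_pi_iff[of \<epsilon>] eps_pos by simp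
  have b: "distinct (map (\<lambda>i. {\<gamma> ! i, \<gamma> ! Suc i}) [0..<length \<gamma> - 1])
     \<longleftrightarrow> (\<forall>i j. i < j \<and> Suc j < length \<gamma> \<longrightarrow> {\<gamma>!i, \<gamma>!Suc i} \<noteq> {\<gamma>!j, \<gamma>!Suc j})"
    unfolding distinct_map_upt_iff by (simp add: less_diff_conv)
  show ?thesis unfolding straight_def a b by blast
qed

lemma st_len: "st \<gamma> \<Longrightarrow> 2 \<le> length \<gamma>" by (simp add: straight_iff)
lemma st_set: "st \<gamma> \<Longrightarrow> set \<gamma> \<subseteq> V" by (simp add: straight_iff)
lemma st_edge: "st \<gamma> \<Longrightarrow> Suc i < length \<gamma> \<Longrightarrow> {\<gamma>!i, \<gamma>!Suc i} \<in> E" by (simp add: straight_iff)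
lemma st_nb: "st \<gamma> \<Longrightarrow> Suc i < length \<gamma> \<Longrightarrow> \<gamma>!Suc i \<in> nb (\<gamma>!i)"
  using st_edge nb_iff by blast
lemma st_nb': "st \<gamma> \<Longrightarrow> Suc i < length \<gamma> \<Longrightarrow> \<gamma>!i \<in> nb (\<gamma>!Suc i)"
  using st_nb nb_sym by blast
lemma st_opp: "st \<gamma> \<Longrightarrow> 0 < i \<Longrightarrow> Suc i < length \<gamma> \<Longrightarrow> opp (\<gamma>!i) (\<gamma>!Suc i) (\<gamma>!(i-1))"
  by (simp add: straight_iff)
lemma st_ev_nz: "st \<gamma> \<Longrightarrow> Suc i < length \<gamma> \<Longrightarrow> ev \<gamma> i \<noteq> 0"
  using edgeD(3)[OF st_edge] by (force simp: ev_def)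

lemma opp_sym: "opp x y z \<Longrightarrow> opp x z y" using ad_sym by metis

lemma st_turn: assumes "st \<gamma>" "0 < i" "Suc i < length \<gamma>"
  shows "ad (ev \<gamma> i) (ev \<gamma> (i - 1)) = pi - ad (\<gamma>!Suc i - \<gamma>!i) (\<gamma>!(i-1) - \<gamma>!i)"
proof -
  have e: "\<gamma>!(i-1) - \<gamma>!i = - ev \<gamma> (i - 1)" using assms by (simp add: ev_def)
  have e2: "\<gamma>!Suc i - \<gamma>!i = ev \<gamma> i" by (simp add: ev_def)
  have n: "ev \<gamma> i \<noteq> 0" "ev \<gamma> (i - 1) \<noteq> 0" using st_ev_nz[OF assms(1)] assms by auto
  show ?thesis unfolding e e2 using ad_negr[OF n] by simp
qed

lemma st_turn_le: assumes "st \<gamma>" "0 < i" "Suc i < length \<gamma>"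
  shows "ad (ev \<gamma> i) (ev \<gamma> (i - 1)) \<le> \<epsilon>"
  using st_turn[OF assms] st_opp[OF assms] by simp

lemma theta_ex_eq: assumes "st \<gamma>"
  shows "theta_ex \<gamma> = (\<Sum>i\<in>{1..<length \<gamma> - 1}. ad (ev \<gamma> i) (ev \<gamma> (i - 1)))"
  unfolding theta_ex_def
proof (rule sum.cong)
  fix i assume "i \<in> {1..<length \<gamma> - 1}"
  then have "0 < i" "Suc i < length \<gamma>" by auto
  then show "\<bar>ang (\<gamma> ! Suc i) (\<gamma> ! i) (\<gamma> ! (i - 1)) - pi\<bar> = ad (ev \<gamma> i) (ev \<gamma> (i - 1))"
    using st_turn[OF assms] ang_theta by simp
qed simp

lemma drift_sum: assumes "st \<gamma>" "a \<le> b" "Suc b < length \<gamma>"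
  shows "ad (ev \<gamma> b) (ev \<gamma> a) \<le> (\<Sum>i\<in>{Suc a..b}. ad (ev \<gamma> i) (ev \<gamma> (i - 1)))"
  using assms(2,3)
proof (induction b)
  case 0 then show ?case by (simp add: ad_self)
next
  case (Suc b)
  show ?case
  proof (cases "a = Suc b")
    case True then show ?thesis by (simp add: ad_self)
  next
    case False
    then have ab: "a \<le> b" using Suc by simp
    have "ad (ev \<gamma> (Suc b)) (ev \<gamma> a) \<le> ad (ev \<gamma> (Suc b)) (ev \<gamma> b) + ad (ev \<gamma> b) (ev \<gamma> a)"
      using ad_tri[of "ev \<gamma> (Suc b)" "ev \<gamma> b" "ev \<gamma> a"] st_ev_nz[OF assms(1), of "Suc b"]
        st_ev_nz[OF assms(1), of b] st_ev_nz[OF assms(1), of a] Suc.prems ab by simp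
    also have "\<dots> \<le> ad (ev \<gamma> (Suc b)) (ev \<gamma> b) + (\<Sum>i\<in>{Suc a..b}. ad (ev \<gamma> i) (ev \<gamma> (i - 1)))"
      using Suc.IH[OF ab] Suc.prems by simp
    also have "\<dots> = (\<Sum>i\<in>{Suc a..Suc b}. ad (ev \<gamma> i) (ev \<gamma> (i - 1)))"
      using ab by (simp add: sum.atLeast_Suc_atMost_Suc_shift add.commute)
    finally show ?thesis .
  qed
qed

lemma drift_le: assumes "st \<gamma>" "Suc a < length \<gamma>" "Suc b < length \<gamma>"
  shows "ad (ev \<gamma> a) (ev \<gamma> b) \<le> theta_ex \<gamma>"
proof -
  have g: "\<And>a b. a \<le> b \<Longrightarrow> Suc b < length \<gamma> \<Longrightarrow> ad (ev \<gamma> b) (ev \<gamma> a) \<le> theta_ex \<gamma>"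
  proof -
    fix a b assume ab: "a \<le> b" "Suc b < length \<gamma>"
    have "(\<Sum>i\<in>{Suc a..b}. ad (ev \<gamma> i) (ev \<gamma> (i - 1))) \<le> (\<Sum>i\<in>{1..<length \<gamma> - 1}. ad (ev \<gamma> i) (ev \<gamma> (i - 1)))"
      by (rule sum_mono2) (use ab in \<open>auto simp: ad_nonneg\<close>)
    then show "ad (ev \<gamma> b) (ev \<gamma> a) \<le> theta_ex \<gamma>"
      using drift_sum[OF assms(1) ab] theta_ex_eq[OF assms(1)] by simp
  qed
  show ?thesis
  proof (cases "a \<le> b")
    case True then show ?thesis using g[OF True assms(3)] ad_sym by metis
  next
    case False then show ?thesis using g[of b a] assms(2) by simp
  qed
qed

lemma theta_lt: "st \<gamma> \<Longrightarrow> theta_ex \<gamma> < \<delta>" using thex by blast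

lemma theta_nonneg: "st \<gamma> \<Longrightarrow> 0 \<le> theta_ex \<gamma>"
  using theta_ex_eq by (simp add: sum_nonneg ad_nonneg)

lemma drift: assumes "st \<gamma>" "Suc a < length \<gamma>" "Suc b < length \<gamma>"
  shows "ad (ev \<gamma> a) (ev \<gamma> b) < \<delta>"
  using drift_le[OF assms] theta_lt[OF assms(1)] by simp

lemma cone: assumes "st \<gamma>" "j < k" "k < length \<gamma>" "Suc c < length \<gamma>"
  shows "\<gamma>!k - \<gamma>!j \<noteq> 0 \<and> ad (\<gamma>!k - \<gamma>!j) (ev \<gamma> c) \<le> theta_ex \<gamma>"
  using assms(2,3)
proof (induction k)
  case 0 then show ?case by simp
next
  case (Suc k)
  show ?case
  proof (cases "j = k")
    case True
    then have "\<gamma>!Suc k - \<gamma>!j = ev \<gamma> k" by (simp add: ev_def)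
    then show ?thesis using st_ev_nz[OF assms(1)] Suc.prems drift_le[OF assms(1) _ assms(4)] True by simp
  next
    case False
    then have jk: "j < k" using Suc by simp
    have IH: "\<gamma>!k - \<gamma>!j \<noteq> 0 \<and> ad (\<gamma>!k - \<gamma>!j) (ev \<gamma> c) \<le> theta_ex \<gamma>" using Suc jk by simp
    have eq: "\<gamma>!Suc k - \<gamma>!j = (\<gamma>!k - \<gamma>!j) + ev \<gamma> k" by (simp add: ev_def)
    have "theta_ex \<gamma> < pi / 2" using theta_lt[OF assms(1)] eps_small by simp
    then show ?thesis unfolding eq
      using cone_add[of "\<gamma>!k - \<gamma>!j" "ev \<gamma> k" "ev \<gamma> c" "theta_ex \<gamma>"] IH st_ev_nz[OF assms(1)] Suc.prems
        assms(4) drift_le[OF assms(1) _ assms(4)] theta_nonneg[OF assms(1)] by simp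
  qed
qed

lemma st_distinct: assumes "st \<gamma>" shows "distinct \<gamma>"
proof -
  have c: "Suc 0 < length \<gamma>" using st_len[OF assms] by simp
  show ?thesis unfolding distinct_conv_nth
  proof (intro allI impI)
    fix i j assume h: "i < length \<gamma>" "j < length \<gamma>" "i \<noteq> j"
    show "\<gamma>!i \<noteq> \<gamma>!j"
    proof (cases "i < j")
      case True then show ?thesis using cone[OF assms True h(2) c] by auto
    next
      case False then have "j < i" using h by simp
      then show ?thesis using cone[OF assms _ h(1) c] by auto
    qed
  qed
qed

lemma distinct_edges: assumes "distinct \<gamma>" "i < j" "Suc j < length \<gamma>"
  shows "{\<gamma>!i, \<gamma>!Suc i} \<noteq> {\<gamma>!j, \<gamma>!Suc j}"
proof
  assume "{\<gamma>!i, \<gamma>!Suc i} = {\<gamma>!j, \<gamma>!Suc j}"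
  then have "\<gamma>!i = \<gamma>!j \<or> \<gamma>!i = \<gamma>!Suc j" by auto
  moreover have "\<gamma>!i \<noteq> \<gamma>!j" using nth_eq_iff_index_eq[OF assms(1), of i j] assms by simp
  moreover have "\<gamma>!i \<noteq> \<gamma>!Suc j" using nth_eq_iff_index_eq[OF assms(1), of i "Suc j"] assms by simp
  ultimately show False by simp
qed

lemma opp_unique: assumes "y \<in> nb x" "z \<in> nb x" "z' \<in> nb x" "z \<noteq> z'" "opp x y z" "opp x y z'"
  shows False
proof -
  have nz: "y - x \<noteq> 0" "z - x \<noteq> 0" "z' - x \<noteq> 0"
    using nbD(3)[OF assms(1)] nbD(3)[OF assms(2)] nbD(3)[OF assms(3)] by auto
  have "ad (z - x) (z' - x) \<le> ad (z - x) (- (y - x)) + ad (- (y - x)) (z' - x)"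
    using ad_tri nz by simp
  also have "ad (z - x) (- (y - x)) = pi - ad (z - x) (y - x)" using ad_negr[of "z - x" "y - x"] nz by simp
  also have "ad (- (y - x)) (z' - x) = pi - ad (y - x) (z' - x)" using ad_negl[of "y - x" "z' - x"] nz by simp
  finally have "ad (z - x) (z' - x) \<le> 2 * \<epsilon>" using assms(5,6) ad_sym[of "z - x" "y - x"] by simp
  then show False using reg_nb[OF assms(2,3,4)] eps_small by (auto simp: regw_def)
qed

end


context LS begin

lemma st_rev: assumes "st \<gamma>" shows "st (rev \<gamma>)"
proof -
  let ?n = "length \<gamma>"
  have d: "distinct (rev \<gamma>)" using st_distinct[OF assms] by simp
  have e: "\<forall>i. Suc i < length (rev \<gamma>) \<longrightarrow> {rev \<gamma>!i, rev \<gamma>!Suc i} \<in> E"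
  proof (intro allI impI)
    fix i assume i: "Suc i < length (rev \<gamma>)"
    define k where "k = ?n - Suc (Suc i)"
    have k: "Suc k < ?n" "rev \<gamma>!i = \<gamma>!Suc k" "rev \<gamma>!Suc i = \<gamma>!k" using i by (auto simp: k_def rev_nth Suc_diff_Suc)
    show "{rev \<gamma>!i, rev \<gamma>!Suc i} \<in> E" using st_edge[OF assms k(1)] k by (simp add: insert_commute)
  qed
  have a: "\<forall>i. 0 < i \<and> Suc i < length (rev \<gamma>) \<longrightarrow> opp (rev \<gamma>!i) (rev \<gamma>!Suc i) (rev \<gamma>!(i-1))"
  proof (intro allI impI)
    fix i assume i: "0 < i \<and> Suc i < length (rev \<gamma>)"
    define k where "k = ?n - Suc i"
    have k: "0 < k" "Suc k < ?n" "rev \<gamma>!i = \<gamma>!k" "rev \<gamma>!Suc i = \<gamma>!(k - 1)" "rev \<gamma>!(i - 1) = \<gamma>!Suc k"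
      using i by (auto simp: k_def rev_nth Suc_diff_Suc)
    show "opp (rev \<gamma>!i) (rev \<gamma>!Suc i) (rev \<gamma>!(i-1))" using st_opp[OF assms k(1,2)] k opp_sym by simp
  qed
  show ?thesis unfolding straight_iff using assms e a d distinct_edges[OF d] by (simp add: straight_iff)
qed

lemma st_cons: assumes "st \<gamma>" "z \<in> nb (\<gamma>!0)" "opp (\<gamma>!0) (\<gamma>!1) z" shows "st (z # \<gamma>)"
proof -
  have n: "2 \<le> length \<gamma>" using st_len[OF assms(1)] .
  have d: "distinct \<gamma>" using st_distinct[OF assms(1)] .
  have zV: "z \<in> V" using nbD[OF assms(2)] by simp
  have e: "\<forall>i. Suc i < length (z # \<gamma>) \<longrightarrow> {(z#\<gamma>)!i, (z#\<gamma>)!Suc i} \<in> E"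
  proof (intro allI impI)
    fix i assume i: "Suc i < length (z # \<gamma>)"
    show "{(z#\<gamma>)!i, (z#\<gamma>)!Suc i} \<in> E"
    proof (cases i)
      case 0 then show ?thesis using nbD(4)[OF assms(2)] by (simp add: insert_commute)
    next
      case (Suc i') then show ?thesis using st_edge[OF assms(1), of i'] i by simp
    qed
  qed
  have a: "\<forall>i. 0 < i \<and> Suc i < length (z#\<gamma>) \<longrightarrow> opp ((z#\<gamma>)!i) ((z#\<gamma>)!Suc i) ((z#\<gamma>)!(i-1))"
  proof (intro allI impI)
    fix i assume i: "0 < i \<and> Suc i < length (z#\<gamma>)"
    then obtain i' where i': "i = Suc i'" by (cases i) auto
    show "opp ((z#\<gamma>)!i) ((z#\<gamma>)!Suc i) ((z#\<gamma>)!(i-1))"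
    proof (cases i')
      case 0 then show ?thesis using assms(3) i' by simp
    next
      case (Suc i'') then show ?thesis using st_opp[OF assms(1), of i'] i i' by simp
    qed
  qed
  have dd: "\<forall>i j. i < j \<and> Suc j < length (z#\<gamma>) \<longrightarrow> {(z#\<gamma>)!i, (z#\<gamma>)!Suc i} \<noteq> {(z#\<gamma>)!j, (z#\<gamma>)!Suc j}"
  proof (intro allI impI)
    fix i j assume ij: "i < j \<and> Suc j < length (z#\<gamma>)"
    then obtain j' where j': "j = Suc j'" by (cases j) auto
    show "{(z#\<gamma>)!i, (z#\<gamma>)!Suc i} \<noteq> {(z#\<gamma>)!j, (z#\<gamma>)!Suc j}"
    proof (cases i)
      case (Suc i') then show ?thesis using distinct_edges[OF d, of i' j'] ij j' by simp
    next
      case 0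
      show ?thesis
      proof
        assume eq: "{(z#\<gamma>)!i, (z#\<gamma>)!Suc i} = {(z#\<gamma>)!j, (z#\<gamma>)!Suc j}"
        then have eq': "{z, \<gamma>!0} = {\<gamma>!j', \<gamma>!Suc j'}" using 0 j' by simp
        have jl: "Suc j' < length \<gamma>" using ij j' by simp
        have ne: "\<gamma>!0 \<noteq> \<gamma>!Suc j'" using nth_eq_iff_index_eq[OF d, of 0 "Suc j'"] jl by (cases \<gamma>) auto
        then have "\<gamma>!0 = \<gamma>!j'" using eq' by auto
        moreover have "\<gamma> \<noteq> []" using jl by (cases \<gamma>) auto
        ultimately have "j' = 0" using nth_eq_iff_index_eq[OF d, of 0 j'] jl by simp
        then have "z = \<gamma>!1" using eq' ne nbD(3)[OF assms(2)] by (auto simp: doubleton_eq_iff)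
        then show False using assms(3) ad_self eps_small by simp
      qed
    qed
  qed
  show ?thesis unfolding straight_iff using e a dd n zV st_set[OF assms(1)] by simp
qed

lemma st_snoc: assumes "st \<gamma>" "z \<in> nb (\<gamma>!(length \<gamma> - 1))" "opp (\<gamma>!(length \<gamma> - 1)) (\<gamma>!(length \<gamma> - 2)) z"
  shows "st (\<gamma> @ [z])"
proof -
  have n: "2 \<le> length \<gamma>" using st_len[OF assms(1)] .
  have r: "rev \<gamma>!0 = \<gamma>!(length \<gamma> - 1)" "rev \<gamma>!1 = \<gamma>!(length \<gamma> - 2)" proof -
    have "\<gamma> \<noteq> []" using n by (cases \<gamma>) auto
    then show "rev \<gamma>!0 = \<gamma>!(length \<gamma> - 1)" "rev \<gamma>!1 = \<gamma>!(length \<gamma> - 2)"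
      using n rev_nth[of 0 \<gamma>] rev_nth[of 1 \<gamma>] by (auto simp: numeral_2_eq_2)
  qed
  have "st (z # rev \<gamma>)" using st_cons[OF st_rev[OF assms(1)]] assms r by simp
  then have "st (rev (z # rev \<gamma>))" by (rule st_rev)
  then show ?thesis by simp
qed

lemma mx_st: "mx \<gamma> \<Longrightarrow> st \<gamma>" by (simp add: maximal_straight_def)

lemma mx_all: assumes "mx \<gamma>" "st \<gamma>'" "sublist \<gamma> \<gamma>' \<or> sublist (rev \<gamma>) \<gamma>'"
  shows "length \<gamma>' = length \<gamma>"
proof -
  have "\<forall>\<gamma>'. st \<gamma>' \<and> (sublist \<gamma> \<gamma>' \<or> sublist (rev \<gamma>) \<gamma>') \<longrightarrow> length \<gamma>' = length \<gamma>"
    using assms(1) unfolding maximal_straight_def by (elim conjE)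
  then show ?thesis using assms(2,3) by blast
qed

lemma mx_rev: assumes "mx \<gamma>" shows "mx (rev \<gamma>)"
proof -
  have "st (rev \<gamma>)" using st_rev[OF mx_st[OF assms]] .
  moreover have "\<forall>\<gamma>'. st \<gamma>' \<and> (sublist (rev \<gamma>) \<gamma>' \<or> sublist (rev (rev \<gamma>)) \<gamma>') \<longrightarrow> length \<gamma>' = length (rev \<gamma>)"
  proof (intro allI impI)
    fix \<gamma>' assume h: "st \<gamma>' \<and> (sublist (rev \<gamma>) \<gamma>' \<or> sublist (rev (rev \<gamma>)) \<gamma>')"
    then have "sublist \<gamma> \<gamma>' \<or> sublist (rev \<gamma>) \<gamma>'" by auto
    then show "length \<gamma>' = length (rev \<gamma>)" using mx_all[OF assms] h by simp
  qed
  ultimately show ?thesis unfolding maximal_straight_def by blast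
qed

lemma mx_no_pre: assumes "mx \<gamma>" "z \<in> nb (\<gamma>!0)" "opp (\<gamma>!0) (\<gamma>!1) z" shows False
proof -
  have "st (z # \<gamma>)" using st_cons[OF mx_st[OF assms(1)] assms(2,3)] .
  moreover have "sublist \<gamma> (z # \<gamma>)" using sublist_append_leftI[of \<gamma> "[z]"] by simp
  ultimately have "length (z # \<gamma>) = length \<gamma>" using mx_all[OF assms(1)] by blast
  then show False by simp
qed

lemma mx_no_app: assumes "mx \<gamma>" "z \<in> nb (\<gamma>!(length \<gamma> - 1))" "opp (\<gamma>!(length \<gamma> - 1)) (\<gamma>!(length \<gamma> - 2)) z"
  shows False
proof -
  have n: "2 \<le> length \<gamma>" using st_len[OF mx_st[OF assms(1)]] .
  have r: "rev \<gamma>!0 = \<gamma>!(length \<gamma> - 1)" "rev \<gamma>!1 = \<gamma>!(length \<gamma> - 2)" proof -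
    have "\<gamma> \<noteq> []" using n by (cases \<gamma>) auto
    then show "rev \<gamma>!0 = \<gamma>!(length \<gamma> - 1)" "rev \<gamma>!1 = \<gamma>!(length \<gamma> - 2)"
      using n rev_nth[of 0 \<gamma>] rev_nth[of 1 \<gamma>] by (auto simp: numeral_2_eq_2)
  qed
  show False using mx_no_pre[OF mx_rev[OF assms(1)]] assms r by simp
qed

lemma fwd_agree:
  assumes "st \<gamma>" "st \<gamma>'" "\<gamma>!i = \<gamma>'!j" "\<gamma>!Suc i = \<gamma>'!Suc j"
  shows "i + k < length \<gamma> \<and> j + k < length \<gamma>' \<longrightarrow> \<gamma>!(i+k) = \<gamma>'!(j+k)"
proof -
  let ?Q = "\<lambda>k. i + k < length \<gamma> \<and> j + k < length \<gamma>' \<longrightarrow> \<gamma>!(i+k) = \<gamma>'!(j+k)"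
  have "?Q k \<and> ?Q (Suc k)" for k
  proof (induction k)
    case 0 then show ?case using assms by simp
  next
    case (Suc k)
    have "?Q (Suc (Suc k))"
    proof
      assume r: "i + Suc (Suc k) < length \<gamma> \<and> j + Suc (Suc k) < length \<gamma>'"
      have e1: "\<gamma>!(i+k) = \<gamma>'!(j+k)" "\<gamma>!(i + Suc k) = \<gamma>'!(j + Suc k)" using Suc r by auto
      define x where "x = \<gamma>!(i + Suc k)"
      define w where "w = \<gamma>!(i + k)"
      have oa: "opp x (\<gamma>!(i + Suc (Suc k))) w"
        using st_opp[OF assms(1), of "i + Suc k"] r by (simp add: x_def w_def)
      have ob: "opp x (\<gamma>'!(j + Suc (Suc k))) w"
        using st_opp[OF assms(2), of "j + Suc k"] r e1 by (simp add: x_def w_def)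
      have na: "\<gamma>!(i + Suc (Suc k)) \<in> nb x" using st_nb[OF assms(1), of "i + Suc k"] r by (simp add: x_def)
      have nb': "\<gamma>'!(j + Suc (Suc k)) \<in> nb x" using st_nb[OF assms(2), of "j + Suc k"] r e1 by (simp add: x_def)
      have nw: "w \<in> nb x" using st_nb'[OF assms(1), of "i + k"] r by (simp add: x_def w_def)
      show "\<gamma>!(i + Suc (Suc k)) = \<gamma>'!(j + Suc (Suc k))"
      proof (rule ccontr)
        assume ne: "\<gamma>!(i + Suc (Suc k)) \<noteq> \<gamma>'!(j + Suc (Suc k))"
        show False using opp_unique[OF nw na nb' ne] opp_sym[OF oa] opp_sym[OF ob] by blast
      qed
    qed
    then show ?case using Suc by simp
  qed
  then show ?thesis by blast
qed

lemma U2: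
  assumes "mx \<gamma>" "mx \<gamma>'" "Suc i < length \<gamma>" "Suc j < length \<gamma>'" "\<gamma>!i = \<gamma>'!j" "\<gamma>!Suc i = \<gamma>'!Suc j"
  shows "\<gamma> = \<gamma>' \<and> i = j"
proof -
  have s: "st \<gamma>" "st \<gamma>'" using assms mx_st by auto
  \<comment> \<open>backward agreement via reversal\<close>
  have bwd: "\<And>\<gamma> \<gamma>' i j k. mx \<gamma> \<Longrightarrow> mx \<gamma>' \<Longrightarrow> Suc i < length \<gamma> \<Longrightarrow> Suc j < length \<gamma>' \<Longrightarrow>
      \<gamma>!i = \<gamma>'!j \<Longrightarrow> \<gamma>!Suc i = \<gamma>'!Suc j \<Longrightarrow> k \<le> i \<Longrightarrow> k \<le> j \<Longrightarrow> \<gamma>!(i - k) = \<gamma>'!(j - k)"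
  proof -
    fix \<gamma> \<gamma>' i j k assume h: "mx \<gamma>" "mx \<gamma>'" "Suc i < length \<gamma>" "Suc j < length \<gamma>'"
      "\<gamma>!i = \<gamma>'!j" "\<gamma>!Suc i = \<gamma>'!Suc j" "k \<le> i" "k \<le> j"
    let ?n = "length \<gamma>" and ?m = "length \<gamma>'"
    have r1: "rev \<gamma>!(?n - Suc (Suc i)) = \<gamma>!Suc i" "rev \<gamma>!Suc (?n - Suc (Suc i)) = \<gamma>!i"
      using h by (auto simp: rev_nth Suc_diff_Suc)
    have r2: "rev \<gamma>'!(?m - Suc (Suc j)) = \<gamma>'!Suc j" "rev \<gamma>'!Suc (?m - Suc (Suc j)) = \<gamma>'!j"
      using h by (auto simp: rev_nth Suc_diff_Suc)
    have "(?n - Suc (Suc i)) + Suc k < length (rev \<gamma>) \<and> (?m - Suc (Suc j)) + Suc k < length (rev \<gamma>') \<longrightarrow>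
       rev \<gamma>!((?n - Suc (Suc i)) + Suc k) = rev \<gamma>'!((?m - Suc (Suc j)) + Suc k)"
      by (rule fwd_agree) (use st_rev[OF mx_st[OF h(1)]] st_rev[OF mx_st[OF h(2)]] r1 r2 h in auto)
    moreover have "(?n - Suc (Suc i)) + Suc k < length (rev \<gamma>)" "(?m - Suc (Suc j)) + Suc k < length (rev \<gamma>')"
      using h by auto
    moreover have "rev \<gamma>!((?n - Suc (Suc i)) + Suc k) = \<gamma>!(i - k)"
    proof -
      have "rev \<gamma>!((?n - Suc (Suc i)) + Suc k) = \<gamma>!(?n - Suc ((?n - Suc (Suc i)) + Suc k))"
        using h by (intro rev_nth) auto
      moreover have "?n - Suc ((?n - Suc (Suc i)) + Suc k) = i - k" using h by arith
      ultimately show ?thesis by simp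
    qed
    moreover have "rev \<gamma>'!((?m - Suc (Suc j)) + Suc k) = \<gamma>'!(j - k)"
    proof -
      have "rev \<gamma>'!((?m - Suc (Suc j)) + Suc k) = \<gamma>'!(?m - Suc ((?m - Suc (Suc j)) + Suc k))"
        using h by (intro rev_nth) auto
      moreover have "?m - Suc ((?m - Suc (Suc j)) + Suc k) = j - k" using h by arith
      ultimately show ?thesis by simp
    qed
    ultimately show "\<gamma>!(i - k) = \<gamma>'!(j - k)" by simp
  qed
  have nopre: "\<And>\<gamma> \<gamma>' i j. mx \<gamma> \<Longrightarrow> mx \<gamma>' \<Longrightarrow> Suc i < length \<gamma> \<Longrightarrow> Suc j < length \<gamma>' \<Longrightarrow>
      \<gamma>!i = \<gamma>'!j \<Longrightarrow> \<gamma>!Suc i = \<gamma>'!Suc j \<Longrightarrow> \<not> i < j"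
  proof
    fix \<gamma> \<gamma>' i j assume h: "mx \<gamma>" "mx \<gamma>'" "Suc i < length \<gamma>" "Suc j < length \<gamma>'"
      "\<gamma>!i = \<gamma>'!j" "\<gamma>!Suc i = \<gamma>'!Suc j" "i < j"
    have a0: "\<gamma>!0 = \<gamma>'!(j - i)" using bwd[OF h(1-6), of i] h by simp
    have a1: "\<gamma>!1 = \<gamma>'!Suc (j - i)"
    proof (cases i)
      case 0 then show ?thesis using h by simp
    next
      case (Suc i') then have "\<gamma>!(i - i') = \<gamma>'!(j - i')" using bwd[OF h(1-6), of i'] h by simp
      then show ?thesis using Suc h by (simp add: Suc_diff_Suc)
    qed
    have st': "st \<gamma>'" using mx_st[OF h(2)] .
    have "opp (\<gamma>'!(j - i)) (\<gamma>'!Suc (j - i)) (\<gamma>'!(j - i - 1))" using st_opp[OF st', of "j - i"] h by simp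
    moreover have "\<gamma>'!(j - i - 1) \<in> nb (\<gamma>'!(j - i))"
    proof -
      have "Suc (j - i - 1) = j - i" using h by simp
      then show ?thesis using st_nb'[OF st', of "j - i - 1"] h by simp
    qed
    ultimately show False using mx_no_pre[OF h(1)] a0 a1 by simp
  qed
  have ij: "i = j" using nopre[OF assms] nopre[OF assms(2,1,4,3) assms(5,6)[symmetric]] by simp
  have noapp: "\<And>\<gamma> \<gamma>' i. mx \<gamma> \<Longrightarrow> mx \<gamma>' \<Longrightarrow> Suc i < length \<gamma> \<Longrightarrow> Suc i < length \<gamma>' \<Longrightarrow>
      \<gamma>!i = \<gamma>'!i \<Longrightarrow> \<gamma>!Suc i = \<gamma>'!Suc i \<Longrightarrow> \<not> length \<gamma> < length \<gamma>'"
  proof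
    fix \<gamma> \<gamma>' i assume h: "mx \<gamma>" "mx \<gamma>'" "Suc i < length \<gamma>" "Suc i < length \<gamma>'"
      "\<gamma>!i = \<gamma>'!i" "\<gamma>!Suc i = \<gamma>'!Suc i" "length \<gamma> < length \<gamma>'"
    let ?n = "length \<gamma>"
    have f: "\<And>k. i + k < ?n \<Longrightarrow> \<gamma>!(i+k) = \<gamma>'!(i+k)"
      using fwd_agree[OF mx_st[OF h(1)] mx_st[OF h(2)] h(5,6)] h(7) by auto
    have e1: "\<gamma>!(?n - 1) = \<gamma>'!(?n - 1)" using f[of "?n - 1 - i"] h by simp
    have e2: "\<gamma>!(?n - 2) = \<gamma>'!(?n - 2)" using f[of "?n - 2 - i"] h by simp
    have st': "st \<gamma>'" using mx_st[OF h(2)] .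
    have "opp (\<gamma>'!(?n - 1)) (\<gamma>'!Suc (?n - 1)) (\<gamma>'!(?n - 1 - 1))" using st_opp[OF st', of "?n - 1"] h by simp
    moreover have "\<gamma>'!Suc (?n - 1) \<in> nb (\<gamma>'!(?n - 1))" using st_nb[OF st', of "?n - 1"] h by simp
    moreover have "?n - 1 - 1 = ?n - 2" by simp
    ultimately have "opp (\<gamma>!(?n - 1)) (\<gamma>!(?n - 2)) (\<gamma>'!Suc (?n - 1))" "\<gamma>'!Suc (?n - 1) \<in> nb (\<gamma>!(?n - 1))"
      using e1 e2 opp_sym by auto
    then show False using mx_no_app[OF h(1)] by blast
  qed
  have len: "length \<gamma> = length \<gamma>'" using noapp[OF assms(1,2,3)] noapp[OF assms(2,1)] assms ij by (simp add: not_less_iff_gr_or_eq)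
  have all: "\<gamma>!k = \<gamma>'!k" if "k < length \<gamma>" for k
  proof (cases "k \<le> i")
    case True then show ?thesis using bwd[OF assms, of "i - k"] ij by simp
  next
    case False
    then show ?thesis using fwd_agree[OF s assms(5,6), of "k - i"] ij len that by simp
  qed
  show ?thesis using len all ij by (simp add: nth_equalityI)
qed

lemma st_len_bound: assumes "st \<gamma>" shows "length \<gamma> \<le> card E + 1"
proof -
  let ?f = "\<lambda>i. {\<gamma>!i, \<gamma>!Suc i}"
  have "inj_on ?f {0..<length \<gamma> - 1}"
    using assms unfolding straight_def by (simp add: distinct_map)
  moreover have "?f ` {0..<length \<gamma> - 1} \<subseteq> E" using st_edge[OF assms] by auto
  ultimately have "card {0..<length \<gamma> - 1} \<le> card E" using card_inj_on_le finE by blast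
  then show ?thesis by simp
qed

lemma exmax: assumes "{a, b} \<in> E"
  shows "\<exists>\<gamma> i. mx \<gamma> \<and> Suc i < length \<gamma> \<and> \<gamma>!i = a \<and> \<gamma>!Suc i = b"
proof -
  let ?P = "\<lambda>\<gamma>. st \<gamma> \<and> (\<exists>i. Suc i < length \<gamma> \<and> \<gamma>!i = a \<and> \<gamma>!Suc i = b)"
  have ab: "a \<in> V" "b \<in> V" "a \<noteq> b" using edgeD[OF assms] by auto
  have "st [a, b]" unfolding straight_iff using assms ab by auto
  moreover have "Suc 0 < length [a, b] \<and> [a, b]!0 = a \<and> [a, b]!Suc 0 = b" by simp
  ultimately have p0: "?P [a, b]" by blast
  have bd: "\<forall>\<gamma>. ?P \<gamma> \<longrightarrow> length \<gamma> < card E + 2"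
  proof (intro allI impI)
    fix \<gamma> assume "?P \<gamma>" then show "length \<gamma> < card E + 2" using st_len_bound[of \<gamma>] by simp
  qed
  obtain \<gamma> where g: "?P \<gamma>" "\<forall>\<gamma>'. ?P \<gamma>' \<longrightarrow> length \<gamma>' \<le> length \<gamma>"
    using ex_has_greatest_nat[of ?P "[a,b]" length "card E + 2"] p0 bd by blast
  then obtain i where i: "Suc i < length \<gamma>" "\<gamma>!i = a" "\<gamma>!Suc i = b" by blast
  have "mx \<gamma>" unfolding maximal_straight_def
  proof (intro conjI allI impI)
    show "st \<gamma>" using g by simp
    fix \<gamma>' assume h: "st \<gamma>' \<and> (sublist \<gamma> \<gamma>' \<or> sublist (rev \<gamma>) \<gamma>')"
    show "length \<gamma>' = length \<gamma>"
    proof (cases "sublist \<gamma> \<gamma>'")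
      case True
      then obtain ps ss where e: "\<gamma>' = ps @ \<gamma> @ ss" by (auto simp: sublist_def)
      have "\<gamma>'!(length ps + i) = a" "\<gamma>'!Suc (length ps + i) = b" "Suc (length ps + i) < length \<gamma>'"
        using i e by (auto simp: nth_append)
      then have "?P \<gamma>'" using h by blast
      then have "length \<gamma>' \<le> length \<gamma>" using g(2) by blast
      then show ?thesis using sublist_length_le[OF True] by simp
    next
      case False
      then have "sublist (rev \<gamma>) \<gamma>'" using h by simp
      then have "sublist \<gamma> (rev \<gamma>')" by (simp add: sublist_rev_right)
      then obtain ps ss where e: "rev \<gamma>' = ps @ \<gamma> @ ss" by (auto simp: sublist_def)
      have "(rev \<gamma>')!(length ps + i) = a" "(rev \<gamma>')!Suc (length ps + i) = b" "Suc (length ps + i) < length (rev \<gamma>')"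
        using i e by (auto simp: nth_append)
      then have "?P (rev \<gamma>')" using h st_rev by blast
      then have "length (rev \<gamma>') \<le> length \<gamma>" using g(2) by blast
      then show ?thesis using sublist_length_le[OF \<open>sublist \<gamma> (rev \<gamma>')\<close>] by simp
    qed
  qed
  then show ?thesis using i by blast
qed

end


context LS begin

definition lonely :: "complex \<Rightarrow> complex set" where
  "lonely x = {y \<in> nb x. \<not> (\<exists>z \<in> nb x. opp x y z)}"

definition sing :: "complex \<Rightarrow> nat" where
  "sing x = (if x \<in> Vdeg V E 0 then 2 else if x \<in> Vdeg V E 1 \<union> V2pi \<epsilon> V E then 1 else 0)"

lemma opp_nb_ne: "opp x y z \<Longrightarrow> y \<noteq> z" using ad_self eps_small by auto

lemma perp_pair_opp:
  assumes "a \<in> nb x" "b \<in> nb x" "a \<noteq> b" "pd (a - x) w \<le> \<epsilon>" "pd (b - x) w \<le> \<epsilon>" "w \<noteq> 0"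
  shows "opp x a b"
proof -
  have nz: "a - x \<noteq> 0" "b - x \<noteq> 0" using nbD(3) assms by force+
  have "pd (a - x) (b - x) \<le> pd (a - x) w + pd w (b - x)" using pd_tri nz assms by simp
  then have p: "pd (a - x) (b - x) \<le> 2 * \<epsilon>" using assms pd_sym[of w "b - x"] by simp
  have "regw \<epsilon> (ad (a - x) (b - x))" using reg_nb[OF assms(1-3)] .
  then show ?thesis
  proof (unfold regw_def, elim disjE)
    assume "\<bar>ad (a - x) (b - x) - pi / 2\<bar> \<le> \<epsilon>"
    then have "pi / 2 - \<epsilon> \<le> pd (a - x) (b - x)" by (rule pd_of_perp)
    then show ?thesis using p eps_small by simp
  qed simp
qed

lemma not_opp_perp: assumes "y \<in> nb x" "z \<in> nb x" "y \<noteq> z" "\<not> opp x y z"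
  shows "pi / 2 - \<epsilon> \<le> pd (y - x) (z - x)"
proof -
  have "regw \<epsilon> (ad (y - x) (z - x))" using reg_nb[OF assms(1-3)] .
  then have "\<bar>ad (y - x) (z - x) - pi / 2\<bar> \<le> \<epsilon>" using assms(4) by (simp add: regw_def)
  then show ?thesis by (rule pd_of_perp)
qed

lemma P_opp: assumes "y \<in> nb x" "a \<in> nb x" "b \<in> nb x" "a \<noteq> b" "a \<noteq> y" "b \<noteq> y" "\<not> opp x y a" "\<not> opp x y b"
  shows "opp x a b"
proof -
  have nz: "y - x \<noteq> 0" "a - x \<noteq> 0" "b - x \<noteq> 0" using nbD(3) assms by force+
  have "pd (a - x) (\<i> * (y - x)) \<le> \<epsilon>"
    using pd_perp_step[of "y - x" "a - x"] not_opp_perp[OF assms(1,2)] assms nz by simp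
  moreover have "pd (b - x) (\<i> * (y - x)) \<le> \<epsilon>"
    using pd_perp_step[of "y - x" "b - x"] not_opp_perp[OF assms(1,3)] assms nz by simp
  ultimately show ?thesis using perp_pair_opp[OF assms(2,3,4)] nz by simp
qed

lemma card_O_le1: "card {z \<in> nb x. opp x y z} \<le> 1"
proof -
  have f: "finite {z \<in> nb x. opp x y z}" using fin_nb by simp
  have "\<forall>a\<in>{z \<in> nb x. opp x y z}. \<forall>b\<in>{z \<in> nb x. opp x y z}. a = b"
  proof (intro ballI, rule ccontr)
    fix a b assume h: "a \<in> {z \<in> nb x. opp x y z}" "b \<in> {z \<in> nb x. opp x y z}" "a \<noteq> b"
    have "y \<in> nb x \<or> y \<notin> nb x" by simp
    then show False
    proof
      assume "y \<in> nb x" then show False using opp_unique[of y x a b] h by auto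
    next
      assume yn: "y \<notin> nb x"
      have nz: "y - x \<noteq> 0 \<or> y - x = 0" by simp
      show False
      proof (cases "y = x")
        case True
        then have "pi - \<epsilon> \<le> 0" using h by (auto simp: ad_def Arg_zero)
        then show False using eps_small(1) pi_gt_zero by linarith
      next
        case False
        have na: "a - x \<noteq> 0" "b - x \<noteq> 0" using nbD(3) h by force+
        have "ad (a - x) (b - x) \<le> ad (a - x) (- (y - x)) + ad (- (y - x)) (b - x)"
          using ad_tri na False by simp
        also have "ad (a - x) (- (y - x)) = pi - ad (a - x) (y - x)" using ad_negr[of "a - x" "y - x"] na False by simp
        also have "ad (- (y - x)) (b - x) = pi - ad (y - x) (b - x)" using ad_negl[of "y - x" "b - x"] na False by simp
        finally have "ad (a - x) (b - x) \<le> 2 * \<epsilon>" using h ad_sym[of "a - x" "y - x"] by simp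
        then show False using reg_nb[of a x b] h eps_small by (auto simp: regw_def)
      qed
    qed
  qed
  then show ?thesis using card_le_Suc0_iff_eq[OF f] by simp
qed

lemma card_P_le2: assumes "y \<in> nb x" shows "card {z \<in> nb x. z \<noteq> y \<and> \<not> opp x y z} \<le> 2"
proof (cases "{z \<in> nb x. z \<noteq> y \<and> \<not> opp x y z} = {}")
  case True then show ?thesis by (simp only: True card.empty)
next
  case False
  then obtain a where a: "a \<in> nb x" "a \<noteq> y" "\<not> opp x y a" by blast
  have "{z \<in> nb x. z \<noteq> y \<and> \<not> opp x y z} \<subseteq> insert a {z \<in> nb x. opp x a z}"
    using P_opp[OF assms a(1)] a by auto
  then have "card {z \<in> nb x. z \<noteq> y \<and> \<not> opp x y z} \<le> card (insert a {z \<in> nb x. opp x a z})"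
    using fin_nb by (intro card_mono) auto
  also have "\<dots> \<le> Suc (card {z \<in> nb x. opp x a z})" by (rule card_insert_le_m1) (auto simp: card_insert_le)
  finally show ?thesis using card_O_le1[of x a] by simp
qed

lemma nb_split: assumes "y \<in> nb x"
  shows "nb x \<subseteq> insert y ({z \<in> nb x. opp x y z} \<union> {z \<in> nb x. z \<noteq> y \<and> \<not> opp x y z})"
  by auto

lemma card_split: assumes "y \<in> nb x"
  shows "card (nb x) \<le> 1 + card {z \<in> nb x. opp x y z} + card {z \<in> nb x. z \<noteq> y \<and> \<not> opp x y z}"
proof -
  have "card (nb x) \<le> card (insert y ({z \<in> nb x. opp x y z} \<union> {z \<in> nb x. z \<noteq> y \<and> \<not> opp x y z}))"
    using fin_nb nb_split[OF assms] by (intro card_mono) auto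
  also have "\<dots> \<le> Suc (card ({z \<in> nb x. opp x y z} \<union> {z \<in> nb x. z \<noteq> y \<and> \<not> opp x y z}))"
    by (rule card_insert_le_m1) (auto simp: card_insert_le)
  also have "\<dots> \<le> Suc (card {z \<in> nb x. opp x y z} + card {z \<in> nb x. z \<noteq> y \<and> \<not> opp x y z})"
    using card_Un_le by simp
  finally show ?thesis by simp
qed

lemma deg_le4: "card (nb x) \<le> 4"
proof (cases "nb x = {}")
  case True then show ?thesis by simp
next
  case False then obtain y where "y \<in> nb x" by blast
  then show ?thesis using card_split[of y x] card_O_le1[of x y] card_P_le2[of y x] by linarith
qed

lemma lonely_struct: assumes "y \<in> lonely x"
  shows "card (nb x) \<le> 3 \<and> (card (nb x) = 3 \<longrightarrow> (\<forall>y' \<in> nb x. y' \<noteq> y \<longrightarrow> y' \<notin> lonely x))"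
proof -
  have y: "y \<in> nb x" "\<not> (\<exists>z \<in> nb x. opp x y z)" using assms by (auto simp: lonely_def)
  have O: "{z \<in> nb x. opp x y z} = {}" using y by auto
  let ?P = "{z \<in> nb x. z \<noteq> y \<and> \<not> opp x y z}"
  have c: "card (nb x) \<le> 1 + card ?P" using card_split[OF y(1)] O by simp
  have c3: "card (nb x) \<le> 3" using c card_P_le2[OF y(1)] by simp
  have "card (nb x) = 3 \<longrightarrow> (\<forall>y' \<in> nb x. y' \<noteq> y \<longrightarrow> y' \<notin> lonely x)"
  proof (intro impI ballI)
    fix y' assume h: "card (nb x) = 3" "y' \<in> nb x" "y' \<noteq> y"
    have cP: "card ?P = 2" using c card_P_le2[OF y(1)] h by simp
    have yP: "y' \<in> ?P" using h y by auto
    have "card (?P - {y'}) = 1" using cP yP fin_nb by (simp add: card_Diff_singleton)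
    then obtain a where a: "?P - {y'} = {a}" using card_1_singletonE by blast
    then have aP: "a \<in> ?P" "a \<noteq> y'" by auto
    have "opp x y' a" using P_opp[OF y(1), of y' a] yP aP by auto
    then show "y' \<notin> lonely x" using aP by (auto simp: lonely_def)
  qed
  then show ?thesis using c3 by simp
qed

lemma card_lonely_le: "card (lonely x) \<le> card (nb x)"
  using fin_nb by (intro card_mono) (auto simp: lonely_def)

lemma V2pi_opp: assumes "x \<in> V2pi \<epsilon> V E" obtains x1 x2 where "nb x = {x1, x2}" "x1 \<noteq> x2" "opp x x1 x2"
proof -
  obtain x1 x2 where h: "nb x = {x1, x2}" "inwin \<epsilon> pi (ang x1 x x2)" "card (nb x) = 2"
    using assms by (auto simp: V2pi_def Vdeg_def)
  have "x1 \<noteq> x2" using h by auto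
  moreover have "opp x x1 x2" using h(2) ang_pi_iff[of \<epsilon> x1 x x2] eps_pos by simp
  ultimately show ?thesis using h that by blast
qed

lemma PV: assumes "x \<in> V" shows "2 * sing x + card (lonely x) + card (nb x) \<le> 4"
proof -
  have d4: "card (nb x) \<le> 4" by (rule deg_le4)
  consider "card (nb x) = 0" | "card (nb x) = 1" | "card (nb x) = 2" | "card (nb x) = 3" | "card (nb x) = 4"
    using d4 by linarith
  then show ?thesis
  proof cases
    case 1
    then have "sing x = 2" using assms by (simp add: sing_def Vdeg_def)
    moreover have "card (lonely x) = 0" using card_lonely_le[of x] 1 by simp
    ultimately show ?thesis using 1 by simp
  next
    case 2
    then have "sing x = 1" using assms by (simp add: sing_def Vdeg_def)
    then show ?thesis using card_lonely_le[of x] 2 by simp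
  next
    case 3
    show ?thesis
    proof (cases "x \<in> V2pi \<epsilon> V E")
      case True
      then obtain x1 x2 where h: "nb x = {x1, x2}" "x1 \<noteq> x2" "opp x x1 x2" by (rule V2pi_opp)
      have "lonely x = {}" using h opp_sym[OF h(3)] by (auto simp: lonely_def)
      moreover have "sing x = 1" using True 3 by (simp add: sing_def Vdeg_def)
      ultimately show ?thesis using 3 by simp
    next
      case False
      then have "sing x = 0" using 3 by (simp add: sing_def Vdeg_def)
      then show ?thesis using card_lonely_le[of x] 3 by simp
    qed
  next
    case 4
    have s: "sing x = 0" using 4 by (auto simp: sing_def Vdeg_def V2pi_def)
    have "card (lonely x) \<le> 1"
    proof -
      have "\<forall>a\<in>lonely x. \<forall>b\<in>lonely x. a = b"
      proof (intro ballI, rule ccontr)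
        fix a b assume h: "a \<in> lonely x" "b \<in> lonely x" "a \<noteq> b"
        have "b \<in> nb x" using h by (simp add: lonely_def)
        moreover have "\<forall>y'\<in>nb x. y' \<noteq> a \<longrightarrow> y' \<notin> lonely x" using lonely_struct[OF h(1)] 4 by simp
        ultimately show False using h by auto
      qed
      then show ?thesis using card_le_Suc0_iff_eq[of "lonely x"] fin_nb by (simp add: lonely_def)
    qed
    then show ?thesis using s 4 by simp
  next
    case 5
    have s: "sing x = 0" using 5 by (auto simp: sing_def Vdeg_def V2pi_def)
    have "lonely x = {}"
    proof (rule ccontr)
      assume "lonely x \<noteq> {}" then obtain y where "y \<in> lonely x" by blast
      then show False using lonely_struct[of y x] 5 by simp
    qed
    then show ?thesis using s 5 by simp
  qed
qed

end


context LS begin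

abbreviation "SG \<equiv> S_Gamma \<epsilon> V E"
abbreviation "Sg \<equiv> Vdeg V E 0 \<union> Vdeg V E 1 \<union> V2pi \<epsilon> V E"

definition Lab :: "(complex list set \<times> nat) set" where
  "Lab = (\<lambda>c. (c, 0)) ` SG \<union> (\<lambda>x. (pclass [x], 0)) ` Sg \<union> (\<lambda>x. (pclass [x], 1)) ` Vdeg V E 0"

definition lpts :: "complex list set \<times> nat \<Rightarrow> complex set" where
  "lpts A = spoints (fst A)"

definition isdir :: "complex list set \<times> nat \<Rightarrow> complex \<Rightarrow> complex \<Rightarrow> bool" where
  "isdir A v u \<longleftrightarrow> (snd A = 0 \<and> (\<exists>\<gamma> j. mx \<gamma> \<and> fst A = pclass \<gamma> \<and> Suc j < length \<gamma> \<and> (v = \<gamma>!j \<or> v = \<gamma>!Suc j) \<and> u = ev \<gamma> j))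
   \<or> (\<exists>x. fst A = pclass [x] \<and> v = x \<and> ((x \<in> Vdeg V E 1 \<union> V2pi \<epsilon> V E \<and> snd A = 0 \<and> (\<exists>y \<in> nb x. u = \<i> * (y - x)))
        \<or> (x \<in> Vdeg V E 0 \<and> ((snd A = 0 \<and> u = \<i>) \<or> (snd A = 1 \<and> u = 1)))))"

lemma pclass_eq: "pclass \<gamma> = pclass \<gamma>' \<longleftrightarrow> \<gamma>' = \<gamma> \<or> \<gamma>' = rev \<gamma>"
  by (auto simp: pclass_def doubleton_eq_iff)

lemma pclass_sgl: "pclass [x] = {[x]}" by (simp add: pclass_def)

lemma spoints_pclass: "spoints (pclass \<gamma>) = set \<gamma>" by (simp add: spoints_def pclass_def)

lemma slen_pclass: "slen (pclass \<gamma>) = length \<gamma>"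
proof -
  have "(SOME \<gamma>'. \<gamma>' \<in> pclass \<gamma>) \<in> pclass \<gamma>" by (rule someI[of _ \<gamma>]) (simp add: pclass_def)
  then show ?thesis by (auto simp: slen_def pclass_def)
qed

lemma mx_ne_sgl: assumes "mx \<gamma>" shows "pclass \<gamma> \<noteq> pclass [x]"
proof -
  have "2 \<le> length \<gamma>" using st_len[OF mx_st[OF assms]] .
  then show ?thesis by (auto simp: pclass_eq)
qed

lemma SG_iff: "c \<in> SG \<longleftrightarrow> (\<exists>\<gamma>. mx \<gamma> \<and> c = pclass \<gamma>)"
  by (auto simp: S_Gamma_def)

lemma sgl_inj: "pclass [x] = pclass [y] \<longleftrightarrow> x = y" by (simp add: pclass_def)

lemma Vdeg_disj: "x \<in> Vdeg V E i \<Longrightarrow> x \<in> Vdeg V E j \<Longrightarrow> i = j" by (simp add: Vdeg_def)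
lemma V2pi_deg: "x \<in> V2pi \<epsilon> V E \<Longrightarrow> x \<in> Vdeg V E 2" by (simp add: V2pi_def)
lemma Vdeg_V: "x \<in> Vdeg V E i \<Longrightarrow> x \<in> V" by (simp add: Vdeg_def)
lemma Vdeg_card: "x \<in> Vdeg V E i \<Longrightarrow> card (nb x) = i" by (simp add: Vdeg_def)

lemma ev_rev: assumes "Suc j < length \<gamma>"
  shows "ev (rev \<gamma>) j = - ev \<gamma> (length \<gamma> - 2 - j)"
    "rev \<gamma>!j = \<gamma>!Suc (length \<gamma> - 2 - j)" "rev \<gamma>!Suc j = \<gamma>!(length \<gamma> - 2 - j)"
proof -
  define k where "k = length \<gamma> - 2 - j"
  have c1: "length \<gamma> - Suc j = Suc k" "length \<gamma> - Suc (Suc j) = k" using assms by (auto simp: k_def)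
  have a: "rev \<gamma>!j = \<gamma>!Suc k" using assms c1 by (subst rev_nth) auto
  have b: "rev \<gamma>!Suc j = \<gamma>!k" using assms c1 by (subst rev_nth) auto
  show "rev \<gamma>!j = \<gamma>!Suc (length \<gamma> - 2 - j)" "rev \<gamma>!Suc j = \<gamma>!(length \<gamma> - 2 - j)"
    using a b by (simp_all add: k_def)
  then show "ev (rev \<gamma>) j = - ev \<gamma> (length \<gamma> - 2 - j)" by (simp add: ev_def)
qed

lemma path_dir:
  assumes "isdir A v u" "mx \<gamma>0" "fst A = pclass \<gamma>0"
  shows "snd A = 0 \<and> (\<exists>j. Suc j < length \<gamma>0 \<and> (v = \<gamma>0!j \<or> v = \<gamma>0!Suc j) \<and> (u = ev \<gamma>0 j \<or> u = - ev \<gamma>0 j))"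
proof -
  have ns: "\<not> (\<exists>x. fst A = pclass [x])" using mx_ne_sgl[OF assms(2)] assms(3) by auto
  then obtain \<gamma> j where h: "snd A = 0" "mx \<gamma>" "fst A = pclass \<gamma>" "Suc j < length \<gamma>" "v = \<gamma>!j \<or> v = \<gamma>!Suc j" "u = ev \<gamma> j"
    using assms(1) unfolding isdir_def by blast
  have "\<gamma> = \<gamma>0 \<or> \<gamma> = rev \<gamma>0" using h(3) assms(3) pclass_eq[of \<gamma>0 \<gamma>] by simp
  then show ?thesis
  proof
    assume "\<gamma> = \<gamma>0" then show ?thesis using h by blast
  next
    assume r: "\<gamma> = rev \<gamma>0"
    let ?j = "length \<gamma>0 - 2 - j"
    have l: "Suc j < length \<gamma>0" using h r by simp
    have "Suc ?j < length \<gamma>0" using l by auto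
    moreover have "v = \<gamma>0!?j \<or> v = \<gamma>0!Suc ?j" using h(5) ev_rev[OF l] r by auto
    moreover have "u = - ev \<gamma>0 ?j" using h(6) ev_rev[OF l] r by simp
    ultimately show ?thesis using h(1) by blast
  qed
qed

lemma Lab_cases:
  assumes "A \<in> Lab"
  obtains (path) \<gamma> where "mx \<gamma>" "A = (pclass \<gamma>, 0)"
    | (sgl) x where "x \<in> Sg" "A = (pclass [x], 0)"
    | (sgl1) x where "x \<in> Vdeg V E 0" "A = (pclass [x], 1)"
proof -
  have "A \<in> (\<lambda>c. (c, 0)) ` SG \<or> A \<in> (\<lambda>x. (pclass [x], 0)) ` Sg \<or> A \<in> (\<lambda>x. (pclass [x], 1)) ` Vdeg V E 0"
    using assms unfolding Lab_def by blast
  then show thesis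
  proof (elim disjE)
    assume "A \<in> (\<lambda>c. (c, 0)) ` SG"
    then obtain c where c: "c \<in> SG" "A = (c, 0)" by blast
    then obtain \<gamma> where "mx \<gamma>" "c = pclass \<gamma>" using SG_iff by blast
    then show thesis using path c by blast
  next
    assume "A \<in> (\<lambda>x. (pclass [x], 0)) ` Sg"
    then obtain x where "x \<in> Sg" "A = (pclass [x], 0)" by blast
    then show thesis using sgl by blast
  next
    assume "A \<in> (\<lambda>x. (pclass [x], 1)) ` Vdeg V E 0"
    then obtain x where "x \<in> Vdeg V E 0" "A = (pclass [x], 1)" by blast
    then show thesis using sgl1 by blast
  qed
qed

lemma lpts_path: "lpts (pclass \<gamma>, k) = set \<gamma>" by (simp add: lpts_def spoints_pclass)
lemma lpts_sgl: "lpts (pclass [x], k) = {x}" by (simp add: lpts_def spoints_pclass)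

lemma isdir_cases: assumes "isdir A v u"
  shows "(\<exists>\<gamma> j. mx \<gamma> \<and> Suc j < length \<gamma> \<and> u = ev \<gamma> j) \<or> (\<exists>x. \<exists>y\<in>nb x. u = \<i> * (y - x)) \<or> u = \<i> \<or> u = 1"
  using assms unfolding isdir_def apply (elim disjE conjE exE bexE) by blast+

lemma isdir_nz: assumes "isdir A v u" shows "u \<noteq> 0"
proof -
  have "(\<exists>\<gamma> j. mx \<gamma> \<and> Suc j < length \<gamma> \<and> u = ev \<gamma> j) \<or> (\<exists>x. \<exists>y\<in>nb x. u = \<i> * (y - x)) \<or> u = \<i> \<or> u = 1"
    using isdir_cases[OF assms] .
  then show ?thesis
  proof (elim disjE exE conjE bexE)
    fix \<gamma> j assume h: "mx \<gamma>" "Suc j < length \<gamma>" "u = ev \<gamma> j"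
    then show "u \<noteq> 0" using st_ev_nz[OF mx_st[OF h(1)] h(2)] by simp
  next
    fix x y assume h: "y \<in> nb x" "u = \<i> * (y - x)"
    have "x \<noteq> y" using nbD(3)[OF h(1)] .
    then show "u \<noteq> 0" using h(2) by simp
  qed simp_all
qed

lemma isdir_pt: assumes "isdir A v u" shows "v \<in> lpts A"
proof -
  have "(\<exists>\<gamma> j. fst A = pclass \<gamma> \<and> Suc j < length \<gamma> \<and> (v = \<gamma>!j \<or> v = \<gamma>!Suc j)) \<or> (\<exists>x. fst A = pclass [x] \<and> v = x)"
    using assms unfolding isdir_def apply (elim disjE conjE exE) by blast+
  moreover
  { assume "\<exists>\<gamma> j. fst A = pclass \<gamma> \<and> Suc j < length \<gamma> \<and> (v = \<gamma>!j \<or> v = \<gamma>!Suc j)"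
    then obtain \<gamma> j where "fst A = pclass \<gamma>" "Suc j < length \<gamma>" "v = \<gamma>!j \<or> v = \<gamma>!Suc j" by blast
    then have ?thesis by (auto simp: lpts_def spoints_pclass) }
  moreover
  { assume "\<exists>x. fst A = pclass [x] \<and> v = x"
    then obtain x where "fst A = pclass [x]" "v = x" by blast
    then have ?thesis by (simp add: lpts_def spoints_pclass) }
  ultimately show ?thesis by blast
qed

lemma isdir_ex: assumes "A \<in> Lab" "v \<in> lpts A" shows "\<exists>u. isdir A v u"
  using assms(1)
proof (cases rule: Lab_cases)
  case (path \<gamma>)
  then have v: "v \<in> set \<gamma>" using assms(2) lpts_path by simp
  then obtain m where m: "m < length \<gamma>" "v = \<gamma>!m" by (auto simp: in_set_conv_nth)
  have n: "2 \<le> length \<gamma>" using st_len[OF mx_st[OF path(1)]] .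
  show ?thesis
  proof (cases "Suc m < length \<gamma>")
    case True then show ?thesis using path m unfolding isdir_def by auto
  next
    case False
    then have "Suc (m - 1) < length \<gamma>" "v = \<gamma>!Suc (m - 1)" using m n by auto
    then show ?thesis using path unfolding isdir_def by auto
  qed
next
  case (sgl x)
  then have v: "v = x" using assms(2) lpts_sgl by simp
  show ?thesis
  proof (cases "x \<in> Vdeg V E 0")
    case True then show ?thesis using sgl v unfolding isdir_def by auto
  next
    case False
    then have x: "x \<in> Vdeg V E 1 \<union> V2pi \<epsilon> V E" using sgl by auto
    then have "card (nb x) \<noteq> 0" using Vdeg_card V2pi_deg by fastforce
    then obtain y where "y \<in> nb x" using card.empty by (metis ex_in_conv)
    then show ?thesis using sgl v x unfolding isdir_def by auto
  qed
next
  case (sgl1 x)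
  then show ?thesis using assms(2) lpts_sgl unfolding isdir_def by auto
qed

end


context LS begin

definition pn :: "complex list \<Rightarrow> nat \<Rightarrow> complex \<Rightarrow> bool" where
  "pn \<gamma> m w \<longleftrightarrow> (Suc m < length \<gamma> \<and> w = \<gamma>!Suc m) \<or> (0 < m \<and> m < length \<gamma> \<and> w = \<gamma>!(m - 1))"

lemma pn_nb: assumes "st \<gamma>" "pn \<gamma> m w" shows "w \<in> nb (\<gamma>!m)"
proof -
  have "(Suc m < length \<gamma> \<and> w = \<gamma>!Suc m) \<or> (0 < m \<and> m < length \<gamma> \<and> w = \<gamma>!(m - 1))"
    using assms(2) by (simp add: pn_def)
  then show ?thesis
  proof
    assume "Suc m < length \<gamma> \<and> w = \<gamma>!Suc m" then show ?thesis using st_nb[OF assms(1)] by blast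
  next
    assume h: "0 < m \<and> m < length \<gamma> \<and> w = \<gamma>!(m - 1)"
    then have "Suc (m - 1) = m" by simp
    then show ?thesis using st_nb'[OF assms(1), of "m - 1"] h by simp
  qed
qed

lemma same_edge_class:
  assumes "mx \<gamma>" "mx \<gamma>'" "Suc j < length \<gamma>" "Suc k < length \<gamma>'" "{\<gamma>!j, \<gamma>!Suc j} = {\<gamma>'!k, \<gamma>'!Suc k}"
  shows "pclass \<gamma> = pclass \<gamma>'"
proof -
  have ne: "\<gamma>!j \<noteq> \<gamma>!Suc j" using edgeD(3)[OF st_edge[OF mx_st[OF assms(1)] assms(3)]] .
  have "(\<gamma>!j = \<gamma>'!k \<and> \<gamma>!Suc j = \<gamma>'!Suc k) \<or> (\<gamma>!j = \<gamma>'!Suc k \<and> \<gamma>!Suc j = \<gamma>'!k)"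
    using assms(5) ne by (auto simp: doubleton_eq_iff)
  then show ?thesis
  proof
    assume "\<gamma>!j = \<gamma>'!k \<and> \<gamma>!Suc j = \<gamma>'!Suc k"
    then have "\<gamma> = \<gamma>'" using U2[OF assms(1-4)] by blast
    then show ?thesis by simp
  next
    assume h: "\<gamma>!j = \<gamma>'!Suc k \<and> \<gamma>!Suc j = \<gamma>'!k"
    let ?k = "length \<gamma>' - 2 - k"
    have r: "rev \<gamma>'!?k = \<gamma>'!Suc k" "rev \<gamma>'!Suc ?k = \<gamma>'!k"
    proof -
      have "Suc ?k < length \<gamma>'" using assms(4) by auto
      have "rev \<gamma>'!?k = \<gamma>'!Suc (length \<gamma>' - 2 - ?k)" "rev \<gamma>'!Suc ?k = \<gamma>'!(length \<gamma>' - 2 - ?k)"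
        using ev_rev[OF \<open>Suc ?k < length \<gamma>'\<close>] by simp_all
      moreover have "length \<gamma>' - 2 - ?k = k" using assms(4) by auto
      ultimately show "rev \<gamma>'!?k = \<gamma>'!Suc k" "rev \<gamma>'!Suc ?k = \<gamma>'!k" by simp_all
    qed
    have "Suc ?k < length (rev \<gamma>')" using assms(4) by auto
    then have "\<gamma> = rev \<gamma>'" using U2[OF assms(1) mx_rev[OF assms(2)] assms(3)] h r by auto
    then show ?thesis by (simp add: pclass_def insert_commute)
  qed
qed

lemma pn_class: assumes "mx \<gamma>" "mx \<gamma>'" "pn \<gamma> m w" "pn \<gamma>' m' w" "\<gamma>!m = \<gamma>'!m'"
  shows "pclass \<gamma> = pclass \<gamma>'"
proof -
  have e1: "\<exists>j. Suc j < length \<gamma> \<and> {\<gamma>!j, \<gamma>!Suc j} = {\<gamma>!m, w}"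
  proof (cases "Suc m < length \<gamma> \<and> w = \<gamma>!Suc m")
    case True then show ?thesis by blast
  next
    case False
    then have h: "0 < m" "m < length \<gamma>" "w = \<gamma>!(m - 1)" using assms(3) by (auto simp: pn_def)
    then have "Suc (m - 1) < length \<gamma>" "Suc (m - 1) = m" by auto
    then show ?thesis using h by (intro exI[of _ "m - 1"]) auto
  qed
  have e2: "\<exists>j. Suc j < length \<gamma>' \<and> {\<gamma>'!j, \<gamma>'!Suc j} = {\<gamma>'!m', w}"
  proof (cases "Suc m' < length \<gamma>' \<and> w = \<gamma>'!Suc m'")
    case True then show ?thesis by blast
  next
    case False
    then have h: "0 < m'" "m' < length \<gamma>'" "w = \<gamma>'!(m' - 1)" using assms(4) by (auto simp: pn_def)
    then have "Suc (m' - 1) < length \<gamma>'" "Suc (m' - 1) = m'" by auto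
    then show ?thesis using h by (intro exI[of _ "m' - 1"]) auto
  qed
  obtain j j' where "Suc j < length \<gamma>" "{\<gamma>!j, \<gamma>!Suc j} = {\<gamma>!m, w}"
    "Suc j' < length \<gamma>'" "{\<gamma>'!j', \<gamma>'!Suc j'} = {\<gamma>'!m', w}" using e1 e2 by blast
  then show ?thesis using same_edge_class[OF assms(1,2)] assms(5) by metis
qed

lemma pn_not_opp: assumes "mx \<gamma>" "m < length \<gamma>" "pn \<gamma> m w" "w' \<in> nb (\<gamma>!m)" "\<not> pn \<gamma> m w'"
  shows "\<not> opp (\<gamma>!m) w w'"
proof
  assume o: "opp (\<gamma>!m) w w'"
  have s: "st \<gamma>" using mx_st[OF assms(1)] .
  have n: "2 \<le> length \<gamma>" using st_len[OF s] .
  consider "m = 0" | "Suc m = length \<gamma>" | "0 < m \<and> Suc m < length \<gamma>" using assms(2) by linarith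
  then show False
  proof cases
    case 1
    then have "w = \<gamma>!1" using assms(3) by (auto simp: pn_def)
    then show False using mx_no_pre[OF assms(1)] o assms(4) 1 by simp
  next
    case 2
    then have m: "m = length \<gamma> - 1" "m - 1 = length \<gamma> - 2" by auto
    have "w = \<gamma>!(m - 1)" using assms(3) 2 by (auto simp: pn_def)
    then show False using mx_no_app[OF assms(1)] o assms(4) m by simp
  next
    case 3
    have o2: "opp (\<gamma>!m) (\<gamma>!Suc m) (\<gamma>!(m - 1))" using st_opp[OF s] 3 by simp
    have nb1: "\<gamma>!Suc m \<in> nb (\<gamma>!m)" "\<gamma>!(m-1) \<in> nb (\<gamma>!m)"
      using pn_nb[OF s] 3 by (auto simp: pn_def)
    have "w = \<gamma>!Suc m \<or> w = \<gamma>!(m - 1)" using assms(3) by (auto simp: pn_def)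
    then show False
    proof
      assume w: "w = \<gamma>!Suc m"
      have "w' \<noteq> \<gamma>!(m - 1)" using assms(5) 3 by (auto simp: pn_def)
      then show False using opp_unique[OF nb1(1) nb1(2) assms(4)] o2 o w by blast
    next
      assume w: "w = \<gamma>!(m - 1)"
      have "w' \<noteq> \<gamma>!Suc m" using assms(5) 3 by (auto simp: pn_def)
      then show False using opp_unique[OF nb1(2) nb1(1) assms(4)] opp_sym[OF o2] o w by blast
    qed
  qed
qed

lemma path_dir_pn: assumes "isdir A v u" "mx \<gamma>" "fst A = pclass \<gamma>" "m < length \<gamma>" "v = \<gamma>!m"
  shows "snd A = 0 \<and> (\<exists>w. pn \<gamma> m w \<and> (u = w - v \<or> u = - (w - v)))"
proof -
  obtain j where j: "snd A = 0" "Suc j < length \<gamma>" "v = \<gamma>!j \<or> v = \<gamma>!Suc j" "u = ev \<gamma> j \<or> u = - ev \<gamma> j"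
    using path_dir[OF assms(1-3)] by blast
  have d: "distinct \<gamma>" using st_distinct[OF mx_st[OF assms(2)]] .
  from j(3) show ?thesis
  proof
    assume "v = \<gamma>!j"
    then have "j = m" using nth_eq_iff_index_eq[OF d] assms(4,5) j(2) by simp
    then have "pn \<gamma> m (\<gamma>!Suc j)" using j(2) by (simp add: pn_def)
    moreover have "ev \<gamma> j = \<gamma>!Suc j - v" using \<open>v = \<gamma>!j\<close> by (simp add: ev_def)
    ultimately show ?thesis using j by auto
  next
    assume "v = \<gamma>!Suc j"
    then have "Suc j = m" using nth_eq_iff_index_eq[OF d] assms(4,5) j(2) by simp
    then have "pn \<gamma> m (\<gamma>!j)" using j(2) by (auto simp: pn_def)
    moreover have "ev \<gamma> j = - (\<gamma>!j - v)" using \<open>v = \<gamma>!Suc j\<close> by (simp add: ev_def)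
    ultimately show ?thesis using j by auto
  qed
qed

lemma isdir_sgl: assumes "isdir A v u" "fst A = pclass [x]"
  shows "v = x \<and> ((x \<in> Vdeg V E 1 \<union> V2pi \<epsilon> V E \<and> snd A = 0 \<and> (\<exists>y\<in>nb x. u = \<i> * (y - x)))
        \<or> (x \<in> Vdeg V E 0 \<and> ((snd A = 0 \<and> u = \<i>) \<or> (snd A = 1 \<and> u = 1))))"
proof -
  have np: "\<not> (\<exists>\<gamma>. mx \<gamma> \<and> fst A = pclass \<gamma>)" using mx_ne_sgl assms(2) by metis
  have "\<exists>x'. fst A = pclass [x'] \<and> v = x' \<and> ((x' \<in> Vdeg V E 1 \<union> V2pi \<epsilon> V E \<and> snd A = 0 \<and> (\<exists>y \<in> nb x'. u = \<i> * (y - x')))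
        \<or> (x' \<in> Vdeg V E 0 \<and> ((snd A = 0 \<and> u = \<i>) \<or> (snd A = 1 \<and> u = 1))))"
    using assms(1) np unfolding isdir_def by blast
  then obtain x' where h: "fst A = pclass [x']" "v = x'" "(x' \<in> Vdeg V E 1 \<union> V2pi \<epsilon> V E \<and> snd A = 0 \<and> (\<exists>y \<in> nb x'. u = \<i> * (y - x')))
        \<or> (x' \<in> Vdeg V E 0 \<and> ((snd A = 0 \<and> u = \<i>) \<or> (snd A = 1 \<and> u = 1)))" by blast
  have "x' = x" using h(1) assms(2) sgl_inj by simp
  then show ?thesis using h by simp
qed

end


context LS begin

lemma pd_signs: assumes "a \<noteq> 0" "b \<noteq> 0" "u = a \<or> u = - a" "u' = b \<or> u' = - b"
  shows "pd u u' = pd a b"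
  using assms pd_negl[of a b] pd_negr[of a b] pd_negl[of a "- b"] pd_negr[of "- a" b] pd_negr[of a b]
  by (elim disjE) auto

lemma lab_path: "mx \<gamma> \<Longrightarrow> (pclass \<gamma>, 0) \<in> Lab" by (auto simp: Lab_def S_Gamma_def)
lemma lab_sgl: "x \<in> Sg \<Longrightarrow> (pclass [x], 0) \<in> Lab" unfolding Lab_def by blast
lemma lab_sgl1: "x \<in> Vdeg V E 0 \<Longrightarrow> (pclass [x], 1) \<in> Lab" unfolding Lab_def by blast

lemma V0_nb: "x \<in> Vdeg V E 0 \<Longrightarrow> nb x = {}" using fin_nb by (simp add: Vdeg_def)
lemma V1_nb: assumes "x \<in> Vdeg V E 1" "y \<in> nb x" "y' \<in> nb x" shows "y = y'"
proof -
  have "card (nb x) = 1" using assms(1) by (simp add: Vdeg_def)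
  then obtain z where "nb x = {z}" using card_1_singletonE by blast
  then show ?thesis using assms by simp
qed

lemma V2pi_pair: assumes "x \<in> V2pi \<epsilon> V E" "y \<in> nb x" "y' \<in> nb x" "y \<noteq> y'" shows "opp x y y'"
proof -
  obtain x1 x2 where h: "nb x = {x1, x2}" "x1 \<noteq> x2" "opp x x1 x2" using V2pi_opp[OF assms(1)] by blast
  have "(y = x1 \<and> y' = x2) \<or> (y = x2 \<and> y' = x1)" using h assms by auto
  then show ?thesis using h(3) opp_sym by blast
qed

lemma set_pos: assumes "v \<in> set \<gamma>" obtains m where "m < length \<gamma>" "v = \<gamma>!m"
  using assms by (auto simp: in_set_conv_nth)

lemma drift_lab: assumes "A \<in> Lab" "isdir A v u" "isdir A v' u'" shows "pd u u' < \<delta>"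
  using assms(1)
proof (cases rule: Lab_cases)
  case (path \<gamma>)
  obtain j where j: "Suc j < length \<gamma>" "u = ev \<gamma> j \<or> u = - ev \<gamma> j" using path_dir[OF assms(2) path(1)] path by auto
  obtain j' where j': "Suc j' < length \<gamma>" "u' = ev \<gamma> j' \<or> u' = - ev \<gamma> j'" using path_dir[OF assms(3) path(1)] path by auto
  have s: "st \<gamma>" using mx_st[OF path(1)] .
  have "pd u u' = pd (ev \<gamma> j) (ev \<gamma> j')" using pd_signs st_ev_nz[OF s j(1)] st_ev_nz[OF s j'(1)] j j' by blast
  also have "\<dots> \<le> ad (ev \<gamma> j) (ev \<gamma> j')" by (rule pd_le_ad)
  also have "\<dots> < \<delta>" using drift[OF s j(1) j'(1)] .
  finally show ?thesis .
next
  case (sgl x)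
  have a: "v = x \<and> ((x \<in> Vdeg V E 1 \<union> V2pi \<epsilon> V E \<and> (\<exists>y\<in>nb x. u = \<i> * (y - x))) \<or> (x \<in> Vdeg V E 0 \<and> u = \<i>))"
    using isdir_sgl[OF assms(2)] sgl by auto
  have b: "v' = x \<and> ((x \<in> Vdeg V E 1 \<union> V2pi \<epsilon> V E \<and> (\<exists>y\<in>nb x. u' = \<i> * (y - x))) \<or> (x \<in> Vdeg V E 0 \<and> u' = \<i>))"
    using isdir_sgl[OF assms(3)] sgl by auto
  show ?thesis
  proof (cases "x \<in> Vdeg V E 0")
    case True
    then have "u = \<i>" "u' = \<i>" using a b V0_nb by auto
    then show ?thesis using pd_self eps_small by simp
  next
    case False
    then obtain y y' where y: "y \<in> nb x" "u = \<i> * (y - x)" "y' \<in> nb x" "u' = \<i> * (y' - x)"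
      and x: "x \<in> Vdeg V E 1 \<union> V2pi \<epsilon> V E" using a b by blast
    show ?thesis
    proof (cases "y = y'")
      case True then show ?thesis using y pd_self eps_small by simp
    next
      case False
      then have "x \<in> V2pi \<epsilon> V E" using x V1_nb y by blast
      then have "opp x y y'" using V2pi_pair y False by blast
      then have "pd (y - x) (y' - x) \<le> \<epsilon>" by (rule pd_of_opp)
      then show ?thesis using y pd_rot_i eps_small by simp
    qed
  qed
next
  case (sgl1 x)
  then have "u = 1" "u' = 1" using isdir_sgl[OF assms(2)] isdir_sgl[OF assms(3)] V0_nb by auto
  then show ?thesis using pd_self eps_small by simp
qed

lemma perp_pp: assumes "mx \<gamma>" "mx \<gamma>'" "pclass \<gamma> \<noteq> pclass \<gamma>'" "fst A = pclass \<gamma>" "fst B = pclass \<gamma>'"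
  "isdir A v u" "isdir B v u'" shows "pi / 2 - \<epsilon> \<le> pd u u'"
proof -
  have v1: "v \<in> set \<gamma>" using isdir_pt[OF assms(6)] assms(4) by (simp add: lpts_def spoints_pclass)
  have v2: "v \<in> set \<gamma>'" using isdir_pt[OF assms(7)] assms(5) by (simp add: lpts_def spoints_pclass)
  obtain m where m: "m < length \<gamma>" "v = \<gamma>!m" using set_pos[OF v1] by blast
  obtain m' where m': "m' < length \<gamma>'" "v = \<gamma>'!m'" using set_pos[OF v2] by blast
  obtain w where w: "pn \<gamma> m w" "u = w - v \<or> u = - (w - v)" using path_dir_pn[OF assms(6,1,4) m] by blast
  obtain w' where w': "pn \<gamma>' m' w'" "u' = w' - v \<or> u' = - (w' - v)" using path_dir_pn[OF assms(7,2,5) m'] by blast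
  have npn: "\<not> pn \<gamma> m w'" using pn_class[OF assms(1,2) _ w'(1)] m m' assms(3) by auto
  have wn: "w \<in> nb v" using pn_nb[OF mx_st[OF assms(1)] w(1)] m by simp
  have wn': "w' \<in> nb v" using pn_nb[OF mx_st[OF assms(2)] w'(1)] m' by simp
  have ne: "w \<noteq> w'" using npn w(1) by auto
  have "\<not> opp v w w'" using pn_not_opp[OF assms(1) m(1) w(1)] wn' npn m by simp
  then have p: "pi / 2 - \<epsilon> \<le> pd (w - v) (w' - v)" using not_opp_perp[OF wn wn' ne] by simp
  have "pd u u' = pd (w - v) (w' - v)" using pd_signs w(2) w'(2) nbD(3)[OF wn] nbD(3)[OF wn'] by force
  then show ?thesis using p by simp
qed

lemma perp_ps: assumes "mx \<gamma>" "fst A = pclass \<gamma>" "fst B = pclass [x]" "isdir A v u" "isdir B v u'"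
  shows "pi / 2 - \<epsilon> \<le> pd u u'"
proof -
  have s: "v = x \<and> ((x \<in> Vdeg V E 1 \<union> V2pi \<epsilon> V E \<and> snd B = 0 \<and> (\<exists>y\<in>nb x. u' = \<i> * (y - x)))
        \<or> (x \<in> Vdeg V E 0 \<and> ((snd B = 0 \<and> u' = \<i>) \<or> (snd B = 1 \<and> u' = 1))))" using isdir_sgl[OF assms(5,3)] .
  have v1: "v \<in> set \<gamma>" using isdir_pt[OF assms(4)] assms(2) by (simp add: lpts_def spoints_pclass)
  obtain m where m: "m < length \<gamma>" "v = \<gamma>!m" using set_pos[OF v1] by blast
  obtain w where w: "pn \<gamma> m w" "u = w - v \<or> u = - (w - v)" using path_dir_pn[OF assms(4,1,2) m] by blast
  have wn: "w \<in> nb x" using pn_nb[OF mx_st[OF assms(1)] w(1)] m s by simp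
  then have "x \<notin> Vdeg V E 0" using V0_nb by auto
  then obtain y where y: "x \<in> Vdeg V E 1 \<union> V2pi \<epsilon> V E" "y \<in> nb x" "u' = \<i> * (y - x)" using s by blast
  have nz: "w - x \<noteq> 0" "y - x \<noteq> 0" using nbD(3)[OF wn] nbD(3)[OF y(2)] by auto
  have pu: "pd u u' = pd (w - x) (\<i> * (y - x))"
  proof -
    have "u = (w - x) \<or> u = - (w - x)" using w(2) s by simp
    moreover have "\<i> * (y - x) \<noteq> 0" using nz by simp
    ultimately show ?thesis using pd_signs[of "w - x" "\<i> * (y - x)" u u'] nz y(3) by blast
  qed
  also have "\<dots> = pi / 2 - pd (w - x) (y - x)" using pd_ii nz by simp
  finally have e: "pd u u' = pi / 2 - pd (w - x) (y - x)" .
  show ?thesis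
  proof (cases "w = y")
    case True then show ?thesis using e pd_self[of "y - x"] eps_pos by simp
  next
    case False
    then have "x \<in> V2pi \<epsilon> V E" using y V1_nb wn by blast
    then have "opp x w y" using V2pi_pair wn y(2) False by blast
    then have "pd (w - x) (y - x) \<le> \<epsilon>" by (rule pd_of_opp)
    then show ?thesis using e by simp
  qed
qed

lemma V0_not_V12: "x \<in> Vdeg V E 0 \<Longrightarrow> x \<notin> Vdeg V E 1 \<union> V2pi \<epsilon> V E"
  using Vdeg_disj V2pi_deg by fastforce

lemma perp_ss: assumes "fst A = pclass [x]" "fst B = pclass [x']" "A \<noteq> B" "isdir A v u" "isdir B v u'"
  shows "pi / 2 - \<epsilon> \<le> pd u u'"
proof -
  have a: "v = x \<and> ((x \<in> Vdeg V E 1 \<union> V2pi \<epsilon> V E \<and> snd A = 0 \<and> (\<exists>y\<in>nb x. u = \<i> * (y - x)))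
        \<or> (x \<in> Vdeg V E 0 \<and> ((snd A = 0 \<and> u = \<i>) \<or> (snd A = 1 \<and> u = 1))))" using isdir_sgl[OF assms(4,1)] .
  have b: "v = x' \<and> ((x' \<in> Vdeg V E 1 \<union> V2pi \<epsilon> V E \<and> snd B = 0 \<and> (\<exists>y\<in>nb x'. u' = \<i> * (y - x')))
        \<or> (x' \<in> Vdeg V E 0 \<and> ((snd B = 0 \<and> u' = \<i>) \<or> (snd B = 1 \<and> u' = 1))))" using isdir_sgl[OF assms(5,2)] .
  have xx: "x' = x" using a b by simp
  have sn: "snd A \<noteq> snd B" using assms(1,2,3) xx by (metis prod.expand)
  have "x \<in> Vdeg V E 0"
  proof (rule ccontr)
    assume "x \<notin> Vdeg V E 0"
    then have "snd A = 0" "snd B = 0" using a b xx by auto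
    then show False using sn by simp
  qed
  then have "(u = \<i> \<and> u' = 1) \<or> (u = 1 \<and> u' = \<i>)" using a b xx sn V0_not_V12 by auto
  then show ?thesis using pd_1_i pd_sym[of 1 "\<i>"] eps_pos by auto
qed

lemma PERP: assumes "A \<in> Lab" "B \<in> Lab" "A \<noteq> B" "isdir A v u" "isdir B v u'"
  shows "pi / 2 - \<epsilon> \<le> pd u u'"
  using assms(1)
proof (cases rule: Lab_cases)
  case (path \<gamma>)
  show ?thesis using assms(2)
  proof (cases rule: Lab_cases)
    case (path \<gamma>')
    have "pclass \<gamma> \<noteq> pclass \<gamma>'" using assms(3) \<open>A = (pclass \<gamma>, 0)\<close> \<open>B = (pclass \<gamma>', 0)\<close> by auto
    then show ?thesis using perp_pp[OF \<open>mx \<gamma>\<close> \<open>mx \<gamma>'\<close> _ _ _ assms(4,5)] \<open>A = (pclass \<gamma>, 0)\<close> \<open>B = (pclass \<gamma>', 0)\<close> by simp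
  next
    case (sgl x) then show ?thesis using perp_ps[OF \<open>mx \<gamma>\<close>, of A B x v u u'] path assms(4,5) by simp
  next
    case (sgl1 x) then show ?thesis using perp_ps[OF \<open>mx \<gamma>\<close>, of A B x v u u'] path assms(4,5) by simp
  qed
next
  case (sgl x)
  show ?thesis using assms(2)
  proof (cases rule: Lab_cases)
    case (path \<gamma>')
    then show ?thesis using perp_ps[OF \<open>mx \<gamma>'\<close>, of B A x v u' u] sgl assms(4,5) pd_sym[of u u'] by simp
  next
    case (sgl x') then show ?thesis using perp_ss[OF _ _ assms(3,4,5)] \<open>A = (pclass [x], 0)\<close> by simp
  next
    case (sgl1 x') then show ?thesis using perp_ss[OF _ _ assms(3,4,5)] \<open>A = (pclass [x], 0)\<close> by simp
  qed
next
  case (sgl1 x)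
  show ?thesis using assms(2)
  proof (cases rule: Lab_cases)
    case (path \<gamma>')
    then show ?thesis using perp_ps[OF \<open>mx \<gamma>'\<close>, of B A x v u' u] sgl1 assms(4,5) pd_sym[of u u'] by simp
  next
    case (sgl x') then show ?thesis using perp_ss[OF _ _ assms(3,4,5)] \<open>A = (pclass [x], 1)\<close> by simp
  next
    case (sgl1 x') then show ?thesis using perp_ss[OF _ _ assms(3,4,5)] \<open>A = (pclass [x], 1)\<close> by simp
  qed
qed

end


context LS begin

lemma step_perp: assumes "a \<noteq> 0" "b \<noteq> 0" "c \<noteq> 0" "pd a c \<le> s" "pi / 2 - \<epsilon> \<le> pd a b"
  shows "pd b (\<i> * c) \<le> s + \<epsilon>"
proof -
  have "pd b (\<i> * c) \<le> pd b (\<i> * a) + pd (\<i> * a) (\<i> * c)" using pd_tri assms by simp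
  moreover have "pd b (\<i> * a) \<le> \<epsilon>" using pd_perp_step[OF assms(1,2,5)] .
  moreover have "pd (\<i> * a) (\<i> * c) = pd a c" by (rule pd_rot_i)
  ultimately show ?thesis using assms(4) by simp
qed

lemma step_drift: assumes "a \<noteq> 0" "b \<noteq> 0" "c \<noteq> 0" "pd a c \<le> s" "pd a b < d"
  shows "pd b c \<le> s + d"
proof -
  have "pd b c \<le> pd b a + pd a c" using pd_tri assms by simp
  then show ?thesis using assms pd_sym[of a b] by simp
qed

lemma dir_of: assumes "A \<in> Lab" "v \<in> lpts A" obtains u where "isdir A v u" "u \<noteq> 0"
  using isdir_ex[OF assms] isdir_nz by blast

lemma pd_i_self: "u \<noteq> 0 \<Longrightarrow> pd u (\<i> * u) = pi / 2" using pd_ii[of u u] pd_self by simp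

lemma TRI: assumes "A \<in> Lab" "B \<in> Lab" "C \<in> Lab" "A \<noteq> B" "B \<noteq> C" "C \<noteq> A"
  "a \<in> lpts A" "a \<in> lpts B" "b \<in> lpts B" "b \<in> lpts C" "c \<in> lpts C" "c \<in> lpts A"
  shows False
proof -
  obtain uAa where 1: "isdir A a uAa" "uAa \<noteq> 0" using dir_of assms by blast
  obtain uBa where 2: "isdir B a uBa" "uBa \<noteq> 0" using dir_of assms by blast
  obtain uBb where 3: "isdir B b uBb" "uBb \<noteq> 0" using dir_of assms by blast
  obtain uCb where 4: "isdir C b uCb" "uCb \<noteq> 0" using dir_of assms by blast
  obtain uCc where 5: "isdir C c uCc" "uCc \<noteq> 0" using dir_of assms by blast
  obtain uAc where 6: "isdir A c uAc" "uAc \<noteq> 0" using dir_of assms by blast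
  have s1: "pd uBa (\<i> * uAa) \<le> 0 + \<epsilon>"
    using step_perp[OF 1(2) 2(2) 1(2), of 0] PERP[OF assms(1,2,4) 1(1) 2(1)] pd_self by simp
  have s2: "pd uBb (\<i> * uAa) \<le> (0 + \<epsilon>) + \<delta>"
    using step_drift[where d="\<delta>", OF 2(2) 3(2) _ s1] drift_lab[OF assms(2) 2(1) 3(1)] 1(2) by simp
  have s3: "pd uCb (\<i> * (\<i> * uAa)) \<le> ((0 + \<epsilon>) + \<delta>) + \<epsilon>"
    using step_perp[OF 3(2) 4(2) _ s2] PERP[OF assms(2,3,5) 3(1) 4(1)] 1(2) by simp
  have s4: "pd uCc (\<i> * (\<i> * uAa)) \<le> (((0 + \<epsilon>) + \<delta>) + \<epsilon>) + \<delta>"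
    using step_drift[where d="\<delta>", OF 4(2) 5(2) _ s3] drift_lab[OF assms(3) 4(1) 5(1)] 1(2) by simp
  have s5: "pd uAc (\<i> * (\<i> * (\<i> * uAa))) \<le> ((((0 + \<epsilon>) + \<delta>) + \<epsilon>) + \<delta>) + \<epsilon>"
    using step_perp[OF 5(2) 6(2) _ s4] PERP[OF assms(3,1,6) 5(1) 6(1)] 1(2) by simp
  have s6: "pd uAa (\<i> * (\<i> * (\<i> * uAa))) \<le> (((((0 + \<epsilon>) + \<delta>) + \<epsilon>) + \<delta>) + \<epsilon>) + \<delta>"
    using step_drift[where d="\<delta>", OF 6(2) 1(2) _ s5] drift_lab[OF assms(1) 6(1) 1(1)] 1(2) by simp
  have "\<i> * (\<i> * (\<i> * uAa)) = - (\<i> * uAa)" by (simp add: algebra_simps)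
  then have "pd uAa (\<i> * (\<i> * (\<i> * uAa))) = pi / 2" using pd_negr[of uAa "\<i> * uAa"] pd_i_self[OF 1(2)] 1(2) by simp
  then show False using s6 eps_small by simp
qed

definition isvert :: "complex list set \<times> nat \<Rightarrow> bool" where
  "isvert A \<longleftrightarrow> (\<forall>v u. isdir A v u \<longrightarrow> pd u \<i> < \<delta> + 2 * \<epsilon>)"

lemma QUAD: assumes "A \<in> Lab" "B \<in> Lab" "C \<in> Lab" "D \<in> Lab" "A \<noteq> B" "B \<noteq> C" "C \<noteq> D"
  "a \<in> lpts A" "a \<in> lpts B" "p \<in> lpts B" "p \<in> lpts C" "b \<in> lpts C" "b \<in> lpts D" "isvert A" "isvert D"
  shows False
proof -
  obtain uAa where 1: "isdir A a uAa" "uAa \<noteq> 0" using dir_of assms by blast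
  obtain uBa where 2: "isdir B a uBa" "uBa \<noteq> 0" using dir_of assms by blast
  obtain uBp where 3: "isdir B p uBp" "uBp \<noteq> 0" using dir_of assms by blast
  obtain uCp where 4: "isdir C p uCp" "uCp \<noteq> 0" using dir_of assms by blast
  obtain uCb where 5: "isdir C b uCb" "uCb \<noteq> 0" using dir_of assms by blast
  obtain uDb where 6: "isdir D b uDb" "uDb \<noteq> 0" using dir_of assms by blast
  have i0: "\<i> \<noteq> 0" by simp
  have s0: "pd uAa \<i> \<le> \<delta> + 2 * \<epsilon>" using assms(14) 1(1) unfolding isvert_def by force
  have s1: "pd uBa (\<i> * \<i>) \<le> (\<delta> + 2 * \<epsilon>) + \<epsilon>"
    using step_perp[OF 1(2) 2(2) i0 s0] PERP[OF assms(1,2,5) 1(1) 2(1)] by simp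
  have s2: "pd uBp (\<i> * \<i>) \<le> ((\<delta> + 2 * \<epsilon>) + \<epsilon>) + \<delta>"
    using step_drift[where d="\<delta>", OF 2(2) 3(2) _ s1] drift_lab[OF assms(2) 2(1) 3(1)] by simp
  have s3: "pd uCp (\<i> * (\<i> * \<i>)) \<le> (((\<delta> + 2 * \<epsilon>) + \<epsilon>) + \<delta>) + \<epsilon>"
    using step_perp[OF 3(2) 4(2) _ s2] PERP[OF assms(2,3,6) 3(1) 4(1)] by simp
  have s4: "pd uCb (\<i> * (\<i> * \<i>)) \<le> ((((\<delta> + 2 * \<epsilon>) + \<epsilon>) + \<delta>) + \<epsilon>) + \<delta>"
    using step_drift[where d="\<delta>", OF 4(2) 5(2) _ s3] drift_lab[OF assms(3) 4(1) 5(1)] by simp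
  have s5: "pd uDb (\<i> * (\<i> * (\<i> * \<i>))) \<le> (((((\<delta> + 2 * \<epsilon>) + \<epsilon>) + \<delta>) + \<epsilon>) + \<delta>) + \<epsilon>"
    using step_perp[OF 5(2) 6(2) _ s4] PERP[OF assms(3,4,7) 5(1) 6(1)] by simp
  have s6: "pd uDb \<i> < \<delta> + 2 * \<epsilon>" using assms(15) 6(1) unfolding isvert_def by force
  have "pd 1 \<i> \<le> pd 1 uDb + pd uDb \<i>" using pd_tri 6(2) by simp
  moreover have "\<i> * (\<i> * (\<i> * \<i>)) = (1::complex)" by (simp add: algebra_simps)
  ultimately have "pi / 2 < 4 * \<delta> + 7 * \<epsilon>" using s5 s6 pd_sym[of 1 uDb] pd_1_i by simp
  then show False using eps_small by simp
qed

lemma PENTA: assumes "X \<in> Lab" "L \<in> Lab" "A2 \<in> Lab" "A1 \<in> Lab" "L' \<in> Lab"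
  "X \<noteq> L" "L \<noteq> A2" "A2 \<noteq> A1" "A1 \<noteq> L'" "L' \<noteq> X"
  "w1 \<in> lpts X" "w1 \<in> lpts L" "y \<in> lpts L" "y \<in> lpts A2" "p \<in> lpts A2" "p \<in> lpts A1"
  "x \<in> lpts A1" "x \<in> lpts L'" "w2 \<in> lpts L'" "w2 \<in> lpts X"
  shows False
proof -
  obtain u0 where 0: "isdir X w1 u0" "u0 \<noteq> 0" using dir_of assms by blast
  obtain u1 where 1: "isdir L w1 u1" "u1 \<noteq> 0" using dir_of assms by blast
  obtain u2 where 2: "isdir L y u2" "u2 \<noteq> 0" using dir_of assms by blast
  obtain u3 where 3: "isdir A2 y u3" "u3 \<noteq> 0" using dir_of assms by blast
  obtain u4 where 4: "isdir A2 p u4" "u4 \<noteq> 0" using dir_of assms by blast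
  obtain u5 where 5: "isdir A1 p u5" "u5 \<noteq> 0" using dir_of assms by blast
  obtain u6 where 6: "isdir A1 x u6" "u6 \<noteq> 0" using dir_of assms by blast
  obtain u7 where 7: "isdir L' x u7" "u7 \<noteq> 0" using dir_of assms by blast
  obtain u8 where 8: "isdir L' w2 u8" "u8 \<noteq> 0" using dir_of assms by blast
  obtain u9 where 9: "isdir X w2 u9" "u9 \<noteq> 0" using dir_of assms by blast
  have s1: "pd u1 (\<i> * u0) \<le> 0 + \<epsilon>"
    using step_perp[OF 0(2) 1(2) 0(2), of 0] PERP[OF assms(1,2,6) 0(1) 1(1)] pd_self by simp
  have s2: "pd u2 (\<i> * u0) \<le> (0 + \<epsilon>) + \<delta>"
    using step_drift[where d="\<delta>", OF 1(2) 2(2) _ s1] drift_lab[OF assms(2) 1(1) 2(1)] 0(2) by simp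
  have s3: "pd u3 (\<i> * (\<i> * u0)) \<le> ((0 + \<epsilon>) + \<delta>) + \<epsilon>"
    using step_perp[OF 2(2) 3(2) _ s2] PERP[OF assms(2,3,7) 2(1) 3(1)] 0(2) by simp
  have s4: "pd u4 (\<i> * (\<i> * u0)) \<le> (((0 + \<epsilon>) + \<delta>) + \<epsilon>) + \<delta>"
    using step_drift[where d="\<delta>", OF 3(2) 4(2) _ s3] drift_lab[OF assms(3) 3(1) 4(1)] 0(2) by simp
  have s5: "pd u5 (\<i> * (\<i> * (\<i> * u0))) \<le> ((((0 + \<epsilon>) + \<delta>) + \<epsilon>) + \<delta>) + \<epsilon>"
    using step_perp[OF 4(2) 5(2) _ s4] PERP[OF assms(3,4,8) 4(1) 5(1)] 0(2) by simp
  have s6: "pd u6 (\<i> * (\<i> * (\<i> * u0))) \<le> (((((0 + \<epsilon>) + \<delta>) + \<epsilon>) + \<delta>) + \<epsilon>) + \<delta>"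
    using step_drift[where d="\<delta>", OF 5(2) 6(2) _ s5] drift_lab[OF assms(4) 5(1) 6(1)] 0(2) by simp
  have s7: "pd u7 (\<i> * (\<i> * (\<i> * (\<i> * u0)))) \<le> ((((((0 + \<epsilon>) + \<delta>) + \<epsilon>) + \<delta>) + \<epsilon>) + \<delta>) + \<epsilon>"
    using step_perp[OF 6(2) 7(2) _ s6] PERP[OF assms(4,5,9) 6(1) 7(1)] 0(2) by simp
  have s8: "pd u8 (\<i> * (\<i> * (\<i> * (\<i> * u0)))) \<le> (((((((0 + \<epsilon>) + \<delta>) + \<epsilon>) + \<delta>) + \<epsilon>) + \<delta>) + \<epsilon>) + \<delta>"
    using step_drift[where d="\<delta>", OF 7(2) 8(2) _ s7] drift_lab[OF assms(5) 7(1) 8(1)] 0(2) by simp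
  have s9: "pd u9 (\<i> * (\<i> * (\<i> * (\<i> * (\<i> * u0))))) \<le> ((((((((0 + \<epsilon>) + \<delta>) + \<epsilon>) + \<delta>) + \<epsilon>) + \<delta>) + \<epsilon>) + \<delta>) + \<epsilon>"
    using step_perp[OF 8(2) 9(2) _ s8] PERP[OF assms(5,1,10) 8(1) 9(1)] 0(2) by simp
  have s10: "pd u0 (\<i> * (\<i> * (\<i> * (\<i> * (\<i> * u0))))) \<le> (((((((((0 + \<epsilon>) + \<delta>) + \<epsilon>) + \<delta>) + \<epsilon>) + \<delta>) + \<epsilon>) + \<delta>) + \<epsilon>) + \<delta>"
    using step_drift[where d="\<delta>", OF 9(2) 0(2) _ s9] drift_lab[OF assms(1) 9(1) 0(1)] 0(2) by simp
  have "\<i> * (\<i> * (\<i> * (\<i> * (\<i> * u0)))) = \<i> * u0" by (simp add: algebra_simps)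
  then have "pd u0 (\<i> * (\<i> * (\<i> * (\<i> * (\<i> * u0))))) = pi / 2" using pd_i_self[OF 0(2)] by simp
  then show False using s10 eps_small by simp
qed

lemma TWOVERT: assumes "A \<in> Lab" "B \<in> Lab" "A \<noteq> B" "w \<in> lpts A" "w \<in> lpts B" "isvert A" "isvert B"
  shows False
proof -
  obtain uA where 1: "isdir A w uA" "uA \<noteq> 0" using dir_of assms by blast
  obtain uB where 2: "isdir B w uB" "uB \<noteq> 0" using dir_of assms by blast
  have i0: "\<i> \<noteq> 0" by simp
  have s0: "pd uA \<i> \<le> \<delta> + 2 * \<epsilon>" using assms(6) 1(1) unfolding isvert_def by force
  have s1: "pd uB (\<i> * \<i>) \<le> (\<delta> + 2 * \<epsilon>) + \<epsilon>"
    using step_perp[OF 1(2) 2(2) i0 s0] PERP[OF assms(1,2,3) 1(1) 2(1)] by simp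
  have s2: "pd uB \<i> < \<delta> + 2 * \<epsilon>" using assms(7) 2(1) unfolding isvert_def by force
  have "pd (-1) \<i> \<le> pd (-1) uB + pd uB \<i>" using pd_tri 2(2) by simp
  then have "pi / 2 < 2 * \<delta> + 5 * \<epsilon>" using s1 s2 pd_sym[of "-1" uB] pd_negl[of 1 "\<i>"] pd_1_i by simp
  then show False using eps_small by simp
qed

end


context LS begin

lemma path_through: assumes "y \<in> nb v"
  shows "\<exists>\<gamma> m. mx \<gamma> \<and> m < length \<gamma> \<and> \<gamma>!m = v \<and> pn \<gamma> m y"
proof -
  obtain \<gamma> i where "mx \<gamma>" "Suc i < length \<gamma>" "\<gamma>!i = v" "\<gamma>!Suc i = y"
    using exmax nbD(4)[OF assms] by blast
  then show ?thesis by (intro exI[of _ \<gamma>] exI[of _ i]) (auto simp: pn_def)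
qed

lemma pn_two_opp: assumes "st \<gamma>" "pn \<gamma> m w" "pn \<gamma> m w'" "w \<noteq> w'" shows "opp (\<gamma>!m) w w'"
proof -
  have c: "(Suc m < length \<gamma> \<and> w = \<gamma>!Suc m \<and> 0 < m \<and> w' = \<gamma>!(m - 1)) \<or> (Suc m < length \<gamma> \<and> w' = \<gamma>!Suc m \<and> 0 < m \<and> w = \<gamma>!(m - 1))"
    using assms(2,3,4) unfolding pn_def by auto
  then show ?thesis
  proof
    assume h: "Suc m < length \<gamma> \<and> w = \<gamma>!Suc m \<and> 0 < m \<and> w' = \<gamma>!(m - 1)"
    then show ?thesis using st_opp[OF assms(1), of m] by simp
  next
    assume h: "Suc m < length \<gamma> \<and> w' = \<gamma>!Suc m \<and> 0 < m \<and> w = \<gamma>!(m - 1)"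
    then show ?thesis using st_opp[OF assms(1), of m] opp_sym by simp
  qed
qed

lemma pn_rev: assumes "pn (rev \<gamma>) k y" "k < length \<gamma>"
  shows "pn \<gamma> (length \<gamma> - 1 - k) y"
proof -
  define n where "n = length \<gamma>"
  define m where "m = n - 1 - k"
  have kn: "k < n" using assms(2) n_def by simp
  have "(Suc k < n \<and> y = rev \<gamma>!Suc k) \<or> (0 < k \<and> y = rev \<gamma>!(k - 1))" using assms by (simp add: pn_def n_def)
  then have "pn \<gamma> m y"
  proof
    assume h: "Suc k < n \<and> y = rev \<gamma>!Suc k"
    have "rev \<gamma>!Suc k = \<gamma>!(n - Suc (Suc k))" using h by (simp add: rev_nth n_def)
    moreover have "n - Suc (Suc k) = m - 1" "0 < m" "m < n" using h by (auto simp: m_def)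
    ultimately have "y = \<gamma>!(m - 1)" "0 < m" "m < length \<gamma>" using h by (auto simp: n_def)
    then show ?thesis by (simp add: pn_def)
  next
    assume h: "0 < k \<and> y = rev \<gamma>!(k - 1)"
    have "rev \<gamma>!(k - 1) = \<gamma>!(n - Suc (k - 1))" using h kn by (simp add: rev_nth n_def)
    moreover have "n - Suc (k - 1) = Suc m" "Suc m < n" using h kn by (auto simp: m_def)
    ultimately have "y = \<gamma>!Suc m" "Suc m < length \<gamma>" using h by (auto simp: n_def)
    then show ?thesis by (simp add: pn_def)
  qed
  then show ?thesis by (simp add: m_def n_def)
qed

lemma pn_of_class: assumes "mx \<gamma>1" "mx \<gamma>2" "pclass \<gamma>1 = pclass \<gamma>2" "m1 < length \<gamma>1" "m2 < length \<gamma>2"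
  "\<gamma>1!m1 = v" "\<gamma>2!m2 = v" "pn \<gamma>2 m2 y" shows "pn \<gamma>1 m1 y"
proof -
  have d: "distinct \<gamma>1" using st_distinct[OF mx_st[OF assms(1)]] .
  have "\<gamma>2 = \<gamma>1 \<or> \<gamma>2 = rev \<gamma>1" using assms(3) pclass_eq by blast
  then show ?thesis
  proof
    assume e: "\<gamma>2 = \<gamma>1"
    then have "m2 = m1" using nth_eq_iff_index_eq[OF d, of m2 m1] assms by simp
    then show ?thesis using assms e by simp
  next
    assume e: "\<gamma>2 = rev \<gamma>1"
    have l: "m2 < length \<gamma>1" using assms(5) e by simp
    have p: "pn \<gamma>1 (length \<gamma>1 - 1 - m2) y" using pn_rev[of \<gamma>1 m2 y] assms(8) e l by simp
    have "rev \<gamma>1!m2 = \<gamma>1!(length \<gamma>1 - Suc m2)" using l by (intro rev_nth) simp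
    then have "\<gamma>1!(length \<gamma>1 - 1 - m2) = v" using assms(7) e by simp
    then have "length \<gamma>1 - 1 - m2 = m1" using nth_eq_iff_index_eq[OF d, of "length \<gamma>1 - 1 - m2" m1] assms(4,6) l by simp
    then show ?thesis using p by simp
  qed
qed

lemma exist2: assumes "v \<in> V" shows "\<exists>A B. A \<in> Lab \<and> B \<in> Lab \<and> A \<noteq> B \<and> v \<in> lpts A \<and> v \<in> lpts B"
proof -
  have pathlab: "\<And>y. y \<in> nb v \<Longrightarrow> \<exists>\<gamma> m. mx \<gamma> \<and> (pclass \<gamma>, 0) \<in> Lab \<and> v \<in> lpts (pclass \<gamma>, 0) \<and> m < length \<gamma> \<and> \<gamma>!m = v \<and> pn \<gamma> m y"
  proof -
    fix y assume "y \<in> nb v"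
    then obtain \<gamma> m where "mx \<gamma>" "m < length \<gamma>" "\<gamma>!m = v" "pn \<gamma> m y" using path_through by blast
    then show "\<exists>\<gamma> m. mx \<gamma> \<and> (pclass \<gamma>, 0) \<in> Lab \<and> v \<in> lpts (pclass \<gamma>, 0) \<and> m < length \<gamma> \<and> \<gamma>!m = v \<and> pn \<gamma> m y"
      using lab_path lpts_path by (metis nth_mem)
  qed
  show ?thesis
  proof (cases "v \<in> Vdeg V E 0")
    case True
    then show ?thesis using lab_sgl[of v] lab_sgl1[of v] lpts_sgl by (intro exI[of _ "(pclass [v], 0)"] exI[of _ "(pclass [v], 1)"]) auto
  next
    case n0: False
    show ?thesis
    proof (cases "v \<in> Vdeg V E 1 \<or> v \<in> V2pi \<epsilon> V E")
      case True
      then have "card (nb v) \<noteq> 0" using Vdeg_card V2pi_deg by fastforce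
      then obtain y where "y \<in> nb v" by (metis card.empty ex_in_conv)
      then obtain \<gamma> m where g: "mx \<gamma>" "(pclass \<gamma>, 0) \<in> Lab" "v \<in> lpts (pclass \<gamma>, 0)" using pathlab by blast
      have "(pclass [v], 0) \<in> Lab" using lab_sgl True by blast
      moreover have "(pclass [v], 0) \<noteq> (pclass \<gamma>, 0::nat)" using mx_ne_sgl[OF g(1), of v] by auto
      ultimately show ?thesis using g lpts_sgl by blast
    next
      case False
      have c2: "2 \<le> card (nb v)"
      proof -
        have "card (nb v) \<noteq> 0" "card (nb v) \<noteq> 1" using n0 False assms by (auto simp: Vdeg_def)
        then show ?thesis by simp
      qed
      obtain y1 y2 where y: "y1 \<in> nb v" "y2 \<in> nb v" "y1 \<noteq> y2" "\<not> opp v y1 y2"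
      proof (cases "card (nb v) = 2")
        case True
        then obtain a b where ab: "nb v = {a, b}" "a \<noteq> b" by (meson card_2_iff)
        have "\<not> opp v a b"
        proof
          assume "opp v a b"
          then have "inwin \<epsilon> pi (ang a v b)" using ang_pi_iff[of \<epsilon> a v b] eps_pos by simp
          then have "v \<in> V2pi \<epsilon> V E" using True ab assms by (auto simp: V2pi_def Vdeg_def)
          then show False using False by simp
        qed
        then show ?thesis using that ab by blast
      next
        case c3: False
        obtain y1 where y1: "y1 \<in> nb v" using c2 by (metis card.empty ex_in_conv not_numeral_le_zero)
        have "card (nb v) \<le> 1 + card {z \<in> nb v. opp v y1 z} + card {z \<in> nb v. z \<noteq> y1 \<and> \<not> opp v y1 z}"
          using card_split[OF y1] .
        then have "card {z \<in> nb v. z \<noteq> y1 \<and> \<not> opp v y1 z} \<noteq> 0" using card_O_le1[of v y1] c2 c3 by linarith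
        then obtain y2 where "y2 \<in> {z \<in> nb v. z \<noteq> y1 \<and> \<not> opp v y1 z}" by (metis card.empty ex_in_conv)
        then show ?thesis using that y1 by blast
      qed
      obtain \<gamma>1 m1 where g1: "mx \<gamma>1" "(pclass \<gamma>1, 0) \<in> Lab" "v \<in> lpts (pclass \<gamma>1, 0)" "m1 < length \<gamma>1" "\<gamma>1!m1 = v" "pn \<gamma>1 m1 y1"
        using pathlab[OF y(1)] by blast
      obtain \<gamma>2 m2 where g2: "mx \<gamma>2" "(pclass \<gamma>2, 0) \<in> Lab" "v \<in> lpts (pclass \<gamma>2, 0)" "m2 < length \<gamma>2" "\<gamma>2!m2 = v" "pn \<gamma>2 m2 y2"
        using pathlab[OF y(2)] by blast
      have "pclass \<gamma>1 \<noteq> pclass \<gamma>2"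
      proof
        assume e: "pclass \<gamma>1 = pclass \<gamma>2"
        have "pn \<gamma>1 m1 y2" using pn_of_class[OF g1(1) g2(1) e g1(4) g2(4) g1(5) g2(5) g2(6)] .
        then have "opp (\<gamma>1!m1) y1 y2" using pn_two_opp[OF mx_st[OF g1(1)] g1(6)] y(3) by simp
        then show False using y(4) g1(5) by simp
      qed
      then show ?thesis using g1 g2 by blast
    qed
  qed
qed

lemma cone_pd: assumes "mx \<gamma>" "isdir A v u" "fst A = pclass \<gamma>" "v' \<in> set \<gamma>" "v' \<noteq> v"
  shows "pd (v' - v) u < \<delta>"
proof -
  have s: "st \<gamma>" using mx_st[OF assms(1)] .
  obtain j where j: "Suc j < length \<gamma>" "u = ev \<gamma> j \<or> u = - ev \<gamma> j" using path_dir[OF assms(2,1,3)] by blast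
  have v: "v \<in> set \<gamma>" using isdir_pt[OF assms(2)] assms(3) by (simp add: lpts_def spoints_pclass)
  obtain p where p: "p < length \<gamma>" "v = \<gamma>!p" using set_pos[OF v] by blast
  obtain q where q: "q < length \<gamma>" "v' = \<gamma>!q" using set_pos[OF assms(4)] by blast
  have ne: "ev \<gamma> j \<noteq> 0" using st_ev_nz[OF s j(1)] .
  have "p \<noteq> q" using p q assms(5) by auto
  then consider "p < q" | "q < p" by linarith
  then show ?thesis
  proof cases
    case 1
    have c: "\<gamma>!q - \<gamma>!p \<noteq> 0 \<and> ad (\<gamma>!q - \<gamma>!p) (ev \<gamma> j) \<le> theta_ex \<gamma>" using cone[OF s 1 q(1) j(1)] .
    have "pd (v' - v) u = pd (\<gamma>!q - \<gamma>!p) (ev \<gamma> j)" using pd_signs[of "\<gamma>!q - \<gamma>!p" "ev \<gamma> j" "v' - v" u] c ne j p q by simp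
    also have "\<dots> \<le> theta_ex \<gamma>" using c pd_le_ad order_trans by blast
    finally show ?thesis using theta_lt[OF s] by simp
  next
    case 2
    have c: "\<gamma>!p - \<gamma>!q \<noteq> 0 \<and> ad (\<gamma>!p - \<gamma>!q) (ev \<gamma> j) \<le> theta_ex \<gamma>" using cone[OF s 2 p(1) j(1)] .
    have "v' - v = - (\<gamma>!p - \<gamma>!q)" using p q by simp
    then have "pd (v' - v) u = pd (\<gamma>!p - \<gamma>!q) (ev \<gamma> j)" using pd_signs[of "\<gamma>!p - \<gamma>!q" "ev \<gamma> j" "v' - v" u] c ne j by simp
    also have "\<dots> \<le> theta_ex \<gamma>" using c pd_le_ad order_trans by blast
    finally show ?thesis using theta_lt[OF s] by simp
  qed
qed

lemma two_share: assumes "A \<in> Lab" "B \<in> Lab" "A \<noteq> B" "v \<noteq> v'" "v \<in> lpts A" "v' \<in> lpts A" "v \<in> lpts B" "v' \<in> lpts B"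
  shows False
proof -
  have pathA: "\<exists>\<gamma>. mx \<gamma> \<and> A = (pclass \<gamma>, 0)"
    using assms(1)
  proof (cases rule: Lab_cases)
    case (sgl x) then show ?thesis using assms(4,5,6) lpts_sgl by simp
  next
    case (sgl1 x) then show ?thesis using assms(4,5,6) lpts_sgl by simp
  qed blast
  have pathB: "\<exists>\<gamma>. mx \<gamma> \<and> B = (pclass \<gamma>, 0)"
    using assms(2)
  proof (cases rule: Lab_cases)
    case (sgl x) then show ?thesis using assms(4,7,8) lpts_sgl by simp
  next
    case (sgl1 x) then show ?thesis using assms(4,7,8) lpts_sgl by simp
  qed blast
  obtain \<gamma> where ga: "mx \<gamma>" "A = (pclass \<gamma>, 0)" using pathA by blast
  obtain \<gamma>' where gb: "mx \<gamma>'" "B = (pclass \<gamma>', 0)" using pathB by blast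
  obtain uA where 1: "isdir A v uA" "uA \<noteq> 0" using dir_of assms by blast
  obtain uB where 2: "isdir B v uB" "uB \<noteq> 0" using dir_of assms by blast
  have p: "pi / 2 - \<epsilon> \<le> pd uA uB" using PERP[OF assms(1,2,3) 1(1) 2(1)] .
  have c1: "pd (v' - v) uA < \<delta>" using cone_pd[OF ga(1) 1(1)] ga assms lpts_path by simp
  have c2: "pd (v' - v) uB < \<delta>" using cone_pd[OF gb(1) 2(1)] gb assms lpts_path by simp
  have "pd uA uB \<le> pd uA (v' - v) + pd (v' - v) uB" using pd_tri 1(2) 2(2) assms(4) by simp
  then have "pd uA uB < 2 * \<delta>" using c1 c2 pd_sym[of uA "v' - v"] by simp
  then show False using p eps_small by simp
qed

end


context LS begin

definition zL :: "complex \<Rightarrow> complex" where "zL x = (SOME z. z \<in> nbrL r0 x)"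
definition upE :: "complex \<Rightarrow> complex \<Rightarrow> bool" where "upE x y \<longleftrightarrow> y \<in> nb x \<and> ad (y - x) (x - zL x) \<le> \<epsilon>"
definition Lset :: "complex set" where "Lset = {x \<in> V. nbrL r0 x \<noteq> {}}"
definition Vert :: "complex \<Rightarrow> complex list set \<times> nat" where
  "Vert x = (if \<exists>y. upE x y then (pclass (SOME \<gamma>. mx \<gamma> \<and> \<gamma>!0 = x \<and> upE x (\<gamma>!1)), 0) else (pclass [x], 0))"

lemma zL: assumes "x \<in> Lset" shows "zL x \<in> nbrL r0 x" "x \<in> V" "ad (x - zL x) \<i> \<le> \<epsilon>" "x \<noteq> zL x"
proof -
  show z: "zL x \<in> nbrL r0 x" using assms unfolding Lset_def zL_def by (metis (mono_tags, lifting) ex_in_conv mem_Collect_eq someI)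
  show xV: "x \<in> V" using assms by (simp add: Lset_def)
  show "ad (x - zL x) \<i> \<le> \<epsilon>" using vert_subst[OF xV z] .
  show "x \<noteq> zL x" using V_not_subst[OF xV] nbL_subst[OF z] by auto
qed

lemma up_path: assumes "x \<in> Lset" "upE x y" shows "\<exists>\<gamma>. mx \<gamma> \<and> \<gamma>!0 = x \<and> upE x (\<gamma>!1)"
proof -
  have y: "y \<in> nb x" "ad (y - x) (x - zL x) \<le> \<epsilon>" using assms(2) by (auto simp: upE_def)
  obtain \<gamma> i where g: "mx \<gamma>" "Suc i < length \<gamma>" "\<gamma>!i = x" "\<gamma>!Suc i = y" using exmax nbD(4)[OF y(1)] by blast
  have s: "st \<gamma>" using mx_st[OF g(1)] .
  have "i = 0"
  proof (rule ccontr)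
    assume "i \<noteq> 0"
    then have i0: "0 < i" by simp
    let ?w = "\<gamma>!(i - 1)"
    have o: "opp x y ?w" using st_opp[OF s i0 g(2)] g by simp
    have wn: "?w \<in> nb x" using st_nb'[OF s, of "i - 1"] i0 g by simp
    have z: "zL x \<in> nbrL r0 x" "x \<noteq> zL x" using zL[OF assms(1)] by auto
    have nz: "?w - x \<noteq> 0" "y - x \<noteq> 0" "zL x - x \<noteq> 0" using nbD(3)[OF wn] nbD(3)[OF y(1)] z(2) by auto
    have "ad (?w - x) (zL x - x) \<le> ad (?w - x) (- (y - x)) + ad (- (y - x)) (zL x - x)"
      using ad_tri nz by simp
    also have "ad (?w - x) (- (y - x)) = pi - ad (?w - x) (y - x)" using ad_negr[of "?w - x" "y - x"] nz by simp
    also have "ad (- (y - x)) (zL x - x) = ad (y - x) (x - zL x)"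
      using ad_neg_both[of "y - x" "x - zL x"] nz by simp
    finally have "ad (?w - x) (zL x - x) \<le> 2 * \<epsilon>" using o y(2) ad_sym[of "y - x" "?w - x"] by simp
    then show False using reg_nbL[OF wn z(1)] eps_small by (auto simp: regw_def)
  qed
  then show ?thesis using g assms(2) by (intro exI[of _ \<gamma>]) auto
qed

lemma vert_path: assumes "x \<in> Lset" "\<exists>y. upE x y"
  obtains \<gamma> where "mx \<gamma>" "\<gamma>!0 = x" "upE x (\<gamma>!1)" "Vert x = (pclass \<gamma>, 0)"
proof -
  let ?P = "\<lambda>\<gamma>. mx \<gamma> \<and> \<gamma>!0 = x \<and> upE x (\<gamma>!1)"
  have "\<exists>\<gamma>. ?P \<gamma>" using up_path assms by blast
  then have "?P (SOME \<gamma>. ?P \<gamma>)" by (rule someI_ex)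
  then show ?thesis using that assms(2) unfolding Vert_def by auto
qed

lemma path_edges_up: assumes "x \<in> Lset" "mx \<gamma>" "\<gamma>!0 = x" "upE x (\<gamma>!1)" "Suc j < length \<gamma>"
  shows "ad (ev \<gamma> j) \<i> < \<delta> + 2 * \<epsilon>"
proof -
  have s: "st \<gamma>" using mx_st[OF assms(2)] .
  have n: "Suc 0 < length \<gamma>" using st_len[OF s] by simp
  have e0: "ev \<gamma> 0 = \<gamma>!1 - x" using assms(3) by (simp add: ev_def)
  have nz: "ev \<gamma> j \<noteq> 0" "ev \<gamma> 0 \<noteq> 0" "x - zL x \<noteq> 0" using st_ev_nz[OF s] assms(5) n zL[OF assms(1)] by auto
  have "ad (ev \<gamma> j) \<i> \<le> ad (ev \<gamma> j) (ev \<gamma> 0) + ad (ev \<gamma> 0) \<i>" using ad_tri nz by simp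
  also have "ad (ev \<gamma> 0) \<i> \<le> ad (ev \<gamma> 0) (x - zL x) + ad (x - zL x) \<i>" using ad_tri nz by simp
  finally have "ad (ev \<gamma> j) \<i> \<le> ad (ev \<gamma> j) (ev \<gamma> 0) + (ad (ev \<gamma> 0) (x - zL x) + ad (x - zL x) \<i>)" by simp
  moreover have "ad (ev \<gamma> j) (ev \<gamma> 0) < \<delta>" using drift[OF s assms(5) n] .
  moreover have "ad (ev \<gamma> 0) (x - zL x) \<le> \<epsilon>" using assms(4) e0 by (simp add: upE_def)
  moreover have "ad (x - zL x) \<i> \<le> \<epsilon>" using zL[OF assms(1)] by simp
  ultimately show ?thesis by simp
qed

lemma nonup_perp: assumes "x \<in> Lset" "y \<in> nb x" "\<not> upE x y" shows "pd (y - x) (\<i> * (zL x - x)) \<le> \<epsilon>"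
proof -
  have z: "zL x \<in> nbrL r0 x" "x \<noteq> zL x" using zL[OF assms(1)] by auto
  have nz: "y - x \<noteq> 0" "zL x - x \<noteq> 0" using nbD(3)[OF assms(2)] z by auto
  have a: "ad (y - x) (x - zL x) > \<epsilon>" using assms by (auto simp: upE_def)
  have "ad (y - x) (zL x - x) = pi - ad (y - x) (x - zL x)" using ad_negr[of "y - x" "x - zL x"] nz by simp
  then have "\<not> (pi - \<epsilon> \<le> ad (y - x) (zL x - x))" using a by simp
  then have "\<bar>ad (y - x) (zL x - x) - pi / 2\<bar> \<le> \<epsilon>" using reg_nbL[OF assms(2) z(1)] by (simp add: regw_def)
  then have "pi / 2 - \<epsilon> \<le> pd (y - x) (zL x - x)" by (rule pd_of_perp)
  then show ?thesis using pd_ii[OF nz] by simp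
qed

lemma vert_sgl_Sg: assumes "x \<in> Lset" "\<not> (\<exists>y. upE x y)" shows "x \<in> Sg"
proof -
  have xV: "x \<in> V" using zL[OF assms(1)] by simp
  have w0: "\<i> * (zL x - x) \<noteq> 0" using zL[OF assms(1)] by auto
  have pp: "\<And>a b. a \<in> nb x \<Longrightarrow> b \<in> nb x \<Longrightarrow> a \<noteq> b \<Longrightarrow> opp x a b"
    using perp_pair_opp nonup_perp assms w0 by blast
  have c3: "card (nb x) \<le> 2"
  proof (rule ccontr)
    assume "\<not> card (nb x) \<le> 2"
    then have "2 < card (nb x)" by simp
    then obtain T where T: "T \<subseteq> nb x" "card T = 3" using obtain_subset_with_card_n[of 3 "nb x"] by auto
    then obtain a b c where abc0: "T = {a, b, c}" "a \<noteq> b" "b \<noteq> c" "a \<noteq> c" using card_3_iff by metis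
    then have abc: "a \<in> nb x" "b \<in> nb x" "c \<in> nb x" "a \<noteq> b" "a \<noteq> c" "b \<noteq> c" using T by auto
    show False using opp_unique[OF abc(1,2,3,6)] pp abc by blast
  qed
  consider "card (nb x) = 0" | "card (nb x) = 1" | "card (nb x) = 2" using c3 by linarith
  then show ?thesis
  proof cases
    case 1 then show ?thesis using xV by (simp add: Vdeg_def)
  next
    case 2 then show ?thesis using xV by (simp add: Vdeg_def)
  next
    case 3
    then obtain a b where ab: "nb x = {a, b}" "a \<noteq> b" by (meson card_2_iff)
    have "opp x a b" using pp ab by auto
    then have "inwin \<epsilon> pi (ang a x b)" using ang_pi_iff[of \<epsilon> a x b] eps_pos by simp
    then have "x \<in> V2pi \<epsilon> V E" using 3 ab xV by (auto simp: V2pi_def Vdeg_def)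
    then show ?thesis by simp
  qed
qed

lemma Vert_Lab: assumes "x \<in> Lset" shows "Vert x \<in> Lab" "x \<in> lpts (Vert x)"
proof -
  have "Vert x \<in> Lab \<and> x \<in> lpts (Vert x)"
  proof (cases "\<exists>y. upE x y")
    case True
    then obtain \<gamma> where g: "mx \<gamma>" "\<gamma>!0 = x" "Vert x = (pclass \<gamma>, 0)" using vert_path[OF assms] by blast
    have "x \<in> set \<gamma>" using g st_len[OF mx_st[OF g(1)]] by (metis length_greater_0_conv list.size(3) not_numeral_le_zero nth_mem)
    then show ?thesis using g lab_path lpts_path by simp
  next
    case False
    then have "Vert x = (pclass [x], 0)" by (simp add: Vert_def)
    then show ?thesis using lab_sgl[OF vert_sgl_Sg[OF assms False]] lpts_sgl by simp
  qed
  then show "Vert x \<in> Lab" "x \<in> lpts (Vert x)" by auto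
qed

lemma Vert_vert: assumes "x \<in> Lset" shows "isvert (Vert x)"
  unfolding isvert_def
proof (intro allI impI)
  fix v u assume d: "isdir (Vert x) v u"
  show "pd u \<i> < \<delta> + 2 * \<epsilon>"
  proof (cases "\<exists>y. upE x y")
    case True
    then obtain \<gamma> where g: "mx \<gamma>" "\<gamma>!0 = x" "upE x (\<gamma>!1)" "Vert x = (pclass \<gamma>, 0)" using vert_path[OF assms] by blast
    obtain j where j: "Suc j < length \<gamma>" "u = ev \<gamma> j \<or> u = - ev \<gamma> j" using path_dir[OF d g(1)] g(4) by auto
    have nz: "ev \<gamma> j \<noteq> 0" using st_ev_nz[OF mx_st[OF g(1)] j(1)] .
    have "pd u \<i> = pd (ev \<gamma> j) \<i>" using pd_signs[of "ev \<gamma> j" "\<i>" u "\<i>"] nz j(2) by simp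
    also have "\<dots> \<le> ad (ev \<gamma> j) \<i>" by (rule pd_le_ad)
    also have "\<dots> < \<delta> + 2 * \<epsilon>" using path_edges_up[OF assms g(1,2,3) j(1)] .
    finally show ?thesis .
  next
    case False
    then have vx: "Vert x = (pclass [x], 0)" by (simp add: Vert_def)
    have s: "v = x \<and> ((x \<in> Vdeg V E 1 \<union> V2pi \<epsilon> V E \<and> (\<exists>y\<in>nb x. u = \<i> * (y - x))) \<or> (x \<in> Vdeg V E 0 \<and> u = \<i>))"
      using isdir_sgl[OF d] vx by auto
    show ?thesis
    proof (cases "u = \<i>")
      case True then show ?thesis using pd_self eps_small eps_pos by simp
    next
      case False
      then obtain y where y: "y \<in> nb x" "u = \<i> * (y - x)" using s by blast
      have z: "x - zL x \<noteq> 0" "ad (x - zL x) \<i> \<le> \<epsilon>" using zL[OF assms] by auto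
      have nz: "y - x \<noteq> 0" "zL x - x \<noteq> 0" using nbD(3)[OF y(1)] z by auto
      have p1: "pd (y - x) (\<i> * (zL x - x)) \<le> \<epsilon>" using nonup_perp[OF assms y(1)] \<open>\<not> (\<exists>y. upE x y)\<close> by blast
      have "pd (zL x - x) \<i> = pd (x - zL x) \<i>" using pd_negl[of "x - zL x" "\<i>"] z by simp
      also have "\<dots> \<le> \<epsilon>" using pd_le_ad[of "x - zL x" "\<i>"] z by simp
      finally have p2: "pd (zL x - x) \<i> \<le> \<epsilon>" .
      have "pd u \<i> = pd (y - x) 1" using pd_rot_i[of "y - x" 1] y by simp
      also have "\<dots> \<le> pd (y - x) (\<i> * (zL x - x)) + pd (\<i> * (zL x - x)) 1" using pd_tri nz by simp
      also have "pd (\<i> * (zL x - x)) 1 = pd (zL x - x) (- \<i>)"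
        using pd_rot_i[of "zL x - x" "- \<i>"] by simp
      also have "\<dots> = pd (zL x - x) \<i>" using pd_negr nz by simp
      finally show ?thesis using p1 p2 eps_small by simp
    qed
  qed
qed

lemma Vert_inj: assumes "x \<in> Lset" "x' \<in> Lset" "Vert x = Vert x'" shows "x = x'"
proof (cases "\<exists>y. upE x y")
  case True
  obtain \<gamma> where g: "mx \<gamma>" "\<gamma>!0 = x" "upE x (\<gamma>!1)" "Vert x = (pclass \<gamma>, 0)" using vert_path[OF assms(1) True] by blast
  show ?thesis
  proof (cases "\<exists>y. upE x' y")
    case True
    obtain \<gamma>' where g': "mx \<gamma>'" "\<gamma>'!0 = x'" "upE x' (\<gamma>'!1)" "Vert x' = (pclass \<gamma>', 0)" using vert_path[OF assms(2) True] by blast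
    have "pclass \<gamma> = pclass \<gamma>'" using g(4) g'(4) assms(3) by simp
    then have "\<gamma>' = \<gamma> \<or> \<gamma>' = rev \<gamma>" using pclass_eq[of \<gamma> \<gamma>'] by simp
    then show ?thesis
    proof
      assume "\<gamma>' = \<gamma>" then show ?thesis using g g' by simp
    next
      assume r: "\<gamma>' = rev \<gamma>"
      have s: "st \<gamma>" using mx_st[OF g(1)] .
      let ?n = "length \<gamma>"
      have n: "2 \<le> ?n" using st_len[OF s] .
      let ?j = "?n - 2"
      have jl: "Suc ?j < ?n" using n by simp
      have rr: "rev \<gamma>!0 = \<gamma>!Suc ?j" "rev \<gamma>!1 = \<gamma>!?j" using ev_rev[of 0 \<gamma>] n by auto
      have a1: "ad (ev \<gamma> ?j) \<i> < \<delta> + 2 * \<epsilon>" using path_edges_up[OF assms(1) g(1,2,3) jl] .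
      have x'e: "x' = \<gamma>!Suc ?j" "\<gamma>'!1 = \<gamma>!?j" using g'(2) r rr by auto
      have up: "ad (\<gamma>!?j - x') (x' - zL x') \<le> \<epsilon>" using g'(3) x'e by (simp add: upE_def)
      have z: "x' - zL x' \<noteq> 0" "ad (x' - zL x') \<i> \<le> \<epsilon>" using zL[OF assms(2)] by auto
      have evj: "\<gamma>!?j - x' = - ev \<gamma> ?j" using x'e by (simp add: ev_def)
      have nz: "ev \<gamma> ?j \<noteq> 0" using st_ev_nz[OF s jl] .
      have "ad (- ev \<gamma> ?j) \<i> \<le> ad (- ev \<gamma> ?j) (x' - zL x') + ad (x' - zL x') \<i>" using ad_tri nz z by simp
      then have "ad (- ev \<gamma> ?j) \<i> \<le> 2 * \<epsilon>" using up evj z by simp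
      moreover have "ad (- ev \<gamma> ?j) \<i> = pi - ad (ev \<gamma> ?j) \<i>" using ad_negl nz by simp
      ultimately show ?thesis using a1 eps_small by simp
    qed
  next
    case False
    then have "Vert x' = (pclass [x'], 0)" by (simp add: Vert_def)
    then show ?thesis using g(4) assms(3) mx_ne_sgl[OF g(1), of x'] by simp
  qed
next
  case False
  then have vx: "Vert x = (pclass [x], 0)" by (simp add: Vert_def)
  show ?thesis
  proof (cases "\<exists>y. upE x' y")
    case True
    obtain \<gamma>' where g': "mx \<gamma>'" "\<gamma>'!0 = x'" "upE x' (\<gamma>'!1)" "Vert x' = (pclass \<gamma>', 0)" using vert_path[OF assms(2) True] by blast
    then show ?thesis using vx assms(3) mx_ne_sgl[OF g'(1), of x] by simp
  next
    case False
    then have "Vert x' = (pclass [x'], 0)" by (simp add: Vert_def)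
    then show ?thesis using vx assms(3) sgl_inj by simp
  qed
qed

end


context LS begin

abbreviation "Mx \<equiv> {\<gamma>. mx \<gamma>}"

lemma finite_Mx: "finite Mx"
proof -
  have "Mx \<subseteq> {xs. set xs \<subseteq> V \<and> length xs \<le> card E + 1}"
  proof
    fix \<gamma> assume "\<gamma> \<in> Mx"
    then have s: "st \<gamma>" using mx_st by simp
    show "\<gamma> \<in> {xs. set xs \<subseteq> V \<and> length xs \<le> card E + 1}" using st_set[OF s] st_len_bound[OF s] by simp
  qed
  then show ?thesis using finite_lists_length_le[OF finV] finite_subset by blast
qed

lemma finite_SG: "finite SG" unfolding S_Gamma_def using finite_Mx by simp

lemma finite_Lab: "finite Lab"
proof -
  have "finite Sg" "finite (Vdeg V E 0)" using finV by (auto simp: Vdeg_def V2pi_def)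
  then show ?thesis unfolding Lab_def using finite_SG by simp
qed

lemma card_Lab_le: "card Lab \<le> card SG + card Sg + card (Vdeg V E 0)"
proof -
  let ?A = "(\<lambda>c. (c, 0::nat)) ` SG" and ?B = "(\<lambda>x. (pclass [x], 0::nat)) ` Sg" and ?C = "(\<lambda>x. (pclass [x], 1::nat)) ` Vdeg V E 0"
  have "card Lab \<le> card (?A \<union> ?B) + card ?C" unfolding Lab_def by (rule card_Un_le)
  moreover have "card (?A \<union> ?B) \<le> card ?A + card ?B" by (rule card_Un_le)
  ultimately have "card Lab \<le> card ?A + card ?B + card ?C" by linarith
  moreover have fs: "finite Sg" "finite (Vdeg V E 0)" using finV by (auto simp: Vdeg_def V2pi_def)
  moreover have "card ?A \<le> card SG" using card_image_le[OF finite_SG] by blast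
  moreover have "card ?B \<le> card Sg" using card_image_le[OF fs(1)] by blast
  moreover have "card ?C \<le> card (Vdeg V E 0)" using card_image_le[OF fs(2)] by blast
  ultimately show ?thesis by linarith
qed

lemma mx_rev_ne: assumes "mx \<gamma>" shows "\<gamma> \<noteq> rev \<gamma>"
proof
  assume e: "\<gamma> = rev \<gamma>"
  have s: "st \<gamma>" using mx_st[OF assms] .
  have n: "2 \<le> length \<gamma>" using st_len[OF s] .
  have "rev \<gamma>!0 = \<gamma>!(length \<gamma> - 1)" using n by (subst rev_nth) auto
  then have "\<gamma>!0 = \<gamma>!(length \<gamma> - 1)" using e by simp
  moreover have "0 \<noteq> length \<gamma> - 1" using n by simp
  moreover have "\<gamma> \<noteq> []" using n by (cases \<gamma>) auto
  ultimately show False using nth_eq_iff_index_eq[OF st_distinct[OF s], of 0 "length \<gamma> - 1"] n by simp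
qed

lemma card_Mx: "card Mx = 2 * card SG"
proof -
  have U: "\<Union> SG = Mx"
  proof
    show "\<Union> SG \<subseteq> Mx" using mx_rev by (auto simp: S_Gamma_def pclass_def)
    show "Mx \<subseteq> \<Union> SG" by (auto simp: S_Gamma_def pclass_def)
  qed
  have pw: "pairwise disjnt SG"
    unfolding pairwise_def disjnt_def
  proof (intro ballI impI)
    fix c1 c2 assume h: "c1 \<in> SG" "c2 \<in> SG" "c1 \<noteq> c2"
    show "c1 \<inter> c2 = {}"
    proof (rule ccontr)
      assume "c1 \<inter> c2 \<noteq> {}"
      then obtain \<gamma> where g: "\<gamma> \<in> c1" "\<gamma> \<in> c2" by blast
      obtain \<gamma>1 where g1: "c1 = pclass \<gamma>1" using h SG_iff by blast
      obtain \<gamma>2 where g2: "c2 = pclass \<gamma>2" using h SG_iff by blast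
      have "pclass \<gamma> = c1" using g(1) g1 by (auto simp: pclass_def)
      moreover have "pclass \<gamma> = c2" using g(2) g2 by (auto simp: pclass_def)
      ultimately show False using h(3) by simp
    qed
  qed
  have c2: "\<And>c. c \<in> SG \<Longrightarrow> card c = 2"
  proof -
    fix c assume "c \<in> SG"
    then obtain \<gamma> where "mx \<gamma>" "c = pclass \<gamma>" using SG_iff by blast
    then show "card c = 2" using mx_rev_ne by (simp add: pclass_def)
  qed
  have "card (\<Union> SG) = sum card SG" by (rule card_Union_disjoint[OF pw]) (auto simp: S_Gamma_def pclass_def)
  also have "\<dots> = 2 * card SG" using c2 by simp
  finally show ?thesis using U by simp
qed

lemma card_Mx_le: "card Mx \<le> (\<Sum>x\<in>V. card (lonely x))"
proof -
  let ?f = "\<lambda>\<gamma>. (\<gamma>!0, \<gamma>!1)"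
  have inj: "inj_on ?f Mx"
  proof (rule inj_onI)
    fix \<gamma> \<gamma>' assume h: "\<gamma> \<in> Mx" "\<gamma>' \<in> Mx" "?f \<gamma> = ?f \<gamma>'"
    have "Suc 0 < length \<gamma>" "Suc 0 < length \<gamma>'" using h st_len mx_st by force+
    then show "\<gamma> = \<gamma>'" using U2[of \<gamma> \<gamma>' 0 0] h by simp
  qed
  have sub: "?f ` Mx \<subseteq> Sigma V lonely"
  proof
    fix p assume "p \<in> ?f ` Mx"
    then obtain \<gamma> where g: "mx \<gamma>" "p = ?f \<gamma>" by blast
    have s: "st \<gamma>" using mx_st[OF g(1)] .
    have n: "Suc 0 < length \<gamma>" using st_len[OF s] by simp
    have "\<gamma>!0 \<in> V" using st_set[OF s] n by (meson nth_mem order_less_trans subsetD zero_less_Suc)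
    moreover have "\<gamma>!1 \<in> nb (\<gamma>!0)" using st_nb[OF s n] by simp
    moreover have "\<not> (\<exists>z \<in> nb (\<gamma>!0). opp (\<gamma>!0) (\<gamma>!1) z)" using mx_no_pre[OF g(1)] by blast
    ultimately show "p \<in> Sigma V lonely" using g by (simp add: lonely_def)
  qed
  have fin: "finite (Sigma V lonely)" using finV fin_nb by (auto simp: lonely_def)
  have "card Mx = card (?f ` Mx)" using card_image[OF inj] by simp
  also have "\<dots> \<le> card (Sigma V lonely)" using card_mono[OF fin sub] .
  also have "\<dots> = (\<Sum>x\<in>V. card (lonely x))" using finV fin_nb by (auto simp: lonely_def)
  finally show ?thesis .
qed

lemma card_ind: assumes "finite W" "A \<subseteq> W" shows "(\<Sum>x\<in>W. (if x \<in> A then 1 else 0::nat)) = card A"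
proof -
  have e: "{x \<in> W. x \<in> A} = A" using assms(2) by blast
  have "(\<Sum>x\<in>{x \<in> W. x \<in> A}. (1::nat)) = (\<Sum>x\<in>W. (if x \<in> A then 1 else 0::nat))"
    by (rule sum.inter_filter[OF assms(1)])
  then show ?thesis using e by simp
qed

lemma sum_sing: "(\<Sum>x\<in>V. sing x) = card Sg + card (Vdeg V E 0)"
proof -
  have sg: "Sg \<subseteq> V" "Vdeg V E 0 \<subseteq> V" by (auto simp: Vdeg_def V2pi_def)
  have e: "\<And>x. sing x = (if x \<in> Sg then 1 else 0) + (if x \<in> Vdeg V E 0 then 1 else 0)"
    by (auto simp: sing_def)
  have "(\<Sum>x\<in>V. sing x) = (\<Sum>x\<in>V. (if x \<in> Sg then 1 else 0::nat)) + (\<Sum>x\<in>V. (if x \<in> Vdeg V E 0 then 1 else 0::nat))"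
    unfolding e by (simp add: sum.distrib)
  also have "(\<Sum>x\<in>V. (if x \<in> Sg then 1 else 0::nat)) = card Sg" by (rule card_ind[OF finV sg(1)])
  also have "(\<Sum>x\<in>V. (if x \<in> Vdeg V E 0 then 1 else 0::nat)) = card (Vdeg V E 0)" by (rule card_ind[OF finV sg(2)])
  finally show ?thesis .
qed

lemma sum_deg: "2 * real (card Lab) \<le> (\<Sum>x\<in>V. 4 - real (card (nb x)))"
proof -
  have pv: "\<And>x. x \<in> V \<Longrightarrow> real (card (lonely x)) + 2 * real (sing x) \<le> 4 - real (card (nb x))"
    using PV by (metis (no_types, lifting) add.commute add_le_imp_le_diff of_nat_add of_nat_le_iff of_nat_mult of_nat_numeral)
  have "2 * real (card Lab) \<le> 2 * (real (card SG) + real (card Sg) + real (card (Vdeg V E 0)))"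
    using card_Lab_le by (simp add: of_nat_add[symmetric] del: of_nat_add)
  also have "\<dots> = real (card Mx) + 2 * real (\<Sum>x\<in>V. sing x)"
    using card_Mx sum_sing by simp
  also have "\<dots> \<le> real (\<Sum>x\<in>V. card (lonely x)) + 2 * real (\<Sum>x\<in>V. sing x)"
    using card_Mx_le by (metis add_le_cancel_right of_nat_le_iff)
  also have "\<dots> = (\<Sum>x\<in>V. real (card (lonely x)) + 2 * real (sing x))"
    by (simp add: sum.distrib sum_distrib_left)
  also have "\<dots> \<le> (\<Sum>x\<in>V. 4 - real (card (nb x)))"
    using pv by (intro sum_mono) auto
  finally show ?thesis .
qed

lemma sum_nbL: "(\<Sum>x\<in>V. real (card (nbrL r0 x))) \<le> real (card Lset)"
proof -
  have "(\<Sum>x\<in>V. real (card (nbrL r0 x))) \<le> (\<Sum>x\<in>V. (if x \<in> Lset then 1 else 0::real))"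
  proof (intro sum_mono)
    fix x assume x: "x \<in> V"
    show "real (card (nbrL r0 x)) \<le> (if x \<in> Lset then 1 else 0)"
      using nbL_le1[OF x] x by (auto simp: Lset_def)
  qed
  also have "\<dots> = real (card Lset)"
  proof -
    have "Lset \<subseteq> V" by (auto simp: Lset_def)
    then have "Lset = V \<inter> Lset" by blast
    then show ?thesis using sum.inter_restrict[OF finV, of "\<lambda>_. 1::real" Lset] by simp
  qed
  finally show ?thesis .
qed

lemma F_ge: assumes "0 \<le> \<beta>" shows "2 * real (card Lab) - 2 * \<beta> * real (card Lset) \<le> F_bond r0 \<beta> V E"
proof -
  have "F_bond r0 \<beta> V E = (\<Sum>x\<in>V. 4 - real (card (nb x))) - 2 * \<beta> * (\<Sum>x\<in>V. real (card (nbrL r0 x)))"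
    unfolding F_bond_def by (simp add: sum_subtractf sum_distrib_left)
  moreover have "2 * \<beta> * (\<Sum>x\<in>V. real (card (nbrL r0 x))) \<le> 2 * \<beta> * real (card Lset)"
    using sum_nbL assms by (intro mult_left_mono) auto
  ultimately show ?thesis using sum_deg by simp
qed

lemma F_T: assumes "T \<subseteq> Lab" "0 \<le> \<beta>" "\<beta> \<le> 1"
  shows "2 * real (card T) - 2 * \<beta> * real (card (T \<inter> Vert ` Lset)) \<le> F_bond r0 \<beta> V E"
proof -
  let ?VL = "Vert ` Lset"
  have finL: "finite Lset" using finV by (auto simp: Lset_def)
  have VLsub: "?VL \<subseteq> Lab" using Vert_Lab by auto
  have fT: "finite T" using finite_subset[OF assms(1) finite_Lab] .
  have fVL: "finite ?VL" using finL by simp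
  have inj: "inj_on Vert Lset" using Vert_inj by (auto intro: inj_onI)
  have cL: "card Lset = card ?VL" using card_image[OF inj] by simp
  have cVL: "card ?VL = card (T \<inter> ?VL) + card (?VL - T)"
    using card_Int_Diff[OF fVL, of T] by (simp add: Int_commute)
  have cU: "card (T \<union> ?VL) = card T + card (?VL - T)"
    using card_Un_disjoint[OF fT, of "?VL - T"] fVL by (simp add: Un_Diff_cancel)
  have "card (T \<union> ?VL) \<le> card Lab" using card_mono[OF finite_Lab] assms(1) VLsub by simp
  then have "2 * real (card T) + 2 * real (card (?VL - T)) \<le> 2 * real (card Lab)" using cU by linarith
  moreover have "2 * \<beta> * real (card Lset) = 2 * \<beta> * real (card (T \<inter> ?VL)) + 2 * \<beta> * real (card (?VL - T))"
    using cL cVL by (simp add: algebra_simps)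
  moreover have "2 * \<beta> * real (card (?VL - T)) \<le> 2 * real (card (?VL - T))"
    using mult_left_le_one_le[of "real (card (?VL - T))" \<beta>] assms by simp
  ultimately show ?thesis using F_ge[OF assms(2)] by linarith
qed

end


context LS begin

abbreviation "S \<equiv> strata \<epsilon> V E"
abbreviation "V0 \<equiv> Vdeg V E 0"
abbreviation "V12 \<equiv> Vdeg V E 1 \<union> V2pi \<epsilon> V E"

lemma inj_sgl: "inj_on (\<lambda>x. pclass [x]) A" by (auto intro: inj_onI simp: sgl_inj)

lemma strata_eq: "S = mset_set SG + mset_set ((\<lambda>x. pclass [x]) ` V0) + mset_set ((\<lambda>x. pclass [x]) ` V0)
   + mset_set ((\<lambda>x. pclass [x]) ` V12)"
  unfolding strata_def image_mset_union image_mset_mset_set[OF inj_sgl] by (simp add: add.assoc)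

lemma finV0: "finite V0" "finite V12"
proof -
  have "V0 \<subseteq> V" "V12 \<subseteq> V" by (auto simp: Vdeg_def V2pi_def)
  then show "finite V0" "finite V12" using finite_subset finV by auto
qed

lemma SG_not_sgl: assumes "c \<in> SG" shows "c \<noteq> pclass [x]"
proof -
  obtain \<gamma> where "mx \<gamma>" "c = pclass \<gamma>" using assms SG_iff by blast
  then show ?thesis using mx_ne_sgl by simp
qed

lemma count_S: "count S c = (if c \<in> SG then 1 else 0) + 2 * (if c \<in> (\<lambda>x. pclass [x]) ` V0 then 1 else 0)
   + (if c \<in> (\<lambda>x. pclass [x]) ` V12 then 1 else 0)"
  unfolding strata_eq using finite_SG finV0 by (simp add: count_mset_set')

lemma inS: "c \<in># S \<longleftrightarrow> c \<in> SG \<or> c \<in> (\<lambda>x. pclass [x]) ` Sg"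
proof -
  have "c \<in># S \<longleftrightarrow> 0 < count S c" by simp
  also have "\<dots> \<longleftrightarrow> c \<in> SG \<or> c \<in> (\<lambda>x. pclass [x]) ` V0 \<or> c \<in> (\<lambda>x. pclass [x]) ` V12"
    unfolding count_S by auto
  also have "\<dots> \<longleftrightarrow> c \<in> SG \<or> c \<in> (\<lambda>x. pclass [x]) ` Sg" by blast
  finally show ?thesis .
qed

lemma V0_V12_disj: "x \<in> V0 \<Longrightarrow> x \<notin> V12" using V0_not_V12 by blast

lemma count_ge2: assumes "2 \<le> count S c" shows "\<exists>x \<in> V0. c = pclass [x]"
proof (rule ccontr)
  assume h: "\<not> (\<exists>x \<in> V0. c = pclass [x])"
  then have "c \<notin> (\<lambda>x. pclass [x]) ` V0" by blast
  moreover have "\<not> (c \<in> SG \<and> c \<in> (\<lambda>x. pclass [x]) ` V12)" using SG_not_sgl by blast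
  ultimately have "count S c \<le> 1" unfolding count_S by auto
  then show False using assms by simp
qed

lemma count_V0: assumes "x \<in> V0" shows "count S (pclass [x]) = 2"
proof -
  have "pclass [x] \<notin> SG" using SG_not_sgl by blast
  moreover have "pclass [x] \<notin> (\<lambda>x. pclass [x]) ` V12" using V0_V12_disj[OF assms] sgl_inj by auto
  ultimately show ?thesis unfolding count_S using assms by auto
qed

lemma Lab_fst_S: assumes "A \<in> Lab" shows "fst A \<in># S"
  using assms
proof (cases rule: Lab_cases)
  case (path \<gamma>) then show ?thesis using inS SG_iff by auto
next
  case (sgl x) then show ?thesis using inS by auto
next
  case (sgl1 x) then show ?thesis using inS by auto
qed

lemma S_Lab: assumes "c \<in># S" shows "(c, 0) \<in> Lab"
proof -
  have "c \<in> SG \<or> c \<in> (\<lambda>x. pclass [x]) ` Sg" using inS assms by blast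
  then show ?thesis unfolding Lab_def by blast
qed

lemma V0_lab1: assumes "x \<in> V0" shows "(pclass [x], 1) \<in> Lab" using lab_sgl1[OF assms] .

lemma Lab_snd: assumes "A \<in> Lab" shows "snd A = 0 \<or> (snd A = 1 \<and> (\<exists>x \<in> V0. fst A = pclass [x]))"
  using assms by (cases rule: Lab_cases) auto

lemma lpts_V: assumes "A \<in> Lab" shows "lpts A \<subseteq> V"
  using assms
proof (cases rule: Lab_cases)
  case (path \<gamma>) then show ?thesis using st_set[OF mx_st] lpts_path by simp
next
  case (sgl x) then show ?thesis using lpts_sgl by (auto simp: Vdeg_def V2pi_def)
next
  case (sgl1 x) then show ?thesis using lpts_sgl by (auto simp: Vdeg_def)
qed

lemma slen_card: assumes "A \<in> Lab" shows "slen (fst A) = card (lpts A)" "1 \<le> card (lpts A)" "finite (lpts A)"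
proof -
  have "slen (fst A) = card (lpts A) \<and> 1 \<le> card (lpts A) \<and> finite (lpts A)"
    using assms
  proof (cases rule: Lab_cases)
    case (path \<gamma>)
    have s: "st \<gamma>" using mx_st[OF path(1)] .
    have "card (set \<gamma>) = length \<gamma>" using distinct_card[OF st_distinct[OF s]] .
    moreover have "2 \<le> length \<gamma>" using st_len[OF s] .
    ultimately show ?thesis using path slen_pclass lpts_path by simp
  next
    case (sgl x) then show ?thesis using slen_pclass[of "[x]"] lpts_sgl by simp
  next
    case (sgl1 x) then show ?thesis using slen_pclass[of "[x]"] lpts_sgl by simp
  qed
  then show "slen (fst A) = card (lpts A)" "1 \<le> card (lpts A)" "finite (lpts A)" by auto
qed

lemma same_class_V0: assumes "A \<in> Lab" "B \<in> Lab" "A \<noteq> B" "fst A = fst B" shows "\<exists>x \<in> V0. fst A = pclass [x]"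
proof -
  have "snd A \<noteq> snd B" using assms(3,4) by (metis prod.expand)
  then show ?thesis using Lab_snd[OF assms(1)] Lab_snd[OF assms(2)] assms(4) by auto
qed

lemma sperp_iff: "c \<in># sperp S s \<longleftrightarrow> c \<in># S - {#s#} \<and> spoints c \<inter> spoints s \<noteq> {}"
  by (simp only: sperp_def set_mset_filter mem_Collect_eq)

lemma to_span: assumes "A \<in> Lab" "B \<in> Lab" "B \<noteq> A" "lpts B \<inter> lpts A \<noteq> {}"
  shows "lpts B \<subseteq> sspan S (fst A)"
proof -
  have c: "fst B \<in># S - {#fst A#}"
  proof (cases "fst B = fst A")
    case True
    then obtain x where x: "x \<in> V0" "fst A = pclass [x]" using same_class_V0[OF assms(2,1,3)] by auto
    then show ?thesis using count_V0[OF x(1)] True by (simp add: in_diff_count)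
  next
    case False
    then show ?thesis using Lab_fst_S[OF assms(2)] by (simp add: in_diff_count)
  qed
  then have "fst B \<in># sperp S (fst A)" using assms(4) sperp_iff by (simp add: lpts_def)
  then show ?thesis unfolding sspan_def lpts_def by blast
qed

lemma from_span: assumes "A \<in> Lab" "w \<in> sspan S (fst A)"
  shows "\<exists>B \<in> Lab. B \<noteq> A \<and> w \<in> lpts B \<and> lpts B \<inter> lpts A \<noteq> {}"
proof -
  obtain c where c: "c \<in># sperp S (fst A)" "w \<in> spoints c" using assms(2) unfolding sspan_def by blast
  have c1: "c \<in># S - {#fst A#}" "spoints c \<inter> spoints (fst A) \<noteq> {}" using c(1) sperp_iff by auto
  have cS: "c \<in># S" using c1(1) by (meson in_diffD)
  show ?thesis
  proof (cases "c = fst A")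
    case False
    then have "(c, 0) \<noteq> A" by auto
    moreover have "w \<in> lpts (c, 0)" "lpts (c, 0) \<inter> lpts A \<noteq> {}" using c(2) c1(2) by (auto simp: lpts_def)
    ultimately show ?thesis using S_Lab[OF cS] by blast
  next
    case True
    then have "2 \<le> count S (fst A)" using c1(1) by (simp add: in_diff_count)
    then obtain x where x: "x \<in> V0" "fst A = pclass [x]" using count_ge2 by blast
    let ?B = "(fst A, if snd A = 0 then 1 else 0::nat)"
    have "?B \<in> Lab" using x lab_sgl1 lab_sgl by (auto simp: Vdeg_def)
    moreover have "?B \<noteq> A" by (cases A) auto
    moreover have "w \<in> lpts ?B" using c(2) True by (simp add: lpts_def)
    moreover have "lpts ?B \<inter> lpts A \<noteq> {}" using c1(2) True by (simp add: lpts_def)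
    ultimately show ?thesis by blast
  qed
qed

end


context LS begin

definition other :: "complex list set \<times> nat \<Rightarrow> complex \<Rightarrow> complex list set \<times> nat" where
  "other A v = (SOME B. B \<in> Lab \<and> B \<noteq> A \<and> v \<in> lpts B)"

lemma other: assumes "v \<in> V" shows "other A v \<in> Lab" "other A v \<noteq> A" "v \<in> lpts (other A v)"
proof -
  obtain B1 B2 where b: "B1 \<in> Lab" "B2 \<in> Lab" "B1 \<noteq> B2" "v \<in> lpts B1" "v \<in> lpts B2" using exist2[OF assms] by blast
  have "\<exists>B. B \<in> Lab \<and> B \<noteq> A \<and> v \<in> lpts B"
  proof (cases "B1 = A")
    case True then show ?thesis using b by blast
  next
    case False then show ?thesis using b by blast
  qed
  then have "other A v \<in> Lab \<and> other A v \<noteq> A \<and> v \<in> lpts (other A v)" unfolding other_def by (rule someI_ex)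
  then show "other A v \<in> Lab" "other A v \<noteq> A" "v \<in> lpts (other A v)" by auto
qed

definition Fam :: "complex list set \<times> nat \<Rightarrow> (complex list set \<times> nat) set" where
  "Fam A = other A ` lpts A"

lemma Fam: assumes "A \<in> Lab"
  shows "Fam A \<subseteq> Lab" "A \<notin> Fam A" "\<And>B. B \<in> Fam A \<Longrightarrow> lpts B \<inter> lpts A \<noteq> {}"
    "card (Fam A) = card (lpts A)" "finite (Fam A)"
proof -
  have V: "lpts A \<subseteq> V" using lpts_V[OF assms] .
  show "Fam A \<subseteq> Lab" using other V unfolding Fam_def by blast
  show "A \<notin> Fam A" using other V unfolding Fam_def by (metis (no_types, lifting) imageE subsetD)
  show "\<And>B. B \<in> Fam A \<Longrightarrow> lpts B \<inter> lpts A \<noteq> {}"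
  proof -
    fix B assume "B \<in> Fam A"
    then obtain v where "v \<in> lpts A" "B = other A v" unfolding Fam_def by blast
    then show "lpts B \<inter> lpts A \<noteq> {}" using other(3) V by blast
  qed
  have inj: "inj_on (other A) (lpts A)"
  proof (rule inj_onI)
    fix v v' assume h: "v \<in> lpts A" "v' \<in> lpts A" "other A v = other A v'"
    show "v = v'"
    proof (rule ccontr)
      assume ne: "v \<noteq> v'"
      have "v \<in> V" "v' \<in> V" using h V by auto
      then show False using two_share[OF assms other(1) _ ne h(1,2), of v] other(2,3) h(3) by metis
    qed
  qed
  show "card (Fam A) = card (lpts A)" unfolding Fam_def using card_image[OF inj] .
  show "finite (Fam A)" unfolding Fam_def using slen_card(3)[OF assms] by simp
qed

lemma VL_vert: "B \<in> Vert ` Lset \<Longrightarrow> isvert B" using Vert_vert by blast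
lemma VL_Lab: "B \<in> Vert ` Lset \<Longrightarrow> B \<in> Lab" using Vert_Lab by blast

lemma card_Un_Int_le: "finite A \<Longrightarrow> finite B \<Longrightarrow> card ((A \<union> B) \<inter> C) \<le> card (A \<inter> C) + card (B \<inter> C)"
  by (metis Int_Un_distrib2 card_Un_le)

lemma main_lab:
  assumes A: "A1 \<in> Lab" "A2 \<in> Lab" "A1 \<noteq> A2" "lpts A1 \<inter> lpts A2 \<noteq> {}" and b: "0 < \<beta>" "\<beta> < 1"
  defines "n1 \<equiv> slen (fst A1)" and "n2 \<equiv> slen (fst A2)"
  shows "F_bond r0 \<beta> V E \<ge> 2 * (1 - \<beta>) * real (max n1 n2) + 2 * real (min n1 n2)
    \<and> (sspan S (fst A1) \<subset> V \<and> sspan S (fst A2) \<subset> V \<longrightarrow>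
         F_bond r0 \<beta> V E \<ge> 2 * (1 - \<beta>) * real (max n1 n2) + 2 * real (min n1 n2) + (4 - 2 * \<beta>))"
proof -
  define F1 where "F1 = Fam A1"
  define F2 where "F2 = Fam A2"
  define T where "T = F1 \<union> F2"
  define VL where "VL = Vert ` Lset"
  define M where "M = max n1 n2"
  obtain p where p: "p \<in> lpts A1" "p \<in> lpts A2" using A(4) by blast
  have c1: "card F1 = n1" "finite F1" "F1 \<subseteq> Lab" "A1 \<notin> F1" using Fam[OF A(1)] slen_card[OF A(1)] by (auto simp: F1_def n1_def)
  have c2: "card F2 = n2" "finite F2" "F2 \<subseteq> Lab" "A2 \<notin> F2" using Fam[OF A(2)] slen_card[OF A(2)] by (auto simp: F2_def n2_def)
  have sh1: "\<And>B. B \<in> F1 \<Longrightarrow> lpts B \<inter> lpts A1 \<noteq> {}" using Fam(3)[OF A(1)] by (simp add: F1_def)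
  have sh2: "\<And>B. B \<in> F2 \<Longrightarrow> lpts B \<inter> lpts A2 \<noteq> {}" using Fam(3)[OF A(2)] by (simp add: F2_def)
  have n1: "1 \<le> n1" "1 \<le> n2" using slen_card[OF A(1)] slen_card[OF A(2)] by (auto simp: n1_def n2_def)
  have disj: "F1 \<inter> F2 = {}"
  proof (rule ccontr)
    assume "F1 \<inter> F2 \<noteq> {}"
    then obtain B where B: "B \<in> F1" "B \<in> F2" by blast
    obtain b1 where "b1 \<in> lpts B" "b1 \<in> lpts A1" using sh1[OF B(1)] by blast
    moreover obtain b2 where "b2 \<in> lpts A2" "b2 \<in> lpts B" using sh2[OF B(2)] by blast
    moreover have "A2 \<noteq> B" "B \<noteq> A1" using B c1(4) c2(4) by auto
    ultimately show False using TRI[OF A(1,2) _ A(3)] p c2(3) B by blast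
  qed
  have cT: "card T = n1 + n2" "finite T" "T \<subseteq> Lab" using card_Un_disjoint[OF c1(2) c2(2) disj] c1 c2 by (auto simp: T_def)
  have one: "VL \<inter> F1 = {} \<or> VL \<inter> F2 = {}"
  proof (rule ccontr)
    assume "\<not> (VL \<inter> F1 = {} \<or> VL \<inter> F2 = {})"
    then obtain la lb where l: "la \<in> VL" "la \<in> F1" "lb \<in> VL" "lb \<in> F2" by blast
    obtain a where a: "a \<in> lpts la" "a \<in> lpts A1" using sh1[OF l(2)] by blast
    obtain b where bb: "b \<in> lpts A2" "b \<in> lpts lb" using sh2[OF l(4)] by blast
    have "la \<noteq> A1" "A2 \<noteq> lb" using l c1(4) c2(4) by auto
    then show False using QUAD[of la A1 A2 lb a p b] a bb p l c1(3) c2(3) A VL_vert VL_def by blast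
  qed
  have cI: "card (T \<inter> VL) \<le> M"
  proof (cases "VL \<inter> F1 = {}")
    case True
    then have "T \<inter> VL \<subseteq> F2" by (auto simp: T_def)
    then show ?thesis using card_mono[OF c2(2)] c2(1) by (simp add: M_def) (meson le_trans max.cobounded2)
  next
    case False
    then have "VL \<inter> F2 = {}" using one by simp
    then have "T \<inter> VL \<subseteq> F1" by (auto simp: T_def)
    then show ?thesis using card_mono[OF c1(2)] c1(1) by (simp add: M_def) (meson le_trans max.cobounded1)
  qed
  have mm: "real (max n1 n2) + real (min n1 n2) = real n1 + real n2" by (simp add: max_def min_def)
  have FT: "\<And>T'. T' \<subseteq> Lab \<Longrightarrow> 2 * real (card T') - 2 * \<beta> * real (card (T' \<inter> VL)) \<le> F_bond r0 \<beta> V E"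
    using F_T b unfolding VL_def by simp
  have part1: "F_bond r0 \<beta> V E \<ge> 2 * (1 - \<beta>) * real (max n1 n2) + 2 * real (min n1 n2)"
  proof -
    have h1: "2 * \<beta> * real (card (T \<inter> VL)) \<le> 2 * \<beta> * real M" using cI b by simp
    have h2: "real (card T) = real n1 + real n2" using cT(1) by simp
    have h3: "2 * (1 - \<beta>) * real (max n1 n2) + 2 * real (min n1 n2) = 2 * (real n1 + real n2) - 2 * \<beta> * real M"
      using mm by (simp add: M_def algebra_simps)
    have h4: "2 * (real n1 + real n2) - 2 * \<beta> * real M \<le> 2 * real (card T) - 2 * \<beta> * real (card (T \<inter> VL))"
      using h1 h2 by simp
    show ?thesis unfolding h3 using FT[OF cT(3)] h4 by (rule order_trans[rotated])
  qed
  have part2: "sspan S (fst A1) \<subset> V \<and> sspan S (fst A2) \<subset> V \<Longrightarrow>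
         F_bond r0 \<beta> V E \<ge> 2 * (1 - \<beta>) * real (max n1 n2) + 2 * real (min n1 n2) + (4 - 2 * \<beta>)"
  proof -
    assume sp: "sspan S (fst A1) \<subset> V \<and> sspan S (fst A2) \<subset> V"
    obtain w1 where w1: "w1 \<in> V" "w1 \<notin> sspan S (fst A1)" using sp by blast
    obtain w2 where w2: "w2 \<in> V" "w2 \<notin> sspan S (fst A2)" using sp by blast
    have spF1: "\<And>B. B \<in> F1 \<Longrightarrow> lpts B \<subseteq> sspan S (fst A1)"
      using to_span[OF A(1)] c1 sh1 by blast
    have spF2: "\<And>B. B \<in> F2 \<Longrightarrow> lpts B \<subseteq> sspan S (fst A2)"
      using to_span[OF A(2)] c2 sh2 by blast
    have pA1: "lpts A1 \<subseteq> sspan S (fst A1)"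
    proof
      fix v assume v: "v \<in> lpts A1"
      have "v \<in> V" using v lpts_V[OF A(1)] by blast
      then have "other A1 v \<in> F1" "v \<in> lpts (other A1 v)" using v other by (auto simp: F1_def Fam_def)
      then show "v \<in> sspan S (fst A1)" using spF1 by blast
    qed
    have pA2: "lpts A2 \<subseteq> sspan S (fst A2)"
    proof
      fix v assume v: "v \<in> lpts A2"
      have "v \<in> V" using v lpts_V[OF A(2)] by blast
      then have "other A2 v \<in> F2" "v \<in> lpts (other A2 v)" using v other by (auto simp: F2_def Fam_def)
      then show "v \<in> sspan S (fst A2)" using spF2 by blast
    qed
    have pA21: "lpts A2 \<subseteq> sspan S (fst A1)" using to_span[OF A(1,2)] A(3,4) by blast
    have pA12: "lpts A1 \<subseteq> sspan S (fst A2)" using to_span[OF A(2,1)] A(3,4) by blast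
    have key: "\<exists>T'. T' \<subseteq> Lab \<and> card T' = n1 + n2 + 2 \<and> card (T' \<inter> VL) \<le> M + 1"
    proof (cases "\<exists>w \<in> V. w \<notin> sspan S (fst A1) \<and> w \<notin> sspan S (fst A2)")
      case True
      then obtain w where w: "w \<in> V" "w \<notin> sspan S (fst A1)" "w \<notin> sspan S (fst A2)" by blast
      obtain Wa Wb where W: "Wa \<in> Lab" "Wb \<in> Lab" "Wa \<noteq> Wb" "w \<in> lpts Wa" "w \<in> lpts Wb" using exist2[OF w(1)] by blast
      have nT: "Wa \<notin> T" "Wb \<notin> T"
      proof -
        have "Wa \<notin> F1" "Wa \<notin> F2" "Wb \<notin> F1" "Wb \<notin> F2"
          using spF1[of Wa] spF2[of Wa] spF1[of Wb] spF2[of Wb] W(4,5) w(2,3) by blast+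
        then show "Wa \<notin> T" "Wb \<notin> T" by (auto simp: T_def)
      qed
      let ?T = "insert Wa (insert Wb T)"
      have cT': "card ?T = n1 + n2 + 2" using cT nT W(3) by simp
      have "card ({Wa, Wb} \<inter> VL) \<le> 1"
      proof (rule ccontr)
        assume "\<not> card ({Wa, Wb} \<inter> VL) \<le> 1"
        then have h: "\<not> card ({Wa, Wb} \<inter> VL) \<le> 1" .
        have "Wa \<in> VL"
        proof (rule ccontr)
          assume "Wa \<notin> VL"
          then have "{Wa, Wb} \<inter> VL \<subseteq> {Wb}" by auto
          then have "card ({Wa, Wb} \<inter> VL) \<le> card {Wb}" by (intro card_mono) auto
          then show False using h by simp
        qed
        moreover have "Wb \<in> VL"
        proof (rule ccontr)
          assume "Wb \<notin> VL"
          then have "{Wa, Wb} \<inter> VL \<subseteq> {Wa}" by auto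
          then have "card ({Wa, Wb} \<inter> VL) \<le> card {Wa}" by (intro card_mono) auto
          then show False using h by simp
        qed
        ultimately have "Wa \<in> VL" "Wb \<in> VL" by auto
        then show False using TWOVERT[OF W] VL_vert VL_def by blast
      qed
      moreover have "card (?T \<inter> VL) \<le> card (T \<inter> VL) + card ({Wa, Wb} \<inter> VL)"
        using card_Un_Int_le[of T "{Wa, Wb}" VL] cT(2) by (simp add: insert_commute)
      ultimately have "card (?T \<inter> VL) \<le> M + 1" using cI by simp
      moreover have "?T \<subseteq> Lab" using cT W by auto
      ultimately show ?thesis using cT' by blast
    next
      case False
      have w1': "w1 \<in> sspan S (fst A2)" using False w1 by blast
      have w2': "w2 \<in> sspan S (fst A1)" using False w2 by blast
      obtain L where L: "L \<in> Lab" "L \<noteq> A2" "w1 \<in> lpts L" "lpts L \<inter> lpts A2 \<noteq> {}" using from_span[OF A(2) w1'] by blast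
      obtain L' where L': "L' \<in> Lab" "L' \<noteq> A1" "w2 \<in> lpts L'" "lpts L' \<inter> lpts A1 \<noteq> {}" using from_span[OF A(1) w2'] by blast
      obtain y where y: "y \<in> lpts L" "y \<in> lpts A2" using L(4) by blast
      obtain x where x: "x \<in> lpts A1" "x \<in> lpts L'" using L'(4) by blast
      define X1 where "X1 = other L w1"
      define X2 where "X2 = other L' w2"
      have X1: "X1 \<in> Lab" "X1 \<noteq> L" "w1 \<in> lpts X1" using other[OF w1(1)] by (auto simp: X1_def)
      have X2: "X2 \<in> Lab" "X2 \<noteq> L'" "w2 \<in> lpts X2" using other[OF w2(1)] by (auto simp: X2_def)
      have X1F1: "X1 \<notin> F1" using spF1 X1(3) w1(2) by blast
      have X1A2: "X1 \<noteq> A2" using pA21 X1(3) w1(2) by blast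
      have X1F2: "X1 \<notin> F2"
      proof
        assume "X1 \<in> F2"
        then obtain c where "c \<in> lpts A2" "c \<in> lpts X1" using sh2 by blast
        then show False using TRI[OF X1(1) L(1) A(2) X1(2) L(2) X1A2[symmetric] X1(3) L(3) y] by blast
      qed
      have X2F2: "X2 \<notin> F2" using spF2 X2(3) w2(2) by blast
      have X2A1: "X2 \<noteq> A1" using pA12 X2(3) w2(2) by blast
      have X2F1: "X2 \<notin> F1"
      proof
        assume "X2 \<in> F1"
        then obtain c where "c \<in> lpts A1" "c \<in> lpts X2" using sh1 by blast
        then show False using TRI[OF X2(1) L'(1) A(1) X2(2) L'(2) X2A1[symmetric] X2(3) L'(3) x(2) x(1)] by blast
      qed
      have X12: "X1 \<noteq> X2"
      proof
        assume e: "X1 = X2"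
        have n: "L' \<noteq> X1" using X2(2) e by simp
        have m: "w2 \<in> lpts X1" using X2(3) e by simp
        show False using PENTA[OF X1(1) L(1) A(2) A(1) L'(1) X1(2) L(2) A(3)[symmetric] L'(2)[symmetric] n X1(3) L(3) y p(2) p(1) x L'(3) m] .
      qed
      let ?T = "insert X1 (insert X2 T)"
      have nT: "X1 \<notin> T" "X2 \<notin> T" using X1F1 X1F2 X2F1 X2F2 by (auto simp: T_def)
      have cT': "card ?T = n1 + n2 + 2" using cT nT X12 by simp
      have bound: "card (?T \<inter> VL) \<le> M + 1"
      proof (cases "VL \<inter> F1 = {}")
        case False
        then obtain la where la: "la \<in> VL" "la \<in> F1" by blast
        have e2: "VL \<inter> F2 = {}" using one False by simp
        have "X2 \<notin> VL"
        proof
          assume "X2 \<in> VL"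
          obtain a where a: "a \<in> lpts A1" "a \<in> lpts la" using sh1[OF la(2)] by blast
          have "A1 \<noteq> la" using la c1(4) by auto
          then show False using QUAD[OF X2(1) L'(1) A(1) _ X2(2) L'(2) _ X2(3) L'(3) x(2) x(1) a(1) a(2)]
              \<open>X2 \<in> VL\<close> la c1(3) VL_vert VL_def by blast
        qed
        then have "?T \<inter> VL \<subseteq> insert X1 (F1 \<inter> VL)" using e2 by (auto simp: T_def)
        then have "card (?T \<inter> VL) \<le> card (insert X1 (F1 \<inter> VL))" using c1(2) by (intro card_mono) auto
        also have "\<dots> \<le> Suc (card (F1 \<inter> VL))" using c1(2) by (simp add: card_insert_le_m1 card_insert_if)
        also have "card (F1 \<inter> VL) \<le> n1" using card_mono[OF c1(2), of "F1 \<inter> VL"] c1(1) by simp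
        finally show ?thesis by (simp add: M_def)
      next
        case e1: True
        show ?thesis
        proof (cases "VL \<inter> F2 = {}")
          case False
          then obtain lb where lb: "lb \<in> VL" "lb \<in> F2" by blast
          have "X1 \<notin> VL"
          proof
            assume "X1 \<in> VL"
            obtain b where bb: "b \<in> lpts A2" "b \<in> lpts lb" using sh2[OF lb(2)] by blast
            have "A2 \<noteq> lb" using lb c2(4) by auto
            then show False using QUAD[OF X1(1) L(1) A(2) _ X1(2) L(2) _ X1(3) L(3) y(1) y(2) bb(1) bb(2)]
                \<open>X1 \<in> VL\<close> lb c2(3) VL_vert VL_def by blast
          qed
          then have "?T \<inter> VL \<subseteq> insert X2 (F2 \<inter> VL)" using e1 by (auto simp: T_def)
          then have "card (?T \<inter> VL) \<le> card (insert X2 (F2 \<inter> VL))" using c2(2) by (intro card_mono) auto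
          also have "\<dots> \<le> Suc (card (F2 \<inter> VL))" using c2(2) by (simp add: card_insert_if)
          also have "card (F2 \<inter> VL) \<le> n2" using card_mono[OF c2(2), of "F2 \<inter> VL"] c2(1) by simp
          finally show ?thesis by (simp add: M_def)
        next
          case True
          then have "?T \<inter> VL \<subseteq> {X1, X2}" using e1 by (auto simp: T_def)
          then have "card (?T \<inter> VL) \<le> card {X1, X2}" by (intro card_mono) auto
          also have "\<dots> \<le> 2" by (simp add: card_insert_if)
          finally show ?thesis using n1 by (simp add: M_def)
        qed
      qed
      have "?T \<subseteq> Lab" using cT X1 X2 by auto
      then show ?thesis using cT' bound by blast
    qed
    then obtain T' where T': "T' \<subseteq> Lab" "card T' = n1 + n2 + 2" "card (T' \<inter> VL) \<le> M + 1" by blast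
    have h1: "2 * \<beta> * real (card (T' \<inter> VL)) \<le> 2 * \<beta> * (real M + 1)"
    proof -
      have "real (card (T' \<inter> VL)) \<le> real M + 1" using T'(3) by linarith
      then show ?thesis using b by (intro mult_left_mono) auto
    qed
    have h2: "real (card T') = real n1 + real n2 + 2" using T'(2) by simp
    have h3: "2 * (1 - \<beta>) * real (max n1 n2) + 2 * real (min n1 n2) + (4 - 2 * \<beta>) = 2 * (real n1 + real n2 + 2) - 2 * \<beta> * (real M + 1)"
      using mm by (simp add: M_def algebra_simps)
    have h4: "2 * (real n1 + real n2 + 2) - 2 * \<beta> * (real M + 1) \<le> 2 * real (card T') - 2 * \<beta> * real (card (T' \<inter> VL))"
      using h1 h2 by simp
    show ?thesis unfolding h3 using FT[OF T'(1)] h4 by (rule order_trans[rotated])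
  qed
  show ?thesis using part1 part2 by blast
qed

end


context LS begin

lemma main_loc:
  assumes b: "0 < \<beta>" "\<beta> < 1" and s: "s1 \<in># S" "s2 \<in># sperp S s1"
  shows "F_bond r0 \<beta> V E \<ge> 2 * (1 - \<beta>) * real (max (slen s1) (slen s2)) + 2 * real (min (slen s1) (slen s2))
    \<and> (sspan S s1 \<subset> V \<and> sspan S s2 \<subset> V \<longrightarrow>
         F_bond r0 \<beta> V E \<ge> 2 * (1 - \<beta>) * real (max (slen s1) (slen s2)) + 2 * real (min (slen s1) (slen s2)) + (4 - 2 * \<beta>))"
proof -
  have s2: "s2 \<in># S - {#s1#}" "spoints s2 \<inter> spoints s1 \<noteq> {}" using s(2) sperp_iff by auto
  have A1: "(s1, 0) \<in> Lab" using S_Lab[OF s(1)] .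
  obtain A2 where A2: "A2 \<in> Lab" "A2 \<noteq> (s1, 0)" "fst A2 = s2"
  proof (cases "s2 = s1")
    case True
    then have "2 \<le> count S s1" using s2(1) by (simp add: in_diff_count)
    then obtain x where x: "x \<in> V0" "s1 = pclass [x]" using count_ge2 by blast
    have "(s1, 1) \<in> Lab" using lab_sgl1[OF x(1)] x(2) by simp
    then show ?thesis using that[of "(s1, 1)"] True by simp
  next
    case False
    have "s2 \<in># S" using s2(1) by (meson in_diffD)
    then show ?thesis using that[of "(s2, 0)"] S_Lab False by simp
  qed
  have sh: "lpts (s1, 0) \<inter> lpts A2 \<noteq> {}" using s2(2) A2(3) by (auto simp: lpts_def)
  show ?thesis using main_lab[OF A1 A2(1) A2(2)[symmetric] sh b] A2(3) by simp
qed

end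

theorem lemma3p9:
  fixes r0 \<beta> \<epsilon> :: real and V :: "complex set" and E :: "complex set set"
    and s1 s2 :: "complex list set"
  assumes "1 < r0" and "r0 < sqrt 2"
    and "0 < \<beta>" and "\<beta> < 1"
    and "0 < \<epsilon>" and "\<epsilon> \<le> pi / 39"
    and "admissible_graph V E"
    and "eps_regular r0 \<epsilon> V E"
    and "\<forall>\<gamma>. straight \<epsilon> V E \<gamma> \<longrightarrow> theta_ex \<gamma> < pi / 10 - 7 / 5 * \<epsilon>"
    and "s1 \<in># strata \<epsilon> V E"
    and "s2 \<in># sperp (strata \<epsilon> V E) s1"
  shows "F_bond r0 \<beta> V E \<ge> 2 * (1 - \<beta>) * real (max (slen s1) (slen s2)) + 2 * real (min (slen s1) (slen s2))
    \<and> (sspan (strata \<epsilon> V E) s1 \<subset> V \<and> sspan (strata \<epsilon> V E) s2 \<subset> V \<longrightarrow>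
         F_bond r0 \<beta> V E \<ge> 2 * (1 - \<beta>) * real (max (slen s1) (slen s2)) + 2 * real (min (slen s1) (slen s2)) + (4 - 2 * \<beta>))"
proof -
  interpret LS r0 \<epsilon> V E
    by unfold_locales (use assms in auto)
  show ?thesis using main_loc[OF assms(3,4,10,11)] .
qed


end
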